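(* Let the revision protocols $\rho^c$ be arbitrary (Lipschitz) and let $\mathcal M_{\mathcal F}\subseteq\mathrm{NE}(\mathcal F)$ be nonempty and closed, with $\mathcal M=\{B_{S\to K}x:x\in\mathcal M_{\mathcal F}\}$. Suppose there is a set $\bar D_x\subseteq D_x$ containing a relative neighborhood of $\mathcal M_{\mathcal F}$ in $D_x$ and a continuously differentiable $V:\bar D_x\to\mathbb R_{\ge0}$ with $\|\nabla V\|$ bounded on $\bar D_x$, $V(x)>0$ on $\bar D_x\setminus\mathcal M_{\mathcal F}$, $V=0$ on $\mathcal M_{\mathcal F}$, and $\nabla V(x)^\top g(x)<0$ on $\bar D_x\setminus\mathcal M_{\mathcal F}$, $\nabla V(x)^\top g(x)=0$ on $\mathcal M_{\mathcal F}$, where $g$ is the reduced vector field (R). Then for every $B>0$ there exist $\epsilon^\star,B_0,T>0$ such that for all $\epsilon\in(0,\epsilon^\star)$, every solution of the evolutionary dynamics (E) with rates $R^c_d=\kappa^c/\epsilon$ satisfies $d_{\mathcal M}(\mu(0))\le B_0\Rightarrow d_{\mathcal M}(\mu(t))\le B$ for all $t\ge T$. If moreover $\bar D_x=D_x$, then for every $B>0$ and every $\mu(0)\in X$ there exist $\epsilon^\star,T>0$ such that for all $\epsilon\in(0,\epsilon^\star)$ the solution of (E) from $\mu(0)$ satisfies $d_{\mathcal M}(\mu(t))\le B$ for all $t\ge T$.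
   Context: Setting. There are $C$ classes of players, $[C]=\{1,\dots,C\}$. For each class $c\in[C]$: $\mathcal S^c$ is a finite state set with $p^c$ elements; for each $s\in\mathcal S^c$, $\mathcal A^c(s)$ is a nonempty finite action set; $\phi^c(\cdot\mid s,a)$ is a probability distribution on $\mathcal S^c$ for each $s\in\mathcal S^c$, $a\in\mathcal A^c(s)$; $\mathcal U^c_D$ is a finite set of $n^c$ deterministic stationary policies, each $u\in\mathcal U^c_D$ assigning to every $s$ a point mass $u(\cdot\mid s)$ on some action of $\mathcal A^c(s)$; $m^c>0$ is the mass of class $c$; $R^c_d>0$ is the state-transition rate. Let $n=\sum_c n^c$. For $u\in\mathcal U^c_D$ put $\phi^{c,u}(s\mid s')=\sum_{a'\in\mathcal A^c(s')}\phi^c(s\mid s',a')u(a'\mid s')$; standing assumption: the Markov chain on $\mathcal S^c$ with kernel $\phi^{c,u}$ has a unique recurrent communicating class, hence a unique stationary distribution $\eta^{c,u}$. The population state is $\mu=(\mu^c)_{c\in[C]}\in X:=\prod_c X^c$, where $X^c=\{\mu^c\in\mathbb R_{\ge0}^{\mathcal S^c\times\mathcal U^c_D}:\sum_{s,u}\mu^c[s,u]=m^c\}$; write $\mu^c[\mathcal S^c,u]:=\sum_{s\in\mathcal S^c}\mu^c[s,u]$ and $\mu^c[\mathcal S^c,\cdot]\in\mathbb R^{n^c}_{\ge0}$ for the vector of these. A payoff map $F=(F^c)_{c\in[C]}$ is given, with $F^c$ continuously differentiable on an open neighborhood of $X$ and valued in $\mathbb R^{\mathcal U^c_D}$ ($F^c_u(\mu)$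 is the payoff of policy $u$ for class $c$). Each class has a revision protocol $\rho^c=(\rho^c_{uv})_{u,v\in\mathcal U^c_D}$, a Lipschitz continuous map $\mathbb R^{n^c}\times\mathbb R^{n^c}_{\ge0}\to\mathbb R^{n^c\times n^c}_{\ge0}$ whose first argument is a payoff vector and second a policy distribution. The evolutionary dynamics (E) are the ODE on $X$: for all $c\in[C]$, $s\in\mathcal S^c$, $u\in\mathcal U^c_D$, $\dot\mu^c[s,u]=f^{c,d}_{s,u}(\mu)+f^{c,r}_{s,u}(\mu)$, where $f^{c,d}_{s,u}(\mu)=R^c_d\sum_{s'\in\mathcal S^c}\sum_{a'\in\mathcal A^c(s')}\phi^c(s\mid s',a')u(a'\mid s')\mu^c[s',u]-R^c_d\mu^c[s,u]$ and $f^{c,r}_{s,u}(\mu)=\sum_{u'\in\mathcal U^c_D}\mu^c[s,u']\rho^c_{u'u}(F^c(\mu),\mu^c[\mathcal S^c,\cdot])-\mu^c[s,u]\sum_{u'\in\mathcal U^c_D}\rho^c_{uu'}(F^c(\mu),\mu^c[\mathcal S^c,\cdot])$. Solutions from $X$ exist, are unique and remain in $X$. A state $\mu\in X$ is a mixed stationary Nash equilibrium (MSNE) if for every $c\in[C]$: (a) for all $u\in\mathcal U^c_D$, $\mu^c[\mathcal S^c,u]>0\Rightarrow F^c_u(\mu)\ge F^c_v(\mu)$ for all $v\in\mathcal U^c_D$; and (b) $f^{c,d}_{s,u}(\mu)=0$ for all $s\in\mathcal S^c,u\in\mathcal U^c_D$. $\mathrm{MSNE}(F,\phi)$ denotes the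 set of MSNE. Two-time-scale setup. Let $B^c_{S\to K}=[e^1\otimes\eta^{c,u_1}\ \cdots\ e^{n^c}\otimes\eta^{c,u_{n^c}}]\in\mathbb R^{p^cn^c\times n^c}$ (coordinates of $\mu^c$ ordered $(s_1,u_1),\dots,(s_{p^c},u_1),\dots,(s_{p^c},u_{n^c})$; $e^i$ the standard basis of $\mathbb R^{n^c}$), and $B_{S\to K}=\mathrm{diag}_c(B^c_{S\to K})$; thus $(B_{S\to K}x)^c[s,u]=x^c_u\eta^{c,u}(s)$. Let $D_x=\prod_c\{x^c\in\mathbb R^{n^c}_{\ge0}:\mathbf 1^\top x^c=m^c\}$. The steady-state game is $\mathcal F(x):=F(B_{S\to K}x)$ (defined on a neighborhood of $D_x$); $\mathrm{NE}(\mathcal F)$ is the set of $x\in D_x$ with $x^c_u>0\Rightarrow\mathcal F^c_u(x)\ge\mathcal F^c_v(x)$ for all $c,u,v$. One has $\mathrm{MSNE}(F,\phi)=\{B_{S\to K}x:x\in\mathrm{NE}(\mathcal F)\}$ and $\mu^c[\mathcal S^c,u]=x^c_u$ for $\mu=B_{S\to K}x$. For a closed $\mathcal M_{\mathcal F}\subseteq D_x$ put $\mathcal M=\{B_{S\to K}x:x\in\mathcal M_{\mathcal F}\}$. The reduced vector field (R) on $D_x$ is $g^c_u(x)=\sum_{u'}x^c_{u'}\rho^c_{u'u}(\mathcal F^c(x),x^c)-x^c_u\sum_{u'}\rho^c_{uu'}(\mathcal F^c(x),x^c)$. Time-scale parametrization: fix constants $\kappa^c\ge1$ with $\min_c\kappa^c=1$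 and set $R^c_d=\kappa^c/\epsilon$ for $\epsilon>0$ (so $\epsilon=1/\min_cR^c_d$). $d_A(y)=\inf_{a\in A}\|y-a\|$. *)

theory Defs
  imports "HOL-Analysis.Analysis"
begin

(* Encoding conventions:
   classes  = finite type 'c;  states of class c = Sset c :: 's set (finite type 's);
   policies of class c = Pset c :: 'u set (finite type 'u);  actions of type 'a.
   A population state mu :: real^'u^'s^'c, entry mu$c$s$u = mu^c[s,u]
   (entries outside Sset c x Pset c are 0 on X).
   phi c s' a s = phi^c(s | s', a);  pol c u s = action chosen by policy u at s. *)

type_synonym ('c,'s,'u) pstate = "real^'u^'s^'c"

definition polprob :: "('c \<Rightarrow> 'u \<Rightarrow> 's \<Rightarrow> 'a) \<Rightarrow> 'c \<Rightarrow> 'u \<Rightarrow> 's \<Rightarrow> 'a \<Rightarrow> real" where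
  "polprob pol c u s a = (if a = pol c u s then 1 else 0)"

definition phiu :: "('c \<Rightarrow> 's \<Rightarrow> 'a set) \<Rightarrow> ('c \<Rightarrow> 's \<Rightarrow> 'a \<Rightarrow> 's \<Rightarrow> real)
    \<Rightarrow> ('c \<Rightarrow> 'u \<Rightarrow> 's \<Rightarrow> 'a) \<Rightarrow> 'c \<Rightarrow> 'u \<Rightarrow> 's \<Rightarrow> 's \<Rightarrow> real" where
  "phiu Act phi pol c u s s' = (\<Sum>a\<in>Act c s'. phi c s' a s * polprob pol c u s' a)"

definition reach :: "('c \<Rightarrow> 's set) \<Rightarrow> ('c \<Rightarrow> 's \<Rightarrow> 'a set) \<Rightarrow> ('c \<Rightarrow> 's \<Rightarrow> 'a \<Rightarrow> 's \<Rightarrow> real)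
    \<Rightarrow> ('c \<Rightarrow> 'u \<Rightarrow> 's \<Rightarrow> 'a) \<Rightarrow> 'c \<Rightarrow> 'u \<Rightarrow> ('s \<times> 's) set" where
  "reach Sset Act phi pol c u =
     ({(s', s). s' \<in> Sset c \<and> s \<in> Sset c \<and> phiu Act phi pol c u s s' > 0})\<^sup>*"

definition recurrent_class :: "('c \<Rightarrow> 's set) \<Rightarrow> ('c \<Rightarrow> 's \<Rightarrow> 'a set) \<Rightarrow> ('c \<Rightarrow> 's \<Rightarrow> 'a \<Rightarrow> 's \<Rightarrow> real)
    \<Rightarrow> ('c \<Rightarrow> 'u \<Rightarrow> 's \<Rightarrow> 'a) \<Rightarrow> 'c \<Rightarrow> 'u \<Rightarrow> 's set \<Rightarrow> bool" where
  "recurrent_class Sset Act phi pol c u K \<longleftrightarrow>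
     K \<noteq> {} \<and> K \<subseteq> Sset c \<and>
     (\<forall>x\<in>K. \<forall>y\<in>K. (x, y) \<in> reach Sset Act phi pol c u) \<and>
     (\<forall>x\<in>K. \<forall>y. (x, y) \<in> reach Sset Act phi pol c u \<longrightarrow> y \<in> K)"

definition stationary :: "('c \<Rightarrow> 's set) \<Rightarrow> ('c \<Rightarrow> 's \<Rightarrow> 'a set) \<Rightarrow> ('c \<Rightarrow> 's \<Rightarrow> 'a \<Rightarrow> 's \<Rightarrow> real)
    \<Rightarrow> ('c \<Rightarrow> 'u \<Rightarrow> 's \<Rightarrow> 'a) \<Rightarrow> 'c \<Rightarrow> 'u \<Rightarrow> ('s \<Rightarrow> real) \<Rightarrow> bool" where
  "stationary Sset Act phi pol c u \<eta> \<longleftrightarrow>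
     (\<forall>s. s \<notin> Sset c \<longrightarrow> \<eta> s = 0) \<and> (\<forall>s\<in>Sset c. \<eta> s \<ge> 0) \<and> (\<Sum>s\<in>Sset c. \<eta> s) = 1 \<and>
     (\<forall>s\<in>Sset c. \<eta> s = (\<Sum>s'\<in>Sset c. phiu Act phi pol c u s s' * \<eta> s'))"

definition eta :: "('c \<Rightarrow> 's set) \<Rightarrow> ('c \<Rightarrow> 's \<Rightarrow> 'a set) \<Rightarrow> ('c \<Rightarrow> 's \<Rightarrow> 'a \<Rightarrow> 's \<Rightarrow> real)
    \<Rightarrow> ('c \<Rightarrow> 'u \<Rightarrow> 's \<Rightarrow> 'a) \<Rightarrow> 'c \<Rightarrow> 'u \<Rightarrow> 's \<Rightarrow> real" where
  "eta Sset Act phi pol c u = (THE \<eta>. stationary Sset Act phi pol c u \<eta>)"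

definition Xset :: "('c::finite \<Rightarrow> 's::finite set) \<Rightarrow> ('c \<Rightarrow> 'u::finite set) \<Rightarrow> ('c \<Rightarrow> real)
    \<Rightarrow> ('c,'s,'u) pstate set" where
  "Xset Sset Pset m = {\<mu>. \<forall>c.
      (\<forall>s u. \<mu>$c$s$u \<ge> 0) \<and> (\<forall>s u. (s \<notin> Sset c \<or> u \<notin> Pset c) \<longrightarrow> \<mu>$c$s$u = 0) \<and>
      (\<Sum>s\<in>Sset c. \<Sum>u\<in>Pset c. \<mu>$c$s$u) = m c}"

definition Dx :: "('c::finite \<Rightarrow> 'u::finite set) \<Rightarrow> ('c \<Rightarrow> real) \<Rightarrow> (real^'u^'c) set" where
  "Dx Pset m = {x. \<forall>c. (\<forall>u. x$c$u \<ge> 0) \<and> (\<forall>u. u \<notin> Pset c \<longrightarrow> x$c$u = 0) \<and>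
      (\<Sum>u\<in>Pset c. x$c$u) = m c}"

definition restrP :: "('c \<Rightarrow> 'u::finite set) \<Rightarrow> 'c \<Rightarrow> real^'u \<Rightarrow> real^'u" where
  "restrP Pset c v = (\<chi> u. if u \<in> Pset c then v$u else 0)"

definition aggP :: "('c::finite \<Rightarrow> 's::finite set) \<Rightarrow> ('c \<Rightarrow> 'u::finite set) \<Rightarrow> ('c,'s,'u) pstate
    \<Rightarrow> 'c \<Rightarrow> real^'u" where
  "aggP Sset Pset \<mu> c = (\<chi> u. if u \<in> Pset c then (\<Sum>s\<in>Sset c. \<mu>$c$s$u) else 0)"

definition BSK :: "('c::finite \<Rightarrow> 's::finite set) \<Rightarrow> ('c \<Rightarrow> 'u::finite set) \<Rightarrow> ('c \<Rightarrow> 'u \<Rightarrow> 's \<Rightarrow> real)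
    \<Rightarrow> real^'u^'c \<Rightarrow> ('c,'s,'u) pstate" where
  "BSK Sset Pset et x = (\<chi> c s u. if s \<in> Sset c \<and> u \<in> Pset c then x$c$u * et c u s else 0)"

definition revflow :: "('c::finite \<Rightarrow> 'u::finite set) \<Rightarrow> ('c \<Rightarrow> real^'u \<Rightarrow> real^'u \<Rightarrow> 'u \<Rightarrow> 'u \<Rightarrow> real)
    \<Rightarrow> 'c \<Rightarrow> real^'u \<Rightarrow> real^'u \<Rightarrow> ('u \<Rightarrow> real) \<Rightarrow> 'u \<Rightarrow> real" where
  "revflow Pset rho c p y a u =
     (\<Sum>u'\<in>Pset c. a u' * rho c (restrP Pset c p) (restrP Pset c y) u' u)
     - a u * (\<Sum>u'\<in>Pset c. rho c (restrP Pset c p) (restrP Pset c y) u u')"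

definition Efield :: "('c::finite \<Rightarrow> 's::finite set) \<Rightarrow> ('c \<Rightarrow> 'u::finite set) \<Rightarrow> ('c \<Rightarrow> 's \<Rightarrow> 'a set)
    \<Rightarrow> ('c \<Rightarrow> 's \<Rightarrow> 'a \<Rightarrow> 's \<Rightarrow> real) \<Rightarrow> ('c \<Rightarrow> 'u \<Rightarrow> 's \<Rightarrow> 'a)
    \<Rightarrow> ('c \<Rightarrow> real^'u \<Rightarrow> real^'u \<Rightarrow> 'u \<Rightarrow> 'u \<Rightarrow> real) \<Rightarrow> (('c,'s,'u) pstate \<Rightarrow> real^'u^'c)
    \<Rightarrow> ('c \<Rightarrow> real) \<Rightarrow> real \<Rightarrow> ('c,'s,'u) pstate \<Rightarrow> ('c,'s,'u) pstate" where
  "Efield Sset Pset Act phi pol rho F kappa \<epsilon> \<mu> =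
     (\<chi> c s u. if s \<in> Sset c \<and> u \<in> Pset c then
         (kappa c / \<epsilon>) * (\<Sum>s'\<in>Sset c. \<Sum>a'\<in>Act c s'. phi c s' a' s * polprob pol c u s' a' * \<mu>$c$s'$u)
         - (kappa c / \<epsilon>) * \<mu>$c$s$u
         + revflow Pset rho c (F \<mu> $ c) (aggP Sset Pset \<mu> c) (\<lambda>u'. \<mu>$c$s$u') u
       else 0)"

definition gred :: "('c::finite \<Rightarrow> 'u::finite set) \<Rightarrow> ('c \<Rightarrow> real^'u \<Rightarrow> real^'u \<Rightarrow> 'u \<Rightarrow> 'u \<Rightarrow> real)
    \<Rightarrow> (real^'u^'c \<Rightarrow> real^'u^'c) \<Rightarrow> real^'u^'c \<Rightarrow> real^'u^'c" where
  "gred Pset rho FF x =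
     (\<chi> c u. if u \<in> Pset c then revflow Pset rho c (FF x $ c) (x$c) (\<lambda>u'. x$c$u') u else 0)"

definition NEset :: "('c::finite \<Rightarrow> 'u::finite set) \<Rightarrow> ('c \<Rightarrow> real) \<Rightarrow> (real^'u^'c \<Rightarrow> real^'u^'c)
    \<Rightarrow> (real^'u^'c) set" where
  "NEset Pset m FF = {x \<in> Dx Pset m. \<forall>c. \<forall>u\<in>Pset c. \<forall>v\<in>Pset c.
      x$c$u > 0 \<longrightarrow> FF x $ c $ u \<ge> FF x $ c $ v}"

definition is_solution :: "('c::finite \<Rightarrow> 's::finite set) \<Rightarrow> ('c \<Rightarrow> 'u::finite set) \<Rightarrow> ('c \<Rightarrow> real)
    \<Rightarrow> ('c \<Rightarrow> 's \<Rightarrow> 'a set)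
    \<Rightarrow> ('c \<Rightarrow> 's \<Rightarrow> 'a \<Rightarrow> 's \<Rightarrow> real) \<Rightarrow> ('c \<Rightarrow> 'u \<Rightarrow> 's \<Rightarrow> 'a)
    \<Rightarrow> ('c \<Rightarrow> real^'u \<Rightarrow> real^'u \<Rightarrow> 'u \<Rightarrow> 'u \<Rightarrow> real) \<Rightarrow> (('c,'s,'u) pstate \<Rightarrow> real^'u^'c)
    \<Rightarrow> ('c \<Rightarrow> real) \<Rightarrow> real \<Rightarrow> (real \<Rightarrow> ('c,'s,'u) pstate) \<Rightarrow> bool" where
  "is_solution Sset Pset m Act phi pol rho F kappa \<epsilon> \<mu> \<longleftrightarrow>
     (\<forall>t\<ge>0. \<mu> t \<in> Xset Sset Pset m \<and>
        (\<mu> has_vector_derivative Efield Sset Pset Act phi pol rho F kappa \<epsilon> (\<mu> t)) (at t within {0..}))"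

end

theory Submission
  imports Defs
begin

typedef ('n::finite) sqm = "UNIV :: (real^'n^'n) set" morphisms mrep mabs by auto

setup_lifting type_definition_sqm

instantiation sqm :: (finite) real_vector
begin
lift_definition zero_sqm :: "'a sqm" is "0" .
lift_definition plus_sqm :: "'a sqm \<Rightarrow> 'a sqm \<Rightarrow> 'a sqm" is "(+)" .
lift_definition minus_sqm :: "'a sqm \<Rightarrow> 'a sqm \<Rightarrow> 'a sqm" is "(-)" .
lift_definition uminus_sqm :: "'a sqm \<Rightarrow> 'a sqm" is "uminus" .
lift_definition scaleR_sqm :: "real \<Rightarrow> 'a sqm \<Rightarrow> 'a sqm" is "scaleR" .
instance
  by standard (transfer, simp add: algebra_simps)+
end

instantiation sqm :: (finite) ring_1
begin
lift_definition times_sqm :: "'a sqm \<Rightarrow> 'a sqm \<Rightarrow> 'a sqm" is "(**)" .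
lift_definition one_sqm :: "'a sqm" is "mat 1" .
instance
proof
  fix a b c :: "'a sqm"
  show "a * b * c = a * (b * c)" by transfer (simp add: matrix_mul_assoc)
  show "1 * a = a" by transfer simp
  show "a * 1 = a" by transfer simp
  show "(a + b) * c = a * c + b * c" by transfer (vector matrix_matrix_mult_def sum.distrib[symmetric] field_simps)
  show "a * (b + c) = a * b + a * c" by transfer (simp add: matrix_add_ldistrib)
  show "(0::'a sqm) \<noteq> 1" apply transfer apply (simp add: mat_def vec_eq_iff) done
qed
end

definition cnorm :: "real^'n^'n \<Rightarrow> real" where
  "cnorm A = Max (range (\<lambda>b. \<Sum>a\<in>UNIV. \<bar>A$a$b\<bar>))"

lemma cnorm_ge: "(\<Sum>a\<in>UNIV. \<bar>A$a$b\<bar>) \<le> cnorm (A::real^'n::finite^'n)"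
  unfolding cnorm_def by (rule Max_ge) auto

lemma cnorm_le: "(\<And>b. (\<Sum>a\<in>UNIV. \<bar>A$a$b\<bar>) \<le> c) \<Longrightarrow> cnorm (A::real^'n::finite^'n) \<le> c"
  unfolding cnorm_def by (subst Max_le_iff) auto

lemma cnorm_attained: "\<exists>b. cnorm (A::real^'n::finite^'n) = (\<Sum>a\<in>UNIV. \<bar>A$a$b\<bar>)"
proof -
  have "cnorm A \<in> range (\<lambda>b. \<Sum>a\<in>UNIV. \<bar>A$a$b\<bar>)" unfolding cnorm_def by (rule Max_in) auto
  then show ?thesis by auto
qed

lemma cnorm_nonneg: "0 \<le> cnorm (A::real^'n::finite^'n)"
  by (rule order_trans[OF _ cnorm_ge]) (simp add: sum_nonneg)


lemma cnorm_triangle: "cnorm (A + B) \<le> cnorm A + cnorm (B::real^'n::finite^'n)"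
proof (rule cnorm_le)
  fix b
  have "(\<Sum>a\<in>UNIV. \<bar>(A + B)$a$b\<bar>) \<le> (\<Sum>a\<in>UNIV. \<bar>A$a$b\<bar> + \<bar>B$a$b\<bar>)"
    by (rule sum_mono) (simp add: abs_triangle_ineq)
  also have "\<dots> \<le> cnorm A + cnorm B" by (simp add: sum.distrib add_mono cnorm_ge)
  finally show "(\<Sum>a\<in>UNIV. \<bar>(A + B)$a$b\<bar>) \<le> cnorm A + cnorm B" .
qed

lemma cnorm_scaleR: "cnorm (c *\<^sub>R A) = \<bar>c\<bar> * cnorm (A::real^'n::finite^'n)"
proof -
  have "cnorm (c *\<^sub>R A) = Max (range (\<lambda>b. \<bar>c\<bar> * (\<Sum>a\<in>UNIV. \<bar>A$a$b\<bar>)))"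
    unfolding cnorm_def by (simp add: abs_mult sum_distrib_left)
  also have "\<dots> = \<bar>c\<bar> * cnorm A"
    unfolding cnorm_def
    by (subst mono_Max_commute[where f="\<lambda>x. \<bar>c\<bar> * x"]) (auto simp: mono_def mult_left_mono image_image)
  finally show ?thesis .
qed

lemma cnorm_eq_0: "cnorm (A::real^'n::finite^'n) = 0 \<longleftrightarrow> A = 0"
proof
  assume h: "cnorm A = 0"
  have "A$a$b = 0" for a b
  proof -
    have "\<bar>A$a$b\<bar> \<le> (\<Sum>a\<in>UNIV. \<bar>A$a$b\<bar>)" by (rule member_le_sum) auto
    also have "\<dots> \<le> 0" using cnorm_ge[of A b] h by simp
    finally show ?thesis by simp
  qed
  then show "A = 0" by (simp add: vec_eq_iff)
next
  assume "A = 0" then show "cnorm A = 0" unfolding cnorm_def by simp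
qed

lemma cnorm_mult: "cnorm (A ** B) \<le> cnorm A * cnorm (B::real^'n::finite^'n)"
proof (rule cnorm_le)
  fix b
  have "(\<Sum>a\<in>UNIV. \<bar>(A ** B)$a$b\<bar>) \<le> (\<Sum>a\<in>UNIV. \<Sum>k\<in>UNIV. \<bar>A$a$k\<bar> * \<bar>B$k$b\<bar>)"
    unfolding matrix_matrix_mult_def
    by (rule sum_mono) (auto intro!: order_trans[OF sum_abs] simp: abs_mult)
  also have "\<dots> = (\<Sum>k\<in>UNIV. (\<Sum>a\<in>UNIV. \<bar>A$a$k\<bar>) * \<bar>B$k$b\<bar>)"
    by (subst sum.swap) (simp add: sum_distrib_right)
  also have "\<dots> \<le> (\<Sum>k\<in>UNIV. cnorm A * \<bar>B$k$b\<bar>)"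
    by (rule sum_mono) (simp add: mult_right_mono cnorm_ge)
  also have "\<dots> \<le> cnorm A * cnorm B"
    by (simp add: sum_distrib_left[symmetric] mult_left_mono cnorm_ge cnorm_nonneg)
  finally show "(\<Sum>a\<in>UNIV. \<bar>(A ** B)$a$b\<bar>) \<le> cnorm A * cnorm B" .
qed

lemma cnorm_one: "cnorm (mat 1 :: real^'n::finite^'n) = 1"
proof -
  have "\<And>b. (\<Sum>a\<in>UNIV. \<bar>(mat 1 :: real^'n^'n)$a$b\<bar>) = 1"
  proof -
    fix b
    have "\<And>a. \<bar>(mat 1 :: real^'n^'n)$a$b\<bar> = (if a = b then 1 else 0)" by (simp add: mat_def)
    then show "(\<Sum>a\<in>UNIV. \<bar>(mat 1 :: real^'n^'n)$a$b\<bar>) = 1" by simp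
  qed
  then show ?thesis unfolding cnorm_def by simp
qed

instantiation sqm :: (finite) real_normed_algebra_1
begin
lift_definition norm_sqm :: "'a sqm \<Rightarrow> real" is cnorm .
definition dist_sqm :: "'a sqm \<Rightarrow> 'a sqm \<Rightarrow> real" where "dist_sqm x y = norm (x - y)"
definition sgn_sqm :: "'a sqm \<Rightarrow> 'a sqm" where "sgn_sqm x = x /\<^sub>R norm x"
definition uniformity_sqm :: "('a sqm \<times> 'a sqm) filter" where
  "uniformity_sqm = (INF e\<in>{0 <..}. principal {(x, y). dist x y < e})"
definition open_sqm :: "'a sqm set \<Rightarrow> bool" where
  "open_sqm U = (\<forall>x\<in>U. eventually (\<lambda>(x', y). x' = x \<longrightarrow> y \<in> U) uniformity)"
instance
proof
  fix x y :: "'a sqm" and a :: real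
  show "dist x y = norm (x - y)" by (simp add: dist_sqm_def)
  show "sgn x = x /\<^sub>R norm x" by (simp add: sgn_sqm_def)
  show "norm x = 0 \<longleftrightarrow> x = 0" by transfer (rule cnorm_eq_0)
  show "norm (x + y) \<le> norm x + norm y" by transfer (rule cnorm_triangle)
  show "norm (a *\<^sub>R x) = \<bar>a\<bar> * norm x" by transfer (rule cnorm_scaleR)
  show "norm (x * y) \<le> norm x * norm y" by transfer (rule cnorm_mult)
  show "norm (1::'a sqm) = 1" by transfer (rule cnorm_one)
  show "a *\<^sub>R x * y = a *\<^sub>R (x * y)" by transfer (vector matrix_matrix_mult_def sum_distrib_left field_simps)
  show "x * a *\<^sub>R y = a *\<^sub>R (x * y)" by transfer (vector matrix_matrix_mult_def sum_distrib_left field_simps)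
qed (simp_all add: uniformity_sqm_def open_sqm_def)
end


lemma norm_le_sum_norm_cart: "norm (x::'a::real_normed_vector^'n::finite) \<le> (\<Sum>i\<in>UNIV. norm (x$i))"
  by (simp add: norm_vec_def L2_set_le_sum)

lemma vnorm_le_cnorm: "norm (A::real^'n::finite^'n) \<le> real CARD('n) * cnorm A"
proof -
  have "norm A \<le> (\<Sum>a\<in>UNIV. norm (A$a))" by (rule norm_le_sum_norm_cart)
  also have "\<dots> \<le> (\<Sum>a\<in>UNIV. \<Sum>b\<in>UNIV. \<bar>A$a$b\<bar>)" by (rule sum_mono) (rule norm_le_l1_cart)
  also have "\<dots> = (\<Sum>b\<in>UNIV. \<Sum>a\<in>UNIV. \<bar>A$a$b\<bar>)" by (rule sum.swap)
  also have "\<dots> \<le> (\<Sum>b\<in>(UNIV::'n set). cnorm A)" by (rule sum_mono) (rule cnorm_ge)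
  finally show ?thesis by simp
qed

lemma cnorm_le_vnorm: "cnorm (A::real^'n::finite^'n) \<le> real CARD('n) * norm A"
proof (rule cnorm_le)
  fix b
  have "(\<Sum>a\<in>UNIV. \<bar>A$a$b\<bar>) \<le> (\<Sum>a\<in>(UNIV::'n set). norm A)"
    by (rule sum_mono) (rule order_trans[OF component_le_norm_cart Finite_Cartesian_Product.norm_nth_le])
  then show "(\<Sum>a\<in>UNIV. \<bar>A$a$b\<bar>) \<le> real CARD('n) * norm A" by simp
qed

instance sqm :: (finite) banach
proof
  fix X :: "nat \<Rightarrow> 'a sqm"
  assume X: "Cauchy X"
  define n where "n = real CARD('a)"
  have n: "n > 0" unfolding n_def by simp
  have "Cauchy (\<lambda>k. mrep (X k))"
  proof (rule metric_CauchyI)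
    fix e :: real assume "e > 0"
    then obtain M where M: "\<forall>k\<ge>M. \<forall>l\<ge>M. dist (X k) (X l) < e / n"
      using metric_CauchyD[OF X, of "e/n"] n by auto
    have "dist (mrep (X k)) (mrep (X l)) < e" if "k \<ge> M" "l \<ge> M" for k l
    proof -
      have "dist (mrep (X k)) (mrep (X l)) = norm (mrep (X k - X l))"
        by (simp add: dist_norm minus_sqm.rep_eq)
      also have "\<dots> \<le> n * cnorm (mrep (X k - X l))" unfolding n_def by (rule vnorm_le_cnorm)
      also have "\<dots> = n * dist (X k) (X l)" by (simp add: dist_norm norm_sqm.rep_eq)
      also have "\<dots> < n * (e / n)" using M that n by (intro mult_strict_left_mono) auto
      finally show ?thesis using n by simp
    qed
    then show "\<exists>M. \<forall>m\<ge>M. \<forall>n\<ge>M. dist (mrep (X m)) (mrep (X n)) < e" by blast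
  qed
  then obtain L where L: "(\<lambda>k. mrep (X k)) \<longlonglongrightarrow> L"
    using Cauchy_convergent_iff convergent_def by blast
  have "X \<longlonglongrightarrow> mabs L"
  proof (rule metric_LIMSEQ_I)
    fix r :: real assume "r > 0"
    then obtain no where no: "\<forall>k\<ge>no. dist (mrep (X k)) L < r / n"
      using L[unfolded lim_sequentially] n by (meson divide_pos_pos)
    have "dist (X k) (mabs L) < r" if "k \<ge> no" for k
    proof -
      have "dist (X k) (mabs L) = cnorm (mrep (X k) - L)"
        by (simp add: dist_norm norm_sqm.rep_eq minus_sqm.rep_eq mabs_inverse)
      also have "\<dots> \<le> n * norm (mrep (X k) - L)" unfolding n_def by (rule cnorm_le_vnorm)
      also have "\<dots> < n * (r / n)" using no that n by (intro mult_strict_left_mono) (auto simp: dist_norm)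
      finally show ?thesis using n by simp
    qed
    then show "\<exists>no. \<forall>k\<ge>no. dist (X k) (mabs L) < r" by blast
  qed
  then show "convergent X" unfolding convergent_def by blast
qed

definition ent :: "'n::finite \<Rightarrow> 'n \<Rightarrow> 'n sqm \<Rightarrow> real" where
  "ent a b X = mrep X $ a $ b"

definition stoch :: "'n::finite sqm \<Rightarrow> bool" where
  "stoch M \<longleftrightarrow> (\<forall>a b. 0 \<le> ent a b M) \<and> (\<forall>b. (\<Sum>a\<in>UNIV. ent a b M) = 1)"

definition l1 :: "real^'n::finite \<Rightarrow> real" where "l1 v = (\<Sum>a\<in>UNIV. \<bar>v$a\<bar>)"
definition vsum :: "real^'n::finite \<Rightarrow> real" where "vsum v = (\<Sum>a\<in>UNIV. v$a)"

lemma ent_add[simp]: "ent a b (X + Y) = ent a b X + ent a b Y"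
  by (simp add: ent_def plus_sqm.rep_eq)
lemma ent_diff[simp]: "ent a b (X - Y) = ent a b X - ent a b Y"
  by (simp add: ent_def minus_sqm.rep_eq)
lemma ent_scaleR[simp]: "ent a b (r *\<^sub>R X) = r * ent a b X"
  by (simp add: ent_def scaleR_sqm.rep_eq)
lemma ent_mult: "ent a b (X * Y) = (\<Sum>k\<in>UNIV. ent a k X * ent k b Y)"
  by (simp add: ent_def times_sqm.rep_eq matrix_matrix_mult_def)
lemma ent_one: "ent a b (1::'n::finite sqm) = (if a = b then 1 else 0)"
  by (simp add: ent_def one_sqm.rep_eq mat_def)
lemma ent_zero[simp]: "ent a b 0 = 0"
  by (simp add: ent_def zero_sqm.rep_eq)

lemma abs_ent_le_norm: "\<bar>ent a b X\<bar> \<le> norm X"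
proof -
  have "\<bar>ent a b X\<bar> \<le> (\<Sum>a\<in>UNIV. \<bar>mrep X$a$b\<bar>)" unfolding ent_def by (rule member_le_sum) auto
  also have "\<dots> \<le> norm X" by (simp add: norm_sqm.rep_eq cnorm_ge)
  finally show ?thesis .
qed

lemma bl_ent: "bounded_linear (ent a b :: 'n::finite sqm \<Rightarrow> real)"
  by (rule bounded_linear_intro[where K=1]) (auto simp: abs_ent_le_norm)

lemma bl_colsum: "bounded_linear (\<lambda>X::'n::finite sqm. \<Sum>a\<in>UNIV. ent a b X)"
  by (rule bounded_linear_sum) (rule bl_ent)

lemma stoch_one: "stoch (1::'n::finite sqm)"
  unfolding stoch_def by (simp add: ent_one)

lemma stoch_mult: assumes "stoch X" "stoch Y" shows "stoch (X * Y)"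
proof -
  have nn: "0 \<le> ent a b (X * Y)" for a b
    using assms unfolding stoch_def ent_mult by (auto intro!: sum_nonneg)
  have "(\<Sum>a\<in>UNIV. ent a b (X * Y)) = 1" for b
  proof -
    have "(\<Sum>a\<in>UNIV. ent a b (X * Y)) = (\<Sum>k\<in>UNIV. (\<Sum>a\<in>UNIV. ent a k X) * ent k b Y)"
      unfolding ent_mult by (subst sum.swap) (simp add: sum_distrib_right)
    also have "\<dots> = 1" using assms unfolding stoch_def by simp
    finally show ?thesis .
  qed
  then show ?thesis using nn unfolding stoch_def by simp
qed

lemma stoch_power: "stoch X \<Longrightarrow> stoch (X ^ n)"
  by (induction n) (auto simp: stoch_one stoch_mult)

lemma mv_mult: "mrep (X * Y) *v v = mrep X *v (mrep Y *v v)"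
  by (simp add: times_sqm.rep_eq matrix_vector_mul_assoc)

lemma mv_comp: "(mrep X *v v) $ a = (\<Sum>b\<in>UNIV. ent a b X * v $ b)"
  by (simp add: ent_def matrix_vector_mult_def)

lemma stoch_l1: assumes "stoch M" shows "l1 (mrep M *v v) \<le> l1 v"
proof -
  have "l1 (mrep M *v v) \<le> (\<Sum>a\<in>UNIV. \<Sum>b\<in>UNIV. ent a b M * \<bar>v$b\<bar>)"
    unfolding l1_def mv_comp
    using assms unfolding stoch_def
    by (intro sum_mono order_trans[OF sum_abs]) (simp add: abs_mult)
  also have "\<dots> = (\<Sum>b\<in>UNIV. (\<Sum>a\<in>UNIV. ent a b M) * \<bar>v$b\<bar>)"
    by (subst sum.swap) (simp add: sum_distrib_right)
  also have "\<dots> = l1 v" using assms unfolding stoch_def l1_def by simp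
  finally show ?thesis .
qed

lemma stoch_vsum: assumes "stoch M" shows "vsum (mrep M *v v) = vsum v"
proof -
  have "vsum (mrep M *v v) = (\<Sum>b\<in>UNIV. (\<Sum>a\<in>UNIV. ent a b M) * v$b)"
    unfolding vsum_def mv_comp by (subst sum.swap) (simp add: sum_distrib_right)
  then show ?thesis using assms unfolding stoch_def vsum_def by simp
qed

lemma doeblin_l1:
  assumes "stoch M" "\<And>b. ent s0 b M \<ge> \<delta>" "vsum v = 0"
  shows "l1 (mrep M *v v) \<le> (1 - \<delta>) * l1 v"
proof -
  define N where "N a b = ent a b M - (if a = s0 then \<delta> else 0)" for a b
  have N0: "0 \<le> N a b" for a b using assms(1,2) unfolding N_def stoch_def by auto
  have eq: "(mrep M *v v) $ a = (\<Sum>b\<in>UNIV. N a b * v $ b)" for a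
  proof -
    have "(\<Sum>b\<in>UNIV. N a b * v $ b) = (\<Sum>b\<in>UNIV. ent a b M * v $ b) - (if a = s0 then \<delta> else 0) * vsum v"
      unfolding N_def vsum_def by (simp add: algebra_simps sum_subtractf sum_distrib_left)
    then show ?thesis using assms(3) by (simp add: mv_comp)
  qed
  have "l1 (mrep M *v v) \<le> (\<Sum>a\<in>UNIV. \<Sum>b\<in>UNIV. N a b * \<bar>v$b\<bar>)"
    unfolding l1_def eq
    using N0 by (intro sum_mono order_trans[OF sum_abs]) (simp add: abs_mult)
  also have "\<dots> = (\<Sum>b\<in>UNIV. (\<Sum>a\<in>UNIV. N a b) * \<bar>v$b\<bar>)"
    by (subst sum.swap) (simp add: sum_distrib_right)
  also have "\<dots> = (\<Sum>b\<in>UNIV. (1 - \<delta>) * \<bar>v$b\<bar>)"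
  proof (rule sum.cong[OF refl])
    fix b
    have "(\<Sum>a\<in>UNIV. N a b) = (\<Sum>a\<in>UNIV. ent a b M) - (\<Sum>a\<in>UNIV. (if a = s0 then \<delta> else 0))"
      unfolding N_def by (simp add: sum_subtractf)
    also have "\<dots> = 1 - \<delta>" using assms(1) unfolding stoch_def by simp
    finally show "(\<Sum>a\<in>UNIV. N a b) * \<bar>v$b\<bar> = (1 - \<delta>) * \<bar>v$b\<bar>" by simp
  qed
  also have "\<dots> = (1 - \<delta>) * l1 v" unfolding l1_def by (simp add: sum_distrib_left)
  finally show ?thesis .
qed

lemma bb_mv: "bounded_bilinear (\<lambda>(M::'n::finite sqm) (v::real^'n). mrep M *v v)"
proof
  fix a a' :: "'n sqm" and b b' :: "real^'n" and r :: real
  show "mrep (a + a') *v b = mrep a *v b + mrep a' *v b"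
    by (simp add: plus_sqm.rep_eq matrix_vector_mult_add_rdistrib)
  show "mrep a *v (b + b') = mrep a *v b + mrep a *v b'"
    by (simp add: matrix_vector_right_distrib)
  show "mrep (r *\<^sub>R a) *v b = r *\<^sub>R (mrep a *v b)"
    by (simp add: scaleR_sqm.rep_eq vec_eq_iff matrix_vector_mult_def sum_distrib_left algebra_simps)
  show "mrep a *v (r *\<^sub>R b) = r *\<^sub>R (mrep a *v b)"
    by (simp add: matrix_vector_mult_scaleR)
next
  show "\<exists>K. \<forall>(a::'n sqm) (b::real^'n). norm (mrep a *v b) \<le> norm a * norm b * K"
  proof (intro exI allI)
    fix a :: "'n sqm" and b :: "real^'n"
    have "norm (mrep a *v b) \<le> l1 (mrep a *v b)" unfolding l1_def by (rule norm_le_l1_cart)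
    also have "\<dots> \<le> (\<Sum>i\<in>UNIV. \<Sum>j\<in>UNIV. \<bar>ent i j a\<bar> * \<bar>b$j\<bar>)"
      unfolding l1_def mv_comp by (intro sum_mono order_trans[OF sum_abs]) (simp add: abs_mult)
    also have "\<dots> = (\<Sum>j\<in>UNIV. (\<Sum>i\<in>UNIV. \<bar>ent i j a\<bar>) * \<bar>b$j\<bar>)"
      by (subst sum.swap) (simp add: sum_distrib_right)
    also have "\<dots> \<le> (\<Sum>j\<in>(UNIV::'n set). norm a * norm b)"
    proof (rule sum_mono)
      fix j
      have "(\<Sum>i\<in>UNIV. \<bar>ent i j a\<bar>) \<le> norm a" by (simp add: ent_def norm_sqm.rep_eq cnorm_ge)
      moreover have "\<bar>b$j\<bar> \<le> norm b" by (rule component_le_norm_cart)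
      ultimately show "(\<Sum>i\<in>UNIV. \<bar>ent i j a\<bar>) * \<bar>b$j\<bar> \<le> norm a * norm b"
        by (intro mult_mono) auto
    qed
    also have "\<dots> = norm a * norm b * real CARD('n)" by simp
    finally show "norm (mrep a *v b) \<le> norm a * norm b * real CARD('n)" .
  qed
qed

locale fastchain =
  fixes A :: "'n::finite sqm"
  assumes A_stoch: "stoch A"
    and A_doeb: "\<exists>s0. \<forall>b. \<exists>m. 0 < ent s0 b (A ^ m)"
begin

definition E :: "real \<Rightarrow> 'n sqm" where "E s = exp (s *\<^sub>R (A - 1))"

lemma ent_expA: "(\<lambda>n. (s ^ n / fact n) * ent a b (A ^ n)) sums ent a b (exp (s *\<^sub>R A))"
proof -
  have "(\<lambda>n. ent a b ((s *\<^sub>R A) ^ n /\<^sub>R fact n)) sums ent a b (exp (s *\<^sub>R A))"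
    by (rule bounded_linear.sums[OF bl_ent exp_converges])
  then show ?thesis by (simp add: scaleR_power divide_inverse mult.commute)
qed

lemma colsum_expA: "(\<Sum>a\<in>UNIV. ent a b (exp (s *\<^sub>R A))) = exp s"
proof -
  have "(\<lambda>n. \<Sum>a\<in>UNIV. ent a b ((s *\<^sub>R A) ^ n /\<^sub>R fact n)) sums (\<Sum>a\<in>UNIV. ent a b (exp (s *\<^sub>R A)))"
    by (rule bounded_linear.sums[OF bl_colsum exp_converges])
  moreover have "(\<Sum>a\<in>UNIV. ent a b ((s *\<^sub>R A) ^ n /\<^sub>R fact n)) = s ^ n /\<^sub>R fact n" for n
  proof -
    have "(\<Sum>a\<in>UNIV. ent a b ((s *\<^sub>R A) ^ n /\<^sub>R fact n)) = (s ^ n / fact n) * (\<Sum>a\<in>UNIV. ent a b (A ^ n))"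
      by (simp add: scaleR_power sum_distrib_left divide_inverse mult.commute mult.left_commute)
    also have "\<dots> = s ^ n /\<^sub>R fact n" using stoch_power[OF A_stoch, of n] unfolding stoch_def
      by (simp add: divide_inverse mult.commute)
    finally show ?thesis .
  qed
  ultimately have "(\<lambda>n. s ^ n /\<^sub>R fact n) sums (\<Sum>a\<in>UNIV. ent a b (exp (s *\<^sub>R A)))" by simp
  then show ?thesis using exp_converges[of s] sums_unique2 by blast
qed

lemma ent_expA_nonneg: "s \<ge> 0 \<Longrightarrow> 0 \<le> ent a b (exp (s *\<^sub>R A))"
  using sums_unique[OF ent_expA] stoch_power[OF A_stoch] unfolding stoch_def
  by (metis (no_types, lifting) divide_nonneg_pos fact_gt_zero mult_nonneg_nonneg ent_expA sums_summable suminf_nonneg zero_le_power)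

lemma ent_expA_ge: "s \<ge> 0 \<Longrightarrow> (s ^ m / fact m) * ent a b (A ^ m) \<le> ent a b (exp (s *\<^sub>R A))"
proof -
  assume s: "s \<ge> 0"
  have "sum (\<lambda>n. (s ^ n / fact n) * ent a b (A ^ n)) {m} \<le> (\<Sum>n. (s ^ n / fact n) * ent a b (A ^ n))"
    by (rule sum_le_suminf[OF sums_summable[OF ent_expA]])
       (use s stoch_power[OF A_stoch] in \<open>auto simp: stoch_def\<close>)
  then show ?thesis using sums_unique[OF ent_expA] by simp
qed

lemma E_alt: "E s = exp (- s) *\<^sub>R exp (s *\<^sub>R A)"
proof -
  have "s *\<^sub>R (A - 1) = s *\<^sub>R A + (- s) *\<^sub>R 1" by (simp add: algebra_simps)
  moreover have "(s *\<^sub>R A) * ((- s) *\<^sub>R 1) = ((- s) *\<^sub>R 1) * (s *\<^sub>R A)" by simp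
  ultimately have "E s = exp (s *\<^sub>R A) * exp ((- s) *\<^sub>R 1)"
    unfolding E_def by (simp only: exp_add_commuting)
  also have "exp ((- s) *\<^sub>R (1::'n sqm)) = of_real (exp (- s))"
    using exp_of_real[of "- s", where 'a="'n sqm"] by (simp add: of_real_def)
  finally show ?thesis by (simp add: of_real_def)
qed

lemma E_stoch: "s \<ge> 0 \<Longrightarrow> stoch (E s)"
  unfolding stoch_def E_alt
  by (simp add: ent_expA_nonneg sum_distrib_left[symmetric] colsum_expA exp_minus sum_divide_distrib[symmetric])

lemma E_add: "E (s + t) = E s * E t"
proof -
  have "(s *\<^sub>R (A - 1)) * (t *\<^sub>R (A - 1)) = (t *\<^sub>R (A - 1)) * (s *\<^sub>R (A - 1))" by simp
  then show ?thesis unfolding E_def by (simp add: scaleR_add_left exp_add_commuting)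
qed

lemma E_0[simp]: "E 0 = 1" unfolding E_def by simp

lemma E_deriv: "(E has_vector_derivative E s * (A - 1)) (at s within S)"
  unfolding E_def by (rule exp_scaleR_has_vector_derivative_right)

lemma E1_doeblin: "\<exists>s0 \<delta>. 0 < \<delta> \<and> \<delta> \<le> 1/2 \<and> (\<forall>b. \<delta> \<le> ent s0 b (E 1))"
proof -
  obtain s0 where "\<forall>b. \<exists>m. 0 < ent s0 b (A ^ m)" using A_doeb by blast
  then obtain mf where mf: "\<And>b. 0 < ent s0 b (A ^ mf b)" by metis
  define d where "d b = exp (- 1) * ((1 ^ mf b / fact (mf b)) * ent s0 b (A ^ mf b))" for b
  have dpos: "0 < d b" for b unfolding d_def using mf[of b] by simp
  have dle: "d b \<le> ent s0 b (E 1)" for b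
  proof -
    have "ent s0 b (A ^ mf b) / fact (mf b) \<le> ent s0 b (exp A)" using ent_expA_ge[of 1 "mf b" s0 b] by simp
    from mult_left_mono[OF this, of "exp (- 1)"] show ?thesis unfolding d_def E_alt by simp
  qed
  define \<delta> where "\<delta> = min (1/2) (Min (range d))"
  have "0 < Min (range d)" using dpos by (subst Min_gr_iff) auto
  then have "0 < \<delta>" unfolding \<delta>_def by simp
  moreover have "\<delta> \<le> ent s0 b (E 1)" for b
  proof -
    have "Min (range d) \<le> d b" by (rule Min_le) auto
    then show ?thesis using dle[of b] unfolding \<delta>_def by linarith
  qed
  moreover have "\<delta> \<le> 1/2" unfolding \<delta>_def by simp
  ultimately show ?thesis by blast
qed

lemma E_decay: "\<exists>C lam. 1 \<le> C \<and> 0 < lam \<and> (\<forall>s v. 0 \<le> s \<longrightarrow> vsum v = 0 \<longrightarrow> l1 (mrep (E s) *v v) \<le> C * exp (- lam * s) * l1 v)"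
proof -
  obtain s0 \<delta> where d: "0 < \<delta>" "\<delta> \<le> 1/2" "\<And>b. \<delta> \<le> ent s0 b (E 1)" using E1_doeblin by blast
  have ind: "\<forall>s v. real n \<le> s \<longrightarrow> vsum v = 0 \<longrightarrow> l1 (mrep (E s) *v v) \<le> (1 - \<delta>) ^ n * l1 v" for n
  proof (induction n)
    case 0
    then show ?case using stoch_l1[OF E_stoch] by simp
  next
    case (Suc n)
    show ?case
    proof (intro allI impI)
      fix s v assume s: "real (Suc n) \<le> s" and v: "vsum (v::real^'n) = 0"
      have "E s = E 1 * E (s - 1)" using E_add[of 1 "s - 1"] by simp
      then have "mrep (E s) *v v = mrep (E 1) *v (mrep (E (s - 1)) *v v)" by (simp add: mv_mult)
      moreover have "vsum (mrep (E (s - 1)) *v v) = 0"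
        using stoch_vsum[OF E_stoch, of "s - 1" v] s v by simp
      ultimately have "l1 (mrep (E s) *v v) \<le> (1 - \<delta>) * l1 (mrep (E (s - 1)) *v v)"
        using doeblin_l1[OF E_stoch[of 1] d(3)] by simp
      also have "\<dots> \<le> (1 - \<delta>) * ((1 - \<delta>) ^ n * l1 v)"
        using Suc.IH s v d by (intro mult_left_mono) auto
      finally show "l1 (mrep (E s) *v v) \<le> (1 - \<delta>) ^ Suc n * l1 v" by simp
    qed
  qed
  define lam where "lam = - ln (1 - \<delta>)"
  define C where "C = exp lam"
  have lam: "0 < lam" unfolding lam_def using d by simp
  have "l1 (mrep (E s) *v v) \<le> C * exp (- lam * s) * l1 v" if s: "0 \<le> s" and v: "vsum v = 0" for s v
  proof -
    define n where "n = nat \<lfloor>s\<rfloor>"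
    have n1: "real n \<le> s" "s - 1 \<le> real n" unfolding n_def using s by linarith+
    have "(1 - \<delta>) ^ n = exp (real n * ln (1 - \<delta>))" using exp_of_nat_mult[of n "ln (1 - \<delta>)"] d by simp
    then have "(1 - \<delta>) ^ n = exp (- lam * real n)" unfolding lam_def by (simp add: mult.commute)
    also have "\<dots> \<le> exp (- lam * (s - 1))" using lam n1 by simp
    also have "\<dots> = C * exp (- lam * s)" unfolding C_def by (simp add: algebra_simps exp_add[symmetric])
    finally have "(1 - \<delta>) ^ n \<le> C * exp (- lam * s)" .
    moreover have "0 \<le> l1 v" unfolding l1_def by (simp add: sum_nonneg)
    ultimately show ?thesis using ind[of n] n1 v by (meson mult_right_mono order_trans)
  qed
  moreover have "1 \<le> C" unfolding C_def using lam by simp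
  ultimately show ?thesis using lam by blast
qed


lemma vc: "\<exists>C lam. 0 < C \<and> 0 < lam \<and> (\<forall>k T e w W. 0 < k \<longrightarrow> 0 \<le> T \<longrightarrow>
   (\<forall>t\<in>{0..T}. (e has_vector_derivative (k *\<^sub>R (mrep (A - 1) *v e t) + w t)) (at t within {0..T})) \<longrightarrow>
   (\<forall>t\<in>{0..T}. vsum (w t) = 0 \<and> l1 (w t) \<le> W) \<longrightarrow> vsum (e 0) = 0 \<longrightarrow>
   l1 (e T) \<le> C * exp (- lam * (k * T)) * l1 (e 0) + C * W / (lam * k))"
proof -
  obtain C lam where C: "1 \<le> C" and lam: "0 < lam"
    and dec: "\<And>s v. 0 \<le> s \<Longrightarrow> vsum v = 0 \<Longrightarrow> l1 (mrep (E s) *v v) \<le> C * exp (- lam * s) * l1 v"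
    using E_decay by blast
  have "l1 (e T) \<le> C * exp (- lam * (k * T)) * l1 (e 0) + C * W / (lam * k)"
    if k: "0 < k" and T: "0 \<le> T"
      and de: "\<forall>t\<in>{0..T}. (e has_vector_derivative (k *\<^sub>R (mrep (A - 1) *v e t) + w t)) (at t within {0..T})"
      and w: "\<forall>t\<in>{0..T}. vsum (w t) = 0 \<and> l1 (w t) \<le> W" and e0: "vsum (e 0) = 0" for k T e w W
  proof -
    have l1nn: "0 \<le> l1 v" for v :: "real^'n" unfolding l1_def by (simp add: sum_nonneg)
    have W0: "0 \<le> W" using w[rule_format, of 0] T l1nn[of "w 0"] by simp
    define \<phi> where "\<phi> t = mrep (E (k * (T - t))) *v e t" for t
    have d\<phi>: "(\<phi> has_vector_derivative mrep (E (k * (T - t))) *v w t) (at t within {0..T})"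
      if t: "t \<in> {0..T}" for t
    proof -
      have f: "((\<lambda>t. k * (T - t)) has_vector_derivative (- k)) (at t within {0..T})"
        unfolding has_real_derivative_iff_has_vector_derivative[symmetric]
        by (auto intro!: derivative_eq_intros)
      have g: "(E has_vector_derivative E (k * (T - t)) * (A - 1)) (at (k * (T - t)) within (\<lambda>t. k * (T - t)) ` {0..T})"
        by (rule E_deriv)
      have fg: "((\<lambda>t. E (k * (T - t))) has_vector_derivative (- k) *\<^sub>R (E (k * (T - t)) * (A - 1))) (at t within {0..T})"
        using vector_diff_chain_within[OF f g] by (simp add: o_def)
      have "(\<phi> has_vector_derivative (mrep (E (k * (T - t))) *v (k *\<^sub>R (mrep (A - 1) *v e t) + w t)
              + mrep ((- k) *\<^sub>R (E (k * (T - t)) * (A - 1))) *v e t)) (at t within {0..T})"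
        unfolding \<phi>_def
        by (rule bounded_bilinear.has_vector_derivative[OF bb_mv, of "\<lambda>t. E (k * (T - t))", simplified, OF fg de[rule_format, OF t]])
      moreover have "mrep (E (k * (T - t))) *v (k *\<^sub>R (mrep (A - 1) *v e t) + w t)
              + mrep ((- k) *\<^sub>R (E (k * (T - t)) * (A - 1))) *v e t = mrep (E (k * (T - t))) *v w t"
        using bounded_bilinear.scaleR_left[OF bb_mv, of "- k" "E (k * (T - t)) * (A - 1)" "e t"]
        by (simp add: mv_mult matrix_vector_right_distrib matrix_vector_mult_scaleR)
      ultimately show ?thesis by simp
    qed
    define \<sigma> :: "real^'n" where "\<sigma> = (\<chi> a. if 0 \<le> (\<phi> T - \<phi> 0) $ a then 1 else - 1)"
    have inner_le: "inner \<sigma> x \<le> l1 x" for x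
      unfolding inner_vec_def l1_def \<sigma>_def by (intro sum_mono) auto
    have inner_eq: "inner \<sigma> (\<phi> T - \<phi> 0) = l1 (\<phi> T - \<phi> 0)"
      unfolding inner_vec_def l1_def \<sigma>_def by (intro sum.cong) auto
    define \<psi> where "\<psi> t = C * W / (lam * k) * exp (- lam * (k * (T - t)))" for t
    define h where "h t = inner \<sigma> (\<phi> t) - \<psi> t" for t
    have dh: "(h has_real_derivative (inner \<sigma> (mrep (E (k * (T - t))) *v w t) - C * W * exp (- lam * (k * (T - t))))) (at t within {0..T})"
      if t: "t \<in> {0..T}" for t
    proof -
      have a: "((\<lambda>t. inner \<sigma> (\<phi> t)) has_real_derivative inner \<sigma> (mrep (E (k * (T - t))) *v w t)) (at t within {0..T})"
        unfolding has_real_derivative_iff_has_vector_derivative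
        by (rule bounded_linear.has_vector_derivative[OF bounded_linear_inner_right d\<phi>[OF t]])
      have b: "(\<psi> has_real_derivative C * W * exp (- lam * (k * (T - t)))) (at t within {0..T})"
        unfolding \<psi>_def using lam k by (auto intro!: derivative_eq_intros simp: field_simps)
      show ?thesis unfolding h_def by (rule DERIV_diff[OF a b])
    qed
    have dh_nonpos: "inner \<sigma> (mrep (E (k * (T - t))) *v w t) - C * W * exp (- lam * (k * (T - t))) \<le> 0"
      if t: "t \<in> {0..T}" for t
    proof -
      have "inner \<sigma> (mrep (E (k * (T - t))) *v w t) \<le> l1 (mrep (E (k * (T - t))) *v w t)" by (rule inner_le)
      also have "\<dots> \<le> C * exp (- lam * (k * (T - t))) * l1 (w t)"
        using t k w by (intro dec) auto
      also have "\<dots> \<le> C * exp (- lam * (k * (T - t))) * W"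
        using t w C by (intro mult_left_mono) auto
      finally show ?thesis by (simp add: algebra_simps)
    qed
    have "h T \<le> h 0"
    proof -
      have "\<exists>x\<in>{0..T}. h T - h 0 = (\<lambda>d. (inner \<sigma> (mrep (E (k * (T - x))) *v w x) - C * W * exp (- lam * (k * (T - x)))) * d) (T - 0)"
        by (rule mvt_very_simple[OF T]) (use dh in \<open>auto simp: has_field_derivative_def\<close>)
      then obtain x where x: "x \<in> {0..T}" and eq: "h T - h 0 = T * (inner \<sigma> (mrep (E (k * (T - x))) *v w x) - C * W * exp (- lam * (k * (T - x))))"
        by (auto simp: mult.commute)
      have "T * (inner \<sigma> (mrep (E (k * (T - x))) *v w x) - C * W * exp (- lam * (k * (T - x)))) \<le> 0"
        using dh_nonpos[OF x] T by (simp add: mult_nonneg_nonpos)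
      then show ?thesis using eq by simp
    qed
    then have "inner \<sigma> (\<phi> T - \<phi> 0) \<le> \<psi> T - \<psi> 0" unfolding h_def by (simp add: inner_diff_right)
    also have "\<dots> \<le> C * W / (lam * k)"
      unfolding \<psi>_def using C W0 lam k by simp
    finally have 1: "l1 (\<phi> T - \<phi> 0) \<le> C * W / (lam * k)" using inner_eq by simp
    have "\<phi> T = e T" unfolding \<phi>_def by (simp add: one_sqm.rep_eq)
    moreover have "l1 (\<phi> 0) \<le> C * exp (- lam * (k * T)) * l1 (e 0)"
      unfolding \<phi>_def using k T e0 dec[of "k * T" "e 0"] by simp
    moreover have "l1 x \<le> l1 (x - y) + l1 y" for x y :: "real^'n"
      unfolding l1_def by (simp add: sum.distrib[symmetric] sum_mono abs_triangle_ineq4 order_trans[OF _ abs_triangle_ineq])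
    ultimately show ?thesis using 1 by (smt (verit))
  qed
  then show ?thesis using C lam by (intro exI[of _ C] exI[of _ lam]) auto
qed

end

locale model =
  fixes Sset :: "'c::finite \<Rightarrow> 's::finite set"
    and Pset :: "'c \<Rightarrow> 'u::finite set"
    and Act :: "'c \<Rightarrow> 's \<Rightarrow> 'a set"
    and phi :: "'c \<Rightarrow> 's \<Rightarrow> 'a \<Rightarrow> 's \<Rightarrow> real"
    and pol :: "'c \<Rightarrow> 'u \<Rightarrow> 's \<Rightarrow> 'a"
    and m :: "'c \<Rightarrow> real"
    and kappa :: "'c \<Rightarrow> real"
    and F :: "('c,'s,'u) pstate \<Rightarrow> real^'u^'c"
    and rho :: "'c \<Rightarrow> real^'u \<Rightarrow> real^'u \<Rightarrow> 'u \<Rightarrow> 'u \<Rightarrow> real"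
  assumes S_ne: "\<And>c. Sset c \<noteq> {}"
    and P_ne: "\<And>c. Pset c \<noteq> {}"
    and Act_fin: "\<And>c s. s \<in> Sset c \<Longrightarrow> finite (Act c s) \<and> Act c s \<noteq> {}"
    and phi_nonneg: "\<And>c s a s'. s \<in> Sset c \<Longrightarrow> a \<in> Act c s \<Longrightarrow> s' \<in> Sset c \<Longrightarrow> phi c s a s' \<ge> 0"
    and phi_sum: "\<And>c s a. s \<in> Sset c \<Longrightarrow> a \<in> Act c s \<Longrightarrow> (\<Sum>s'\<in>Sset c. phi c s a s') = 1"
    and pol_act: "\<And>c u s. u \<in> Pset c \<Longrightarrow> s \<in> Sset c \<Longrightarrow> pol c u s \<in> Act c s"
    and m_pos: "\<And>c. m c > 0"
    and kappa_ge: "\<And>c. kappa c \<ge> 1"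
    and unique_rec: "\<And>c u. u \<in> Pset c \<Longrightarrow> \<exists>!K. recurrent_class Sset Act phi pol c u K"
    and unique_stat: "\<And>c u. u \<in> Pset c \<Longrightarrow> \<exists>!\<eta>. stationary Sset Act phi pol c u \<eta>"
    and F_C1: "\<exists>U F'. open U \<and> Xset Sset Pset m \<subseteq> U \<and> (\<forall>\<mu>\<in>U. (F has_derivative blinfun_apply (F' \<mu>)) (at \<mu>))
                 \<and> continuous_on U F'"
    and rho_nonneg: "\<And>c p y u v. (\<forall>w. w \<notin> Pset c \<longrightarrow> p$w = 0 \<and> y$w = 0) \<Longrightarrow> (\<forall>w. y$w \<ge> 0)
                 \<Longrightarrow> u \<in> Pset c \<Longrightarrow> v \<in> Pset c \<Longrightarrow> rho c p y u v \<ge> 0"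
    and rho_lip: "\<exists>L. \<forall>c p y q z u v. (\<forall>w. w \<notin> Pset c \<longrightarrow> p$w = 0 \<and> y$w = 0 \<and> q$w = 0 \<and> z$w = 0)
                 \<longrightarrow> (\<forall>w. y$w \<ge> 0 \<and> z$w \<ge> 0) \<longrightarrow> u \<in> Pset c \<longrightarrow> v \<in> Pset c
                 \<longrightarrow> \<bar>rho c p y u v - rho c q z u v\<bar> \<le> L * (norm (p - q) + norm (y - z))"
begin

abbreviation "et \<equiv> eta Sset Act phi pol"
abbreviation "X \<equiv> Xset Sset Pset m"
abbreviation "D \<equiv> Dx Pset m"
abbreviation "Bm \<equiv> BSK Sset Pset et"
abbreviation "FF \<equiv> (\<lambda>x. F (Bm x))"

definition agg :: "('c,'s,'u) pstate \<Rightarrow> real^'u^'c" where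
  "agg \<mu> = (\<chi> c u. if u \<in> Pset c then (\<Sum>s\<in>Sset c. \<mu>$c$s$u) else 0)"

definition H :: "real^'u^'c \<Rightarrow> real^'u^'c \<Rightarrow> real^'u^'c" where
  "H p x = (\<chi> c u. if u \<in> Pset c then revflow Pset rho c (p$c) (x$c) (\<lambda>u'. x$c$u') u else 0)"

lemma gred_H: "gred Pset rho FF x = H (FF x) x"
  unfolding gred_def H_def by simp

lemma aggP_agg: "aggP Sset Pset \<mu> c = agg \<mu> $ c"
  unfolding aggP_def agg_def by simp

lemma et_stat: "u \<in> Pset c \<Longrightarrow> stationary Sset Act phi pol c u (et c u)"
  unfolding eta_def by (rule theI'[OF unique_stat])

lemma et_st: assumes u: "u \<in> Pset c"
  shows "(\<forall>s. s \<notin> Sset c \<longrightarrow> et c u s = 0) \<and> (\<forall>s\<in>Sset c. et c u s \<ge> 0) \<and> (\<Sum>s\<in>Sset c. et c u s) = 1 \<and>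
     (\<forall>s\<in>Sset c. et c u s = (\<Sum>s'\<in>Sset c. phiu Act phi pol c u s s' * et c u s'))"
proof -
  have "stationary Sset Act phi pol c u (et c u)" by (rule et_stat[OF u])
  then show ?thesis unfolding stationary_def .
qed

lemma et_zero: assumes u: "u \<in> Pset c" and s: "s \<notin> Sset c" shows "et c u s = 0"
proof -
  have "\<forall>s. s \<notin> Sset c \<longrightarrow> et c u s = 0" using et_st[OF u] by (rule conjunct1)
  then show ?thesis using s by simp
qed

lemma et_nonneg: assumes u: "u \<in> Pset c" shows "0 \<le> et c u s"
proof (cases "s \<in> Sset c")
  case True
  have "\<forall>s\<in>Sset c. et c u s \<ge> 0" using et_st[OF u] by (elim conjE)
  then show ?thesis using True by blast
next
  case False
  then show ?thesis using et_zero[OF u False] by simp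
qed

lemma et_sum: assumes u: "u \<in> Pset c" shows "(\<Sum>s\<in>Sset c. et c u s) = 1"
  using et_st[OF u] by (elim conjE)

lemma et_fix: assumes u: "u \<in> Pset c" and s: "s \<in> Sset c"
  shows "et c u s = (\<Sum>s'\<in>Sset c. phiu Act phi pol c u s s' * et c u s')"
proof -
  have "\<forall>s\<in>Sset c. et c u s = (\<Sum>s'\<in>Sset c. phiu Act phi pol c u s s' * et c u s')"
    using et_st[OF u] by (elim conjE)
  then show ?thesis using s by (rule bspec)
qed
lemmas et_props = et_zero et_nonneg et_sum

lemma et_sum_UNIV: "u \<in> Pset c \<Longrightarrow> (\<Sum>s\<in>UNIV. et c u s) = 1"
proof -
  assume u: "u \<in> Pset c"
  have "(\<Sum>s\<in>UNIV. et c u s) = (\<Sum>s\<in>Sset c. et c u s)"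
    by (rule sum.mono_neutral_right) (auto simp: et_props[OF u])
  then show ?thesis using et_props[OF u] by simp
qed

lemma polprob_sum: "s \<in> Sset c \<Longrightarrow> u \<in> Pset c \<Longrightarrow> (\<Sum>a\<in>Act c s. polprob pol c u s a) = 1"
  unfolding polprob_def using pol_act Act_fin by (simp add: sum.delta)

lemma phiu_nonneg: "s \<in> Sset c \<Longrightarrow> s' \<in> Sset c \<Longrightarrow> 0 \<le> phiu Act phi pol c u s s'"
  unfolding phiu_def polprob_def by (auto intro!: sum_nonneg phi_nonneg)

lemma phiu_colsum: "s' \<in> Sset c \<Longrightarrow> u \<in> Pset c \<Longrightarrow> (\<Sum>s\<in>Sset c. phiu Act phi pol c u s s') = 1"
proof -
  assume s': "s' \<in> Sset c" and u: "u \<in> Pset c"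
  have "(\<Sum>s\<in>Sset c. phiu Act phi pol c u s s') = (\<Sum>a\<in>Act c s'. polprob pol c u s' a * (\<Sum>s\<in>Sset c. phi c s' a s))"
    unfolding phiu_def by (subst sum.swap) (simp add: sum_distrib_left mult.commute)
  also have "\<dots> = (\<Sum>a\<in>Act c s'. polprob pol c u s' a)" using phi_sum[OF s'] by simp
  also have "\<dots> = 1" by (rule polprob_sum[OF s' u])
  finally show ?thesis .
qed

lemma X_mem: "\<mu> \<in> X \<longleftrightarrow> (\<forall>c. (\<forall>s u. \<mu>$c$s$u \<ge> 0) \<and> (\<forall>s u. (s \<notin> Sset c \<or> u \<notin> Pset c) \<longrightarrow> \<mu>$c$s$u = 0) \<and>
      (\<Sum>s\<in>Sset c. \<Sum>u\<in>Pset c. \<mu>$c$s$u) = m c)"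
  unfolding Xset_def by simp

lemma D_mem: "x \<in> D \<longleftrightarrow> (\<forall>c. (\<forall>u. x$c$u \<ge> 0) \<and> (\<forall>u. u \<notin> Pset c \<longrightarrow> x$c$u = 0) \<and> (\<Sum>u\<in>Pset c. x$c$u) = m c)"
  unfolding Dx_def by simp

lemma agg_in_D: "\<mu> \<in> X \<Longrightarrow> agg \<mu> \<in> D"
  unfolding D_mem X_mem agg_def by (auto intro!: sum_nonneg simp: sum.swap[of _ "Sset _"])

lemma agg_Bm: "x \<in> D \<Longrightarrow> agg (Bm x) = x"
  unfolding agg_def BSK_def D_mem
  by (auto simp: vec_eq_iff sum_distrib_left[symmetric] et_props)

lemma Bm_comp: "Bm x $ c $ s $ u = (if s \<in> Sset c \<and> u \<in> Pset c then x $ c $ u * et c u s else 0)"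
  unfolding BSK_def by simp

lemma Bm_in_X: "x \<in> D \<Longrightarrow> Bm x \<in> X"
proof -
  assume x: "x \<in> D"
  show ?thesis unfolding X_mem
  proof (rule allI)
    fix c
    have 1: "\<forall>s u. 0 \<le> Bm x $ c $ s $ u"
      using x by (auto simp: Bm_comp D_mem et_nonneg)
    have 2: "\<forall>s u. s \<notin> Sset c \<or> u \<notin> Pset c \<longrightarrow> Bm x $ c $ s $ u = 0"
      by (auto simp: Bm_comp)
    have "(\<Sum>s\<in>Sset c. \<Sum>u\<in>Pset c. x $ c $ u * et c u s) = (\<Sum>u\<in>Pset c. x $ c $ u * (\<Sum>s\<in>Sset c. et c u s))"
      by (subst sum.swap) (simp add: sum_distrib_left)
    also have "\<dots> = m c" using x by (simp add: et_sum D_mem)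
    finally have "(\<Sum>s\<in>Sset c. \<Sum>u\<in>Pset c. Bm x $ c $ s $ u) = m c"
      by (simp add: Bm_comp)
    then show "(\<forall>s u. 0 \<le> Bm x $ c $ s $ u) \<and> (\<forall>s u. s \<notin> Sset c \<or> u \<notin> Pset c \<longrightarrow> Bm x $ c $ s $ u = 0) \<and> (\<Sum>s\<in>Sset c. \<Sum>u\<in>Pset c. Bm x $ c $ s $ u) = m c"
      using 1 2 by blast
  qed
qed

lemma linear_agg: "linear agg"
  by (rule linearI) (auto simp: agg_def vec_eq_iff sum.distrib sum_distrib_left)

lemma linear_Bm: "linear Bm"
  by (rule linearI) (auto simp: BSK_def vec_eq_iff algebra_simps)

lemma bl_agg: "bounded_linear agg" using linear_agg linear_conv_bounded_linear by blast
lemma bl_Bm: "bounded_linear Bm" using linear_Bm linear_conv_bounded_linear by blast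


lemma norm3: "norm (\<mu>::('c,'s,'u) pstate) \<le> (\<Sum>c\<in>UNIV. \<Sum>s\<in>UNIV. \<Sum>u\<in>UNIV. \<bar>\<mu>$c$s$u\<bar>)"
proof -
  have "norm \<mu> \<le> (\<Sum>c\<in>UNIV. norm (\<mu>$c))" by (rule norm_le_sum_norm_cart)
  also have "\<dots> \<le> (\<Sum>c\<in>UNIV. \<Sum>s\<in>UNIV. norm (\<mu>$c$s))" by (intro sum_mono norm_le_sum_norm_cart)
  also have "\<dots> \<le> (\<Sum>c\<in>UNIV. \<Sum>s\<in>UNIV. \<Sum>u\<in>UNIV. \<bar>\<mu>$c$s$u\<bar>)" by (intro sum_mono norm_le_l1_cart)
  finally show ?thesis .
qed

lemma norm2: "norm (x::real^'u^'c) \<le> (\<Sum>c\<in>UNIV. \<Sum>u\<in>UNIV. \<bar>x$c$u\<bar>)"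
proof -
  have "norm x \<le> (\<Sum>c\<in>UNIV. norm (x$c))" by (rule norm_le_sum_norm_cart)
  also have "\<dots> \<le> (\<Sum>c\<in>UNIV. \<Sum>u\<in>UNIV. \<bar>x$c$u\<bar>)" by (intro sum_mono norm_le_l1_cart)
  finally show ?thesis .
qed

lemma comp3_le: "\<bar>\<mu>$c$s$u\<bar> \<le> norm (\<mu>::('c,'s,'u) pstate)"
  by (meson component_le_norm_cart Finite_Cartesian_Product.norm_nth_le order_trans)

lemma comp2_le: "\<bar>x$c$u\<bar> \<le> norm (x::real^'u^'c)"
  by (meson component_le_norm_cart Finite_Cartesian_Product.norm_nth_le order_trans)

definition mmax where "mmax = Max (range m)"
lemma m_le: "m c \<le> mmax" unfolding mmax_def by (rule Max_ge) auto
lemma mmax_pos: "0 < mmax" using m_le[of undefined] m_pos[of undefined] by linarith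

lemma X_comp_le: "\<mu> \<in> X \<Longrightarrow> 0 \<le> \<mu>$c$s$u \<and> \<mu>$c$s$u \<le> m c"
proof -
  assume mu: "\<mu> \<in> X"
  have nn: "\<forall>s u. 0 \<le> \<mu>$c$s$u" using mu unfolding X_mem by blast
  show ?thesis
  proof (cases "s \<in> Sset c \<and> u \<in> Pset c")
    case True
    have "\<mu>$c$s$u \<le> (\<Sum>u\<in>Pset c. \<mu>$c$s$u)" using True nn by (intro member_le_sum) auto
    also have "\<dots> \<le> (\<Sum>s\<in>Sset c. \<Sum>u\<in>Pset c. \<mu>$c$s$u)" using True nn by (intro member_le_sum sum_nonneg) auto
    also have "\<dots> = m c" using mu unfolding X_mem by blast
    finally show ?thesis using nn by simp
  next
    case False
    then have "\<mu>$c$s$u = 0" using mu unfolding X_mem by blast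
    then show ?thesis using m_pos[of c] by simp
  qed
qed

lemma D_comp_le: "x \<in> D \<Longrightarrow> 0 \<le> x$c$u \<and> x$c$u \<le> m c"
proof -
  assume x: "x \<in> D"
  have nn: "\<forall>u. 0 \<le> x$c$u" using x unfolding D_mem by blast
  show ?thesis
  proof (cases "u \<in> Pset c")
    case True
    have "x$c$u \<le> (\<Sum>u\<in>Pset c. x$c$u)" using True nn by (intro member_le_sum) auto
    also have "\<dots> = m c" using x unfolding D_mem by blast
    finally show ?thesis using nn by simp
  next
    case False
    then have "x$c$u = 0" using x unfolding D_mem by blast
    then show ?thesis using m_pos[of c] by simp
  qed
qed

lemma bounded_X: "bounded X"
proof -
  have "norm \<mu> \<le> real CARD('c) * real CARD('s) * real CARD('u) * mmax" if "\<mu> \<in> X" for \<mu>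
  proof -
    have "\<bar>\<mu>$c$s$u\<bar> \<le> mmax" for c s u using X_comp_le[OF that, of c s u] m_le[of c] by simp
    then have "(\<Sum>c\<in>UNIV. \<Sum>s\<in>UNIV. \<Sum>u\<in>UNIV. \<bar>\<mu>$c$s$u\<bar>) \<le> (\<Sum>c\<in>(UNIV::'c set). \<Sum>s\<in>(UNIV::'s set). \<Sum>u\<in>(UNIV::'u set). mmax)"
      by (intro sum_mono)
    then have "norm \<mu> \<le> (\<Sum>c\<in>(UNIV::'c set). \<Sum>s\<in>(UNIV::'s set). \<Sum>u\<in>(UNIV::'u set). mmax)"
      using norm3[of \<mu>] by linarith
    then show ?thesis by (simp add: mult.assoc)
  qed
  then show ?thesis unfolding bounded_iff by blast
qed

lemma bounded_D: "bounded D"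
proof -
  have "norm x \<le> real CARD('c) * real CARD('u) * mmax" if "x \<in> D" for x
  proof -
    have "\<bar>x$c$u\<bar> \<le> mmax" for c u using D_comp_le[OF that, of c u] m_le[of c] by simp
    then have "(\<Sum>c\<in>UNIV. \<Sum>u\<in>UNIV. \<bar>x$c$u\<bar>) \<le> (\<Sum>c\<in>(UNIV::'c set). \<Sum>u\<in>(UNIV::'u set). mmax)"
      by (intro sum_mono)
    then have "norm x \<le> (\<Sum>c\<in>(UNIV::'c set). \<Sum>u\<in>(UNIV::'u set). mmax)"
      using norm2[of x] by linarith
    then show ?thesis by (simp add: mult.assoc)
  qed
  then show ?thesis unfolding bounded_iff by blast
qed

lemma closed_X: "closed X"
proof -
  have "X = (\<Inter>c. \<Inter>s. \<Inter>u. {\<mu>. 0 \<le> \<mu>$c$s$u}) \<inter>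
            (\<Inter>c. \<Inter>s. \<Inter>u\<in>{u. s \<notin> Sset c \<or> u \<notin> Pset c}. {\<mu>. \<mu>$c$s$u = 0}) \<inter>
            (\<Inter>c. {\<mu>. (\<Sum>s\<in>Sset c. \<Sum>u\<in>Pset c. \<mu>$c$s$u) = m c})"
    unfolding Xset_def by (auto split: if_splits)
  moreover have "closed \<dots>"
    by (intro closed_Int closed_INT ballI)
       (auto intro!: closed_Collect_le closed_Collect_eq continuous_intros)
  ultimately show ?thesis by simp
qed

lemma closed_D: "closed D"
proof -
  have "D = (\<Inter>c. \<Inter>u. {x. 0 \<le> x$c$u}) \<inter>
            (\<Inter>c. \<Inter>u\<in>{u. u \<notin> Pset c}. {x. x$c$u = 0}) \<inter>
            (\<Inter>c. {x. (\<Sum>u\<in>Pset c. x$c$u) = m c})"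
    unfolding Dx_def by (auto split: if_splits)
  moreover have "closed \<dots>"
    by (intro closed_Int closed_INT ballI)
       (auto intro!: closed_Collect_le closed_Collect_eq continuous_intros)
  ultimately show ?thesis by simp
qed

lemma compact_X: "compact X" using bounded_X closed_X by (simp add: compact_eq_bounded_closed)
lemma compact_D: "compact D" using bounded_D closed_D by (simp add: compact_eq_bounded_closed)

lemma convex_X: "convex X"
  unfolding convex_def
proof (intro ballI allI impI)
  fix \<mu> \<nu> :: "('c,'s,'u) pstate" and a b :: real
  assume mu: "\<mu> \<in> X" and nu: "\<nu> \<in> X" and ab: "0 \<le> a" "0 \<le> b" "a + b = 1"
  show "a *\<^sub>R \<mu> + b *\<^sub>R \<nu> \<in> X"
    unfolding X_mem
  proof (rule allI)
    fix c
    have 1: "\<forall>s u. 0 \<le> (a *\<^sub>R \<mu> + b *\<^sub>R \<nu>)$c$s$u"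
      using mu nu ab unfolding X_mem by simp
    have 2: "\<forall>s u. (s \<notin> Sset c \<or> u \<notin> Pset c) \<longrightarrow> (a *\<^sub>R \<mu> + b *\<^sub>R \<nu>)$c$s$u = 0"
      using mu nu unfolding X_mem by simp
    have "(\<Sum>s\<in>Sset c. \<Sum>u\<in>Pset c. (a *\<^sub>R \<mu> + b *\<^sub>R \<nu>)$c$s$u)
        = a * (\<Sum>s\<in>Sset c. \<Sum>u\<in>Pset c. \<mu>$c$s$u) + b * (\<Sum>s\<in>Sset c. \<Sum>u\<in>Pset c. \<nu>$c$s$u)"
      by (simp add: sum.distrib sum_distrib_left)
    also have "\<dots> = (a + b) * m c" using mu nu unfolding X_mem by (simp add: distrib_right)
    finally have 3: "(\<Sum>s\<in>Sset c. \<Sum>u\<in>Pset c. (a *\<^sub>R \<mu> + b *\<^sub>R \<nu>)$c$s$u) = m c" using ab by simp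
    show "(\<forall>s u. 0 \<le> (a *\<^sub>R \<mu> + b *\<^sub>R \<nu>)$c$s$u) \<and> (\<forall>s u. (s \<notin> Sset c \<or> u \<notin> Pset c) \<longrightarrow> (a *\<^sub>R \<mu> + b *\<^sub>R \<nu>)$c$s$u = 0) \<and>
      (\<Sum>s\<in>Sset c. \<Sum>u\<in>Pset c. (a *\<^sub>R \<mu> + b *\<^sub>R \<nu>)$c$s$u) = m c" using 1 2 3 by blast
  qed
qed

lemma F_lip: "\<exists>LF. 0 \<le> LF \<and> (\<forall>\<mu>\<in>X. \<forall>\<nu>\<in>X. norm (F \<mu> - F \<nu>) \<le> LF * norm (\<mu> - \<nu>))"
proof -
  obtain U F' where U: "open U" "X \<subseteq> U" and dF: "\<forall>\<mu>\<in>U. (F has_derivative blinfun_apply (F' \<mu>)) (at \<mu>)"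
    and cF: "continuous_on U F'" using F_C1 by blast
  have "compact (F' ` X)" using compact_X cF U(2) by (intro compact_continuous_image) (auto intro: continuous_on_subset)
  then obtain B where B: "\<forall>\<mu>\<in>X. norm (F' \<mu>) \<le> B"
    using compact_imp_bounded[of "F' ` X"] unfolding bounded_iff by auto
  have "norm (F \<mu> - F \<nu>) \<le> B * norm (\<mu> - \<nu>)" if "\<mu> \<in> X" "\<nu> \<in> X" for \<mu> \<nu>
    by (rule differentiable_bound[OF convex_X _ _ that])
       (use dF U B in \<open>auto intro: has_derivative_at_withinI simp: norm_blinfun.rep_eq[symmetric]\<close>)
  then have "norm (F \<mu> - F \<nu>) \<le> max 0 B * norm (\<mu> - \<nu>)" if "\<mu> \<in> X" "\<nu> \<in> X" for \<mu> \<nu>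
    using that by (meson max.cobounded2 mult_right_mono norm_ge_zero order_trans)
  then show ?thesis by (intro exI[of _ "max 0 B"]) auto
qed


lemma F_bdd: "\<exists>Fb. 0 \<le> Fb \<and> (\<forall>\<mu>\<in>X. norm (F \<mu>) \<le> Fb)"
proof -
  obtain LF where LF: "0 \<le> LF" "\<forall>\<mu>\<in>X. \<forall>\<nu>\<in>X. norm (F \<mu> - F \<nu>) \<le> LF * norm (\<mu> - \<nu>)" using F_lip by blast
  have "continuous_on X F"
    unfolding continuous_on_iff
  proof (intro ballI allI impI)
    fix x e assume x: "x \<in> X" and e: "(0::real) < e"
    show "\<exists>d>0. \<forall>x'\<in>X. dist x' x < d \<longrightarrow> dist (F x') (F x) < e"
    proof (intro exI[of _ "e / (LF + 1)"] conjI ballI impI)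
      show "0 < e / (LF + 1)" using e LF by simp
      fix x' assume x': "x' \<in> X" and d: "dist x' x < e / (LF + 1)"
      have "dist (F x') (F x) \<le> LF * dist x' x" using LF x x' by (simp add: dist_norm)
      also have "\<dots> \<le> (LF + 1) * dist x' x" by (simp add: mult_right_mono)
      also have "\<dots> < (LF + 1) * (e / (LF + 1))" using d LF by (intro mult_strict_left_mono) auto
      finally show "dist (F x') (F x) < e" using LF by simp
    qed
  qed
  then have "compact (F ` X)" using compact_X by (rule compact_continuous_image)
  then have "bounded (F ` X)" by (rule compact_imp_bounded)
  then obtain B where "\<forall>\<mu>\<in>X. norm (F \<mu>) \<le> B" unfolding bounded_iff by auto
  then show ?thesis by (intro exI[of _ "max 0 B"]) force
qed

lemma rf_diff:
  fixes a b :: "'v \<Rightarrow> real" and r s :: "'v \<Rightarrow> 'v \<Rightarrow> real"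
  assumes Q: "finite Q" and u: "u \<in> Q" and A: "\<forall>v\<in>Q. \<bar>a v\<bar> \<le> A"
    and da: "\<forall>v\<in>Q. \<bar>a v - b v\<bar> \<le> da"
    and dr: "\<forall>v\<in>Q. \<forall>w\<in>Q. \<bar>r v w - s v w\<bar> \<le> dr" and R: "\<forall>v\<in>Q. \<forall>w\<in>Q. \<bar>s v w\<bar> \<le> R"
  shows "\<bar>((\<Sum>v\<in>Q. a v * r v u) - a u * (\<Sum>v\<in>Q. r u v)) - ((\<Sum>v\<in>Q. b v * s v u) - b u * (\<Sum>v\<in>Q. s u v))\<bar>
         \<le> 2 * real (card Q) * (A * dr + da * R)"
proof -
  have key: "\<bar>a v * r v' w - b v * s v' w\<bar> \<le> A * dr + da * R" if "v \<in> Q" "v' \<in> Q" "w \<in> Q" for v v' w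
  proof -
    have "a v * r v' w - b v * s v' w = a v * (r v' w - s v' w) + (a v - b v) * s v' w" by (simp add: algebra_simps)
    then have "\<bar>a v * r v' w - b v * s v' w\<bar> \<le> \<bar>a v\<bar> * \<bar>r v' w - s v' w\<bar> + \<bar>a v - b v\<bar> * \<bar>s v' w\<bar>"
      by (metis abs_mult abs_triangle_ineq)
    also have "\<dots> \<le> A * dr + da * R"
      using that A da dr R by (intro add_mono mult_mono) auto
    finally show ?thesis .
  qed
  have t1: "\<bar>(\<Sum>v\<in>Q. a v * r v u) - (\<Sum>v\<in>Q. b v * s v u)\<bar> \<le> real (card Q) * (A * dr + da * R)"
  proof -
    have "\<bar>(\<Sum>v\<in>Q. a v * r v u) - (\<Sum>v\<in>Q. b v * s v u)\<bar> = \<bar>\<Sum>v\<in>Q. a v * r v u - b v * s v u\<bar>"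
      by (simp add: sum_subtractf)
    also have "\<dots> \<le> (\<Sum>v\<in>Q. \<bar>a v * r v u - b v * s v u\<bar>)" by (rule sum_abs)
    also have "\<dots> \<le> (\<Sum>v\<in>Q. A * dr + da * R)" using key u by (intro sum_mono) auto
    finally show ?thesis by simp
  qed
  have t2: "\<bar>a u * (\<Sum>v\<in>Q. r u v) - b u * (\<Sum>v\<in>Q. s u v)\<bar> \<le> real (card Q) * (A * dr + da * R)"
  proof -
    have "\<bar>a u * (\<Sum>v\<in>Q. r u v) - b u * (\<Sum>v\<in>Q. s u v)\<bar> = \<bar>\<Sum>v\<in>Q. a u * r u v - b u * s u v\<bar>"
      by (simp add: sum_subtractf sum_distrib_left)
    also have "\<dots> \<le> (\<Sum>v\<in>Q. \<bar>a u * r u v - b u * s u v\<bar>)" by (rule sum_abs)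
    also have "\<dots> \<le> (\<Sum>v\<in>Q. A * dr + da * R)" using key u by (intro sum_mono) auto
    finally show ?thesis by simp
  qed
  show ?thesis using t1 t2 by linarith
qed

lemma restrP_norm: "norm (restrP Pset c p) \<le> norm p"
  by (rule norm_le_componentwise_cart) (simp add: restrP_def)

lemma restrP_diff: "restrP Pset c p - restrP Pset c q = restrP Pset c (p - q)"
  by (simp add: restrP_def vec_eq_iff)

lemma restrP_adm: "\<forall>w. w \<notin> Pset c \<longrightarrow> restrP Pset c p $ w = 0"
  by (simp add: restrP_def)

lemma rho_L0: "\<exists>L0. 0 \<le> L0 \<and> (\<forall>c p y q z u v. (\<forall>w. y$w \<ge> 0 \<and> z$w \<ge> 0) \<longrightarrow> u \<in> Pset c \<longrightarrow> v \<in> Pset c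
   \<longrightarrow> \<bar>rho c (restrP Pset c p) (restrP Pset c y) u v - rho c (restrP Pset c q) (restrP Pset c z) u v\<bar> \<le> L0 * (norm (p - q) + norm (y - z)))"
proof -
  obtain L where L: "\<forall>c p y q z u v. (\<forall>w. w \<notin> Pset c \<longrightarrow> p$w = 0 \<and> y$w = 0 \<and> q$w = 0 \<and> z$w = 0)
                 \<longrightarrow> (\<forall>w. y$w \<ge> 0 \<and> z$w \<ge> 0) \<longrightarrow> u \<in> Pset c \<longrightarrow> v \<in> Pset c
                 \<longrightarrow> \<bar>rho c p y u v - rho c q z u v\<bar> \<le> L * (norm (p - q) + norm (y - z))" using rho_lip by blast
  have "\<bar>rho c (restrP Pset c p) (restrP Pset c y) u v - rho c (restrP Pset c q) (restrP Pset c z) u v\<bar> \<le> max 0 L * (norm (p - q) + norm (y - z))"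
    if yz: "\<forall>w. y$w \<ge> 0 \<and> z$w \<ge> 0" and uv: "u \<in> Pset c" "v \<in> Pset c" for c p y q z u v
  proof -
    have "\<bar>rho c (restrP Pset c p) (restrP Pset c y) u v - rho c (restrP Pset c q) (restrP Pset c z) u v\<bar>
       \<le> L * (norm (restrP Pset c p - restrP Pset c q) + norm (restrP Pset c y - restrP Pset c z))"
      using L[rule_format, of c "restrP Pset c p" "restrP Pset c y" "restrP Pset c q" "restrP Pset c z" u v] yz uv
      by (simp add: restrP_def)
    also have "\<dots> \<le> max 0 L * (norm (restrP Pset c p - restrP Pset c q) + norm (restrP Pset c y - restrP Pset c z))"
      by (intro mult_right_mono) auto
    also have "\<dots> \<le> max 0 L * (norm (p - q) + norm (y - z))"
      unfolding restrP_diff by (intro mult_left_mono add_mono restrP_norm) auto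
    finally show ?thesis .
  qed
  then show ?thesis by (intro exI[of _ "max 0 L"]) auto
qed


lemma D_bdd: "\<exists>DB. 0 \<le> DB \<and> (\<forall>x\<in>D. norm x \<le> DB)"
proof -
  obtain B where "\<forall>x\<in>D. norm x \<le> B" using bounded_D unfolding bounded_iff by auto
  then show ?thesis by (intro exI[of _ "max 0 B"]) force
qed

lemma rho_bdd: "\<exists>Rb. 0 \<le> Rb \<and> (\<forall>c p y u v. norm p \<le> Fb \<longrightarrow> norm y \<le> Yb \<longrightarrow> (\<forall>w. y$w \<ge> 0) \<longrightarrow> u \<in> Pset c \<longrightarrow> v \<in> Pset c
   \<longrightarrow> \<bar>rho c (restrP Pset c p) (restrP Pset c y) u v\<bar> \<le> Rb)"
proof -
  obtain L0 where L0: "0 \<le> L0" and Lip: "\<forall>c p y q z u v. (\<forall>w. y$w \<ge> 0 \<and> z$w \<ge> 0) \<longrightarrow> u \<in> Pset c \<longrightarrow> v \<in> Pset c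
   \<longrightarrow> \<bar>rho c (restrP Pset c p) (restrP Pset c y) u v - rho c (restrP Pset c q) (restrP Pset c z) u v\<bar> \<le> L0 * (norm (p - q) + norm (y - z))"
    using rho_L0 by blast
  define R0 where "R0 = Max (range (\<lambda>(c,u,v). \<bar>rho c (restrP Pset c 0) (restrP Pset c 0) u v\<bar>))"
  have R0: "\<bar>rho c (restrP Pset c 0) (restrP Pset c 0) u v\<bar> \<le> R0" for c u v
    unfolding R0_def by (rule Max_ge) (auto intro!: image_eqI[of _ _ "(c,u,v)"])
  have "\<bar>rho c (restrP Pset c p) (restrP Pset c y) u v\<bar> \<le> R0 + L0 * (max 0 Fb + max 0 Yb)"
    if "norm p \<le> Fb" "norm y \<le> Yb" "\<forall>w. y$w \<ge> 0" "u \<in> Pset c" "v \<in> Pset c" for c p y u v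
  proof -
    have "\<bar>rho c (restrP Pset c p) (restrP Pset c y) u v - rho c (restrP Pset c 0) (restrP Pset c 0) u v\<bar> \<le> L0 * (norm (p - 0) + norm (y - 0))"
      using Lip[rule_format, of y 0 u c v p 0] that by simp
    also have "\<dots> \<le> L0 * (max 0 Fb + max 0 Yb)" using that L0 by (intro mult_left_mono add_mono) auto
    finally show ?thesis using R0[of c u v] by linarith
  qed
  moreover have "0 \<le> R0 + L0 * (max 0 Fb + max 0 Yb)" using R0[of undefined undefined undefined] L0 by simp
  ultimately show ?thesis by blast
qed

lemma H_comp: "H p x $ c $ u = (if u \<in> Pset c then
   (\<Sum>v\<in>Pset c. x$c$v * rho c (restrP Pset c (p$c)) (restrP Pset c (x$c)) v u) - x$c$u * (\<Sum>v\<in>Pset c. rho c (restrP Pset c (p$c)) (restrP Pset c (x$c)) u v)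
   else 0)"
  unfolding H_def revflow_def by simp

lemma H_lip: assumes Fb: "0 \<le> Fb"
  shows "\<exists>LH. 0 \<le> LH \<and> (\<forall>x\<in>D. \<forall>z\<in>D. \<forall>p q. norm p \<le> Fb \<longrightarrow> norm q \<le> Fb \<longrightarrow> norm (H p x - H q z) \<le> LH * (norm (p - q) + norm (x - z)))"
proof -
  obtain DB where DB: "0 \<le> DB" "\<forall>x\<in>D. norm x \<le> DB" using D_bdd by blast
  obtain L0 where L0: "0 \<le> L0" and Lip: "\<forall>c p y q z u v. (\<forall>w. y$w \<ge> 0 \<and> z$w \<ge> 0) \<longrightarrow> u \<in> Pset c \<longrightarrow> v \<in> Pset c
   \<longrightarrow> \<bar>rho c (restrP Pset c p) (restrP Pset c y) u v - rho c (restrP Pset c q) (restrP Pset c z) u v\<bar> \<le> L0 * (norm (p - q) + norm (y - z))"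
    using rho_L0 by blast
  obtain Rb where Rb: "0 \<le> Rb" "\<forall>c p y u v. norm p \<le> Fb \<longrightarrow> norm y \<le> DB \<longrightarrow> (\<forall>w. y$w \<ge> 0) \<longrightarrow> u \<in> Pset c \<longrightarrow> v \<in> Pset c
   \<longrightarrow> \<bar>rho c (restrP Pset c p) (restrP Pset c y) u v\<bar> \<le> Rb" using rho_bdd by blast
  define K where "K = 2 * real CARD('u) * (mmax * L0 + Rb)"
  have K0: "0 \<le> K" unfolding K_def using mmax_pos L0 Rb by simp
  have comp: "\<bar>(H p x - H q z) $ c $ u\<bar> \<le> K * (norm (p - q) + norm (x - z))"
    if x: "x \<in> D" and z: "z \<in> D" and p: "norm p \<le> Fb" and q: "norm q \<le> Fb" for x z p q c u
  proof (cases "u \<in> Pset c")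
    case False
    then show ?thesis using K0 by (simp add: H_comp)
  next
    case True
    have nnx: "\<forall>w. 0 \<le> x$c$w" and nnz: "\<forall>w. 0 \<le> z$c$w" using x z unfolding D_mem by auto
    have nc: "norm (p$c) \<le> Fb" "norm (q$c) \<le> Fb" "norm (z$c) \<le> DB"
      using p q DB z Finite_Cartesian_Product.norm_nth_le order_trans by blast+
    have "\<bar>(H p x - H q z) $ c $ u\<bar> \<le> 2 * real (card (Pset c)) * (mmax * (L0 * (norm (p - q) + norm (x - z))) + norm (x - z) * Rb)"
      unfolding vector_minus_component H_comp if_P[OF True]
    proof (rule rf_diff[OF finite True])
      show "\<forall>v\<in>Pset c. \<bar>x$c$v\<bar> \<le> mmax"
      proof
        fix v show "\<bar>x$c$v\<bar> \<le> mmax" using D_comp_le[OF x, of c v] m_le[of c] by simp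
      qed
      show "\<forall>v\<in>Pset c. \<bar>x$c$v - z$c$v\<bar> \<le> norm (x - z)" using comp2_le[of "x - z"] by simp
      show "\<forall>v\<in>Pset c. \<forall>w\<in>Pset c. \<bar>rho c (restrP Pset c (p$c)) (restrP Pset c (x$c)) v w - rho c (restrP Pset c (q$c)) (restrP Pset c (z$c)) v w\<bar>
               \<le> L0 * (norm (p - q) + norm (x - z))"
      proof (intro ballI)
        fix v w assume "v \<in> Pset c" "w \<in> Pset c"
        then have "\<bar>rho c (restrP Pset c (p$c)) (restrP Pset c (x$c)) v w - rho c (restrP Pset c (q$c)) (restrP Pset c (z$c)) v w\<bar>
               \<le> L0 * (norm (p$c - q$c) + norm (x$c - z$c))" using Lip nnx nnz by blast
        also have "\<dots> \<le> L0 * (norm (p - q) + norm (x - z))"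
          using L0 Finite_Cartesian_Product.norm_nth_le[of "p - q" c] Finite_Cartesian_Product.norm_nth_le[of "x - z" c]
          by (intro mult_left_mono add_mono) auto
        finally show "\<bar>rho c (restrP Pset c (p$c)) (restrP Pset c (x$c)) v w - rho c (restrP Pset c (q$c)) (restrP Pset c (z$c)) v w\<bar>
               \<le> L0 * (norm (p - q) + norm (x - z))" .
      qed
      show "\<forall>v\<in>Pset c. \<forall>w\<in>Pset c. \<bar>rho c (restrP Pset c (q$c)) (restrP Pset c (z$c)) v w\<bar> \<le> Rb"
        using Rb nc nnz by blast
    qed
    also have "\<dots> \<le> 2 * real CARD('u) * (mmax * (L0 * (norm (p - q) + norm (x - z))) + norm (x - z) * Rb)"
      using mmax_pos L0 Rb card_mono[of UNIV "Pset c"]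
      by (intro mult_right_mono) (auto intro!: add_nonneg_nonneg mult_nonneg_nonneg)
    also have "\<dots> \<le> K * (norm (p - q) + norm (x - z))"
      unfolding K_def using Rb mmax_pos L0 by (simp add: algebra_simps mult_left_mono)
    finally show ?thesis .
  qed
  have "norm (H p x - H q z) \<le> (real CARD('c) * real CARD('u) * K) * (norm (p - q) + norm (x - z))"
    if "x \<in> D" "z \<in> D" "norm p \<le> Fb" "norm q \<le> Fb" for x z p q
  proof -
    have "norm (H p x - H q z) \<le> (\<Sum>c\<in>(UNIV::'c set). \<Sum>u\<in>(UNIV::'u set). K * (norm (p - q) + norm (x - z)))"
      using norm2[of "H p x - H q z"] comp[OF that] by (meson order_trans sum_mono)
    then show ?thesis by (simp add: algebra_simps)
  qed
  moreover have "0 \<le> real CARD('c) * real CARD('u) * K" using K0 by simp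
  ultimately show ?thesis by blast
qed


abbreviation "Ef \<epsilon> \<equiv> Efield Sset Pset Act phi pol rho F kappa \<epsilon>"

definition rv :: "('c,'s,'u) pstate \<Rightarrow> 'c \<Rightarrow> 's \<Rightarrow> 'u \<Rightarrow> real" where
  "rv \<mu> c s u = revflow Pset rho c (F \<mu> $ c) (agg \<mu> $ c) (\<lambda>u'. \<mu>$c$s$u') u"

lemma Ef_comp: "Ef \<epsilon> \<mu> $ c $ s $ u = (if s \<in> Sset c \<and> u \<in> Pset c then
    (kappa c / \<epsilon>) * (\<Sum>s'\<in>Sset c. phiu Act phi pol c u s s' * \<mu>$c$s'$u) - (kappa c / \<epsilon>) * \<mu>$c$s$u + rv \<mu> c s u else 0)"
proof -
  have "(\<Sum>s'\<in>Sset c. \<Sum>a'\<in>Act c s'. phi c s' a' s * polprob pol c u s' a' * \<mu>$c$s'$u)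
      = (\<Sum>s'\<in>Sset c. phiu Act phi pol c u s s' * \<mu>$c$s'$u)"
    unfolding phiu_def by (simp add: sum_distrib_right)
  then show ?thesis unfolding Efield_def rv_def aggP_agg by simp
qed

lemma revflow_sum: "(\<Sum>s\<in>S. revflow Pset rho c p y (\<lambda>u'. f s u') u) = revflow Pset rho c p y (\<lambda>u'. \<Sum>s\<in>S. f s u') u"
  unfolding revflow_def
  by (simp add: sum_subtractf sum_distrib_right sum.swap[of _ S])

lemma revflow_cong: "(\<And>u'. u' \<in> Pset c \<Longrightarrow> a u' = b u') \<Longrightarrow> u \<in> Pset c \<Longrightarrow>
    revflow Pset rho c p y a u = revflow Pset rho c p y b u"
  unfolding revflow_def by simp

lemma sum_phiu_mu: "u \<in> Pset c \<Longrightarrow> (\<Sum>s\<in>Sset c. \<Sum>s'\<in>Sset c. phiu Act phi pol c u s s' * \<mu>$c$s'$u) = (\<Sum>s'\<in>Sset c. \<mu>$c$s'$u)"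
  by (subst sum.swap) (simp add: sum_distrib_right[symmetric] phiu_colsum)

lemma sum_Ef: "u \<in> Pset c \<Longrightarrow> (\<Sum>s\<in>Sset c. Ef \<epsilon> \<mu> $ c $ s $ u) = (\<Sum>s\<in>Sset c. rv \<mu> c s u)"
proof -
  assume u: "u \<in> Pset c"
  have "(\<Sum>s\<in>Sset c. Ef \<epsilon> \<mu> $ c $ s $ u) = (\<Sum>s\<in>Sset c.
    (kappa c / \<epsilon>) * (\<Sum>s'\<in>Sset c. phiu Act phi pol c u s s' * \<mu>$c$s'$u) - (kappa c / \<epsilon>) * \<mu>$c$s$u + rv \<mu> c s u)"
    using u by (intro sum.cong) (auto simp: Ef_comp)
  also have "\<dots> = (kappa c / \<epsilon>) * (\<Sum>s\<in>Sset c. \<Sum>s'\<in>Sset c. phiu Act phi pol c u s s' * \<mu>$c$s'$u)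
      - (kappa c / \<epsilon>) * (\<Sum>s\<in>Sset c. \<mu>$c$s$u) + (\<Sum>s\<in>Sset c. rv \<mu> c s u)"
    by (simp add: sum.distrib sum_subtractf sum_distrib_left)
  also have "\<dots> = (\<Sum>s\<in>Sset c. rv \<mu> c s u)" using sum_phiu_mu[OF u] by simp
  finally show ?thesis .
qed

lemma agg_Ef: "agg (Ef \<epsilon> \<mu>) = H (F \<mu>) (agg \<mu>)"
proof -
  have "agg (Ef \<epsilon> \<mu>) $ c $ u = H (F \<mu>) (agg \<mu>) $ c $ u" for c u
  proof (cases "u \<in> Pset c")
    case True
    have "agg (Ef \<epsilon> \<mu>) $ c $ u = (\<Sum>s\<in>Sset c. rv \<mu> c s u)" using True by (simp add: agg_def sum_Ef)
    also have "\<dots> = revflow Pset rho c (F \<mu> $ c) (agg \<mu> $ c) (\<lambda>u'. \<Sum>s\<in>Sset c. \<mu>$c$s$u') u"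
      unfolding rv_def by (rule revflow_sum)
    also have "\<dots> = revflow Pset rho c (F \<mu> $ c) (agg \<mu> $ c) (\<lambda>u'. agg \<mu> $ c $ u') u"
      using True by (intro revflow_cong) (auto simp: agg_def)
    also have "\<dots> = H (F \<mu>) (agg \<mu>) $ c $ u" using True by (simp add: H_def)
    finally show ?thesis .
  next
    case False
    then show ?thesis by (simp add: agg_def H_def)
  qed
  then show ?thesis by (simp add: vec_eq_iff)
qed

lemma sol_X: "is_solution Sset Pset m Act phi pol rho F kappa \<epsilon> \<mu> \<Longrightarrow> t \<ge> 0 \<Longrightarrow> \<mu> t \<in> X"
  unfolding is_solution_def by blast

lemma sol_deriv: "is_solution Sset Pset m Act phi pol rho F kappa \<epsilon> \<mu> \<Longrightarrow> t \<ge> 0 \<Longrightarrow>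
    (\<mu> has_vector_derivative Ef \<epsilon> (\<mu> t)) (at t within {0..})"
  unfolding is_solution_def by blast

lemma agg_deriv: "is_solution Sset Pset m Act phi pol rho F kappa \<epsilon> \<mu> \<Longrightarrow> t \<ge> 0 \<Longrightarrow>
    ((\<lambda>t. agg (\<mu> t)) has_vector_derivative H (F (\<mu> t)) (agg (\<mu> t))) (at t within {0..})"
  using bounded_linear.has_vector_derivative[OF bl_agg sol_deriv] agg_Ef by metis

end

context model begin

definition Amat :: "'c \<Rightarrow> 'u \<Rightarrow> 's sqm" where
  "Amat c u = mabs (\<chi> a b. if b \<in> Sset c then (if a \<in> Sset c then phiu Act phi pol c u a b else 0) else et c u a)"

definition ev :: "('c,'s,'u) pstate \<Rightarrow> 'c \<Rightarrow> 'u \<Rightarrow> real^'s" where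
  "ev \<mu> c u = (\<chi> s. \<mu>$c$s$u - agg \<mu> $ c $ u * et c u s)"

definition rr :: "('c,'s,'u) pstate \<Rightarrow> 'c \<Rightarrow> 'u \<Rightarrow> 's \<Rightarrow> real" where
  "rr \<mu> c u s = (if s \<in> Sset c then rv \<mu> c s u else 0)"

definition wv :: "('c,'s,'u) pstate \<Rightarrow> 'c \<Rightarrow> 'u \<Rightarrow> real^'s" where
  "wv \<mu> c u = (\<chi> s. rr \<mu> c u s - (\<Sum>s'\<in>UNIV. rr \<mu> c u s') * et c u s)"

lemma ent_Amat: "ent a b (Amat c u) = (if b \<in> Sset c then (if a \<in> Sset c then phiu Act phi pol c u a b else 0) else et c u a)"
  unfolding ent_def Amat_def by (simp add: mabs_inverse)

lemma Amat_stoch: assumes u: "u \<in> Pset c" shows "stoch (Amat c u)"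
  unfolding stoch_def
proof (intro conjI allI)
  fix a b
  show "0 \<le> ent a b (Amat c u)" by (auto simp: ent_Amat phiu_nonneg et_nonneg[OF u])
next
  fix b
  show "(\<Sum>a\<in>UNIV. ent a b (Amat c u)) = 1"
  proof (cases "b \<in> Sset c")
    case True
    have "(\<Sum>a\<in>UNIV. ent a b (Amat c u)) = (\<Sum>a\<in>UNIV. if a \<in> Sset c then phiu Act phi pol c u a b else 0)"
      using True by (simp add: ent_Amat)
    also have "\<dots> = (\<Sum>a\<in>Sset c. phiu Act phi pol c u a b)" by (simp add: sum.If_cases)
    also have "\<dots> = 1" by (rule phiu_colsum[OF True u])
    finally show ?thesis .
  next
    case False
    then show ?thesis by (simp add: ent_Amat et_sum_UNIV[OF u])
  qed
qed

lemma ev_out: "\<mu> \<in> X \<Longrightarrow> u \<in> Pset c \<Longrightarrow> b \<notin> Sset c \<Longrightarrow> ev \<mu> c u $ b = 0"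
  unfolding ev_def using et_zero by (simp add: X_mem)

lemma A_ev: assumes mu: "\<mu> \<in> X" and u: "u \<in> Pset c"
  shows "(\<Sum>b\<in>UNIV. ent s b (Amat c u) * ev \<mu> c u $ b)
       = (if s \<in> Sset c then (\<Sum>b\<in>Sset c. phiu Act phi pol c u s b * \<mu>$c$b$u) - agg \<mu> $ c $ u * et c u s else 0)"
proof -
  have "(\<Sum>b\<in>UNIV. ent s b (Amat c u) * ev \<mu> c u $ b) = (\<Sum>b\<in>Sset c. ent s b (Amat c u) * ev \<mu> c u $ b)"
    by (rule sum.mono_neutral_right) (auto simp: ev_out[OF mu u])
  also have "\<dots> = (\<Sum>b\<in>Sset c. (if s \<in> Sset c then phiu Act phi pol c u s b else 0) * ev \<mu> c u $ b)"
    by (intro sum.cong) (auto simp: ent_Amat)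
  also have "\<dots> = (if s \<in> Sset c then (\<Sum>b\<in>Sset c. phiu Act phi pol c u s b * \<mu>$c$b$u) - agg \<mu> $ c $ u * et c u s else 0)"
  proof (cases "s \<in> Sset c")
    case True
    have "(\<Sum>b\<in>Sset c. phiu Act phi pol c u s b * ev \<mu> c u $ b)
        = (\<Sum>b\<in>Sset c. phiu Act phi pol c u s b * \<mu>$c$b$u) - agg \<mu> $ c $ u * (\<Sum>b\<in>Sset c. phiu Act phi pol c u s b * et c u b)"
      unfolding ev_def by (simp add: algebra_simps sum_subtractf sum_distrib_left)
    also have "\<dots> = (\<Sum>b\<in>Sset c. phiu Act phi pol c u s b * \<mu>$c$b$u) - agg \<mu> $ c $ u * et c u s"
      using et_fix[OF u True] by simp
    finally show ?thesis using True by simp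
  qed simp
  finally show ?thesis .
qed

lemma ev_Ef: assumes mu: "\<mu> \<in> X" and u: "u \<in> Pset c"
  shows "ev (Ef \<epsilon> \<mu>) c u = (kappa c / \<epsilon>) *\<^sub>R (mrep (Amat c u - 1) *v ev \<mu> c u) + wv \<mu> c u"
proof -
  have aggE: "agg (Ef \<epsilon> \<mu>) $ c $ u = (\<Sum>s'\<in>UNIV. rr \<mu> c u s')"
    using u by (simp add: agg_def sum_Ef rr_def sum.If_cases)
  have "ev (Ef \<epsilon> \<mu>) c u $ s = ((kappa c / \<epsilon>) *\<^sub>R (mrep (Amat c u - 1) *v ev \<mu> c u) + wv \<mu> c u) $ s" for s
  proof -
    have mv: "(mrep (Amat c u - 1) *v ev \<mu> c u) $ s = (\<Sum>b\<in>UNIV. ent s b (Amat c u) * ev \<mu> c u $ b) - ev \<mu> c u $ s"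
      unfolding mv_comp by (simp add: ent_one algebra_simps sum_subtractf if_distrib[of "\<lambda>x. x * _"] sum.delta)
    show ?thesis
    proof (cases "s \<in> Sset c")
      case True
      show ?thesis
        unfolding vector_add_component vector_scaleR_component mv A_ev[OF mu u]
        using True u aggE by (simp add: ev_def wv_def Ef_comp rr_def algebra_simps)
    next
      case False
      show ?thesis
        unfolding vector_add_component vector_scaleR_component mv A_ev[OF mu u]
        using False u aggE mu by (simp add: ev_def wv_def Ef_comp rr_def et_zero X_mem)
    qed
  qed
  then show ?thesis by (simp add: vec_eq_iff)
qed


lemma ent_pos_mult:
  assumes "stoch M1" "stoch M2" "0 < ent a k M1" "0 < ent k b M2"
  shows "0 < ent a b (M1 * M2)"
proof -
  have "ent a k M1 * ent k b M2 \<le> (\<Sum>j\<in>UNIV. ent a j M1 * ent j b M2)"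
    using assms(1,2) unfolding stoch_def by (intro member_le_sum) auto
  moreover have "0 < ent a k M1 * ent k b M2" using assms(3,4) by simp
  ultimately show ?thesis unfolding ent_mult by linarith
qed

lemma reach_pos: assumes u: "u \<in> Pset c" and r: "(b, z) \<in> reach Sset Act phi pol c u"
  shows "\<exists>n. 0 < ent z b (Amat c u ^ n)"
  using r unfolding reach_def
proof (induction rule: rtrancl_induct)
  case base
  show ?case by (intro exI[of _ 0]) (simp add: ent_one)
next
  case (step y z)
  then obtain n where n: "0 < ent y b (Amat c u ^ n)" by blast
  from step.hyps(2) have yz: "y \<in> Sset c" "z \<in> Sset c" "0 < phiu Act phi pol c u z y" by auto
  have "0 < ent z b (Amat c u * Amat c u ^ n)"
    by (rule ent_pos_mult[OF Amat_stoch[OF u] stoch_power[OF Amat_stoch[OF u]] _ n]) (use yz in \<open>simp add: ent_Amat\<close>)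
  then show ?case by (intro exI[of _ "Suc n"]) simp
qed

lemma reach_in_S: "(x, y) \<in> reach Sset Act phi pol c u \<Longrightarrow> x \<in> Sset c \<Longrightarrow> y \<in> Sset c"
  unfolding reach_def by (induction rule: rtrancl_induct) auto

lemma reach_trans: "(x, y) \<in> reach Sset Act phi pol c u \<Longrightarrow> (y, z) \<in> reach Sset Act phi pol c u \<Longrightarrow> (x, z) \<in> reach Sset Act phi pol c u"
  unfolding reach_def by (rule rtrancl_trans)

lemma reach_refl: "(x, x) \<in> reach Sset Act phi pol c u"
  unfolding reach_def by simp

lemma reaches_K: assumes u: "u \<in> Pset c" and K: "recurrent_class Sset Act phi pol c u K" and b: "b \<in> Sset c"
  shows "\<exists>y\<in>K. (b, y) \<in> reach Sset Act phi pol c u"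
proof -
  let ?R = "reach Sset Act phi pol c u"
  define Rs where "Rs x = {y. (x, y) \<in> ?R}" for x
  have RsS: "Rs x \<subseteq> Sset c" if "x \<in> Sset c" for x using reach_in_S that unfolding Rs_def by blast
  have finRs: "finite (Rs x)" for x by simp
  have "b \<in> Rs b" unfolding Rs_def using reach_refl by blast
  define mn where "mn = Min ((\<lambda>y. card (Rs y)) ` Rs b)"
  have "mn \<in> (\<lambda>y. card (Rs y)) ` Rs b" unfolding mn_def using \<open>b \<in> Rs b\<close> by (intro Min_in) auto
  then obtain x where x: "x \<in> Rs b" "card (Rs x) = mn" by auto
  have xmin: "card (Rs x) \<le> card (Rs y)" if "y \<in> Rs b" for y
    unfolding x(2) mn_def using that by (intro Min_le) auto
  have xS: "x \<in> Sset c" using x(1) RsS[OF b] by auto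
  have sub: "Rs y \<subseteq> Rs x" if "y \<in> Rs x" for y using that reach_trans unfolding Rs_def by blast
  have eq: "Rs y = Rs x" if "y \<in> Rs x" for y
  proof -
    have "y \<in> Rs b" using that x(1) reach_trans unfolding Rs_def by blast
    then have "card (Rs x) \<le> card (Rs y)" by (rule xmin)
    moreover have "card (Rs y) \<le> card (Rs x)" using card_mono[OF finRs sub[OF that]] .
    ultimately have "card (Rs y) = card (Rs x)" by simp
    then show ?thesis using sub[OF that] by (intro card_subset_eq) auto
  qed
  have "recurrent_class Sset Act phi pol c u (Rs x)"
    unfolding recurrent_class_def
  proof (intro conjI ballI allI impI)
    show "Rs x \<noteq> {}" using reach_refl unfolding Rs_def by blast
    show "Rs x \<subseteq> Sset c" by (rule RsS[OF xS])
    fix y assume y: "y \<in> Rs x"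
    {
      fix z assume "z \<in> Rs x"
      then show "(y, z) \<in> ?R" using eq[OF y] unfolding Rs_def by blast
    }
    {
      fix z assume "(y, z) \<in> ?R"
      then show "z \<in> Rs x" using y reach_trans unfolding Rs_def by blast
    }
  qed
  then have "Rs x = K" using unique_rec[OF u] K by blast
  moreover obtain y where "y \<in> K" using K unfolding recurrent_class_def by blast
  ultimately show ?thesis using x(1) reach_trans unfolding Rs_def by blast
qed

lemma Amat_doeb: assumes u: "u \<in> Pset c" shows "\<exists>s0. \<forall>b. \<exists>n. 0 < ent s0 b (Amat c u ^ n)"
proof -
  obtain K where K: "recurrent_class Sset Act phi pol c u K" using unique_rec[OF u] by blast
  then obtain s0 where s0: "s0 \<in> K" unfolding recurrent_class_def by blast
  have K_comm: "\<forall>x\<in>K. \<forall>y\<in>K. (x, y) \<in> reach Sset Act phi pol c u" using K unfolding recurrent_class_def by blast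
  have inS: "\<exists>n. 0 < ent s0 b (Amat c u ^ n)" if b: "b \<in> Sset c" for b
  proof -
    obtain y where y: "y \<in> K" "(b, y) \<in> reach Sset Act phi pol c u" using reaches_K[OF u K b] by blast
    then have "(b, s0) \<in> reach Sset Act phi pol c u" using K_comm s0 reach_trans by blast
    then show ?thesis by (rule reach_pos[OF u])
  qed
  have "\<exists>n. 0 < ent s0 b (Amat c u ^ n)" for b
  proof (cases "b \<in> Sset c")
    case True then show ?thesis by (rule inS)
  next
    case False
    obtain a0 where a0: "a0 \<in> Sset c" "0 < et c u a0"
    proof -
      have "\<not> (\<forall>a\<in>Sset c. et c u a \<le> 0)"
      proof
        assume "\<forall>a\<in>Sset c. et c u a \<le> 0"
        then have "(\<Sum>a\<in>Sset c. et c u a) \<le> 0" by (simp add: sum_nonpos)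
        then show False using et_sum[OF u] by simp
      qed
      then show ?thesis using that by force
    qed
    obtain n where n: "0 < ent s0 a0 (Amat c u ^ n)" using inS[OF a0(1)] by blast
    have "0 < ent s0 b (Amat c u ^ n * Amat c u)"
      by (rule ent_pos_mult[OF stoch_power[OF Amat_stoch[OF u]] Amat_stoch[OF u] n]) (use False a0 in \<open>simp add: ent_Amat\<close>)
    then have "0 < ent s0 b (Amat c u ^ Suc n)" by (simp only: power_Suc2)
    then show ?thesis by blast
  qed
  then show ?thesis by blast
qed

lemma fastchain_Amat: "u \<in> Pset c \<Longrightarrow> fastchain (Amat c u)"
  by unfold_locales (auto intro: Amat_stoch Amat_doeb)


lemma rv_bdd: "\<exists>RV. 0 \<le> RV \<and> (\<forall>\<mu>\<in>X. \<forall>c s u. u \<in> Pset c \<longrightarrow> \<bar>rv \<mu> c s u\<bar> \<le> RV)"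
proof -
  obtain Fb where Fb: "0 \<le> Fb" "\<forall>\<mu>\<in>X. norm (F \<mu>) \<le> Fb" using F_bdd by blast
  obtain DB where DB: "0 \<le> DB" "\<forall>x\<in>D. norm x \<le> DB" using D_bdd by blast
  obtain Rb where Rb: "0 \<le> Rb" "\<forall>c p y u v. norm p \<le> Fb \<longrightarrow> norm y \<le> DB \<longrightarrow> (\<forall>w. y$w \<ge> 0) \<longrightarrow> u \<in> Pset c \<longrightarrow> v \<in> Pset c
   \<longrightarrow> \<bar>rho c (restrP Pset c p) (restrP Pset c y) u v\<bar> \<le> Rb" using rho_bdd by blast
  have "\<bar>rv \<mu> c s u\<bar> \<le> 2 * real CARD('u) * (mmax * Rb)" if mu: "\<mu> \<in> X" and u: "u \<in> Pset c" for \<mu> c s u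
  proof -
    have aD: "agg \<mu> \<in> D" by (rule agg_in_D[OF mu])
    have nn: "\<forall>w. 0 \<le> agg \<mu> $ c $ w" using aD unfolding D_mem by blast
    have n1: "norm (F \<mu> $ c) \<le> Fb" using Fb mu Finite_Cartesian_Product.norm_nth_le order_trans by blast
    have n2: "norm (agg \<mu> $ c) \<le> DB" using DB aD Finite_Cartesian_Product.norm_nth_le order_trans by blast
    have "\<bar>rv \<mu> c s u\<bar> = \<bar>((\<Sum>v\<in>Pset c. \<mu>$c$s$v * rho c (restrP Pset c (F \<mu> $ c)) (restrP Pset c (agg \<mu> $ c)) v u)
        - \<mu>$c$s$u * (\<Sum>v\<in>Pset c. rho c (restrP Pset c (F \<mu> $ c)) (restrP Pset c (agg \<mu> $ c)) u v))
        - ((\<Sum>v\<in>Pset c. (\<lambda>_. 0) v * (\<lambda>_ _. 0) v u) - (\<lambda>_. 0) u * (\<Sum>v\<in>Pset c. (\<lambda>_ _. 0) u v))\<bar>"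
      unfolding rv_def revflow_def by simp
    also have "\<dots> \<le> 2 * real (card (Pset c)) * (mmax * Rb + mmax * 0)"
    proof (rule rf_diff[OF finite u])
      show "\<forall>v\<in>Pset c. \<bar>\<mu>$c$s$v\<bar> \<le> mmax"
      proof
        fix v show "\<bar>\<mu>$c$s$v\<bar> \<le> mmax" using X_comp_le[OF mu, of c s v] m_le[of c] by simp
      qed
      show "\<forall>v\<in>Pset c. \<bar>\<mu>$c$s$v - 0\<bar> \<le> mmax"
      proof
        fix v show "\<bar>\<mu>$c$s$v - 0\<bar> \<le> mmax" using X_comp_le[OF mu, of c s v] m_le[of c] by simp
      qed
      show "\<forall>v\<in>Pset c. \<forall>w\<in>Pset c. \<bar>rho c (restrP Pset c (F \<mu> $ c)) (restrP Pset c (agg \<mu> $ c)) v w - 0\<bar> \<le> Rb"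
        using Rb n1 n2 nn by simp
      show "\<forall>v\<in>Pset c. \<forall>w\<in>Pset c. \<bar>(0::real)\<bar> \<le> 0" by simp
    qed
    also have "\<dots> \<le> 2 * real CARD('u) * (mmax * Rb)"
    proof -
      have "card (Pset c) \<le> CARD('u)" by (rule card_mono) auto
      then show ?thesis using mmax_pos Rb by (simp add: mult_right_mono)
    qed
    finally show ?thesis .
  qed
  then show ?thesis using mmax_pos Rb by (intro exI[of _ "2 * real CARD('u) * (mmax * Rb)"]) auto
qed

lemma wv_props: assumes mu: "\<mu> \<in> X" and u: "u \<in> Pset c" and RV: "\<forall>s. \<bar>rv \<mu> c s u\<bar> \<le> RV"
  shows "vsum (wv \<mu> c u) = 0" "l1 (wv \<mu> c u) \<le> 2 * real CARD('s) * RV"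
proof -
  show "vsum (wv \<mu> c u) = 0"
    unfolding vsum_def wv_def using et_sum_UNIV[OF u]
    by (simp add: sum_subtractf sum_distrib_left[symmetric])
  have rr: "\<bar>rr \<mu> c u s\<bar> \<le> RV" for s using RV
    by (simp add: rr_def) (metis abs_ge_zero order_trans)
  have "l1 (wv \<mu> c u) \<le> (\<Sum>s\<in>UNIV. \<bar>rr \<mu> c u s\<bar> + \<bar>\<Sum>s'\<in>UNIV. rr \<mu> c u s'\<bar> * et c u s)"
    unfolding l1_def wv_def using et_nonneg[OF u]
    by (intro sum_mono) (simp add: abs_mult order_trans[OF abs_triangle_ineq4])
  also have "\<dots> = (\<Sum>s\<in>UNIV. \<bar>rr \<mu> c u s\<bar>) + \<bar>\<Sum>s'\<in>UNIV. rr \<mu> c u s'\<bar>"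
    using et_sum_UNIV[OF u] by (simp add: sum.distrib sum_distrib_left[symmetric])
  also have "\<dots> \<le> (\<Sum>s\<in>UNIV. \<bar>rr \<mu> c u s\<bar>) + (\<Sum>s\<in>UNIV. \<bar>rr \<mu> c u s\<bar>)"
    by (simp add: sum_abs)
  also have "\<dots> \<le> 2 * real CARD('s) * RV"
    using sum_mono[of UNIV "\<lambda>s. \<bar>rr \<mu> c u s\<bar>" "\<lambda>_. RV", OF rr] by simp
  finally show "l1 (wv \<mu> c u) \<le> 2 * real CARD('s) * RV" .
qed

lemma ev_props: assumes mu: "\<mu> \<in> X" and u: "u \<in> Pset c"
  shows "vsum (ev \<mu> c u) = 0" "l1 (ev \<mu> c u) \<le> 2 * mmax"
proof -
  have sumS: "(\<Sum>s\<in>UNIV. \<mu>$c$s$u) = agg \<mu> $ c $ u"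
    using u mu unfolding agg_def X_mem by (simp add: sum.mono_neutral_right[of UNIV "Sset c"])
  show "vsum (ev \<mu> c u) = 0"
    unfolding vsum_def ev_def using et_sum_UNIV[OF u] sumS
    by (simp add: sum_subtractf sum_distrib_left[symmetric])
  have x0: "0 \<le> agg \<mu> $ c $ u" "agg \<mu> $ c $ u \<le> mmax" using D_comp_le[OF agg_in_D[OF mu], of c u] m_le[of c] by auto
  have "l1 (ev \<mu> c u) \<le> (\<Sum>s\<in>UNIV. \<mu>$c$s$u + agg \<mu> $ c $ u * et c u s)"
    unfolding l1_def ev_def using X_comp_le[OF mu] et_nonneg[OF u] x0
    by (intro sum_mono) (simp add: abs_le_iff)
  also have "\<dots> = 2 * agg \<mu> $ c $ u" using sumS et_sum_UNIV[OF u]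
    by (simp add: sum.distrib sum_distrib_left[symmetric])
  also have "\<dots> \<le> 2 * mmax" using x0 by simp
  finally show "l1 (ev \<mu> c u) \<le> 2 * mmax" .
qed

lemma norm_dev: assumes mu: "\<mu> \<in> X"
  shows "norm (\<mu> - Bm (agg \<mu>)) \<le> (\<Sum>c\<in>UNIV. \<Sum>u\<in>Pset c. l1 (ev \<mu> c u))"
proof -
  have comp: "\<bar>(\<mu> - Bm (agg \<mu>))$c$s$u\<bar> = (if u \<in> Pset c then \<bar>ev \<mu> c u $ s\<bar> else 0)" for c s u
    using mu et_zero unfolding X_mem by (auto simp: Bm_comp ev_def)
  have "norm (\<mu> - Bm (agg \<mu>)) \<le> (\<Sum>c\<in>UNIV. \<Sum>s\<in>UNIV. \<Sum>u\<in>UNIV. \<bar>(\<mu> - Bm (agg \<mu>))$c$s$u\<bar>)" by (rule norm3)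
  also have "\<dots> = (\<Sum>c\<in>UNIV. \<Sum>u\<in>UNIV. \<Sum>s\<in>UNIV. (if u \<in> Pset c then \<bar>ev \<mu> c u $ s\<bar> else 0))"
    unfolding comp by (simp add: sum.swap[of _ "UNIV::'s set"])
  also have "\<dots> = (\<Sum>c\<in>UNIV. \<Sum>u\<in>UNIV. (if u \<in> Pset c then l1 (ev \<mu> c u) else 0))"
    by (intro sum.cong refl) (simp add: l1_def)
  also have "\<dots> = (\<Sum>c\<in>UNIV. \<Sum>u\<in>Pset c. l1 (ev \<mu> c u))"
    by (rule sum.cong[OF refl]) (simp add: sum.If_cases Int_def)
  finally show ?thesis .
qed

lemma bl_ev: "bounded_linear (\<lambda>\<mu>. ev \<mu> c u)"
proof -
  have "linear (\<lambda>\<mu>. ev \<mu> c u)"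
    by (rule linearI) (auto simp: ev_def agg_def vec_eq_iff algebra_simps sum.distrib sum_distrib_left)
  then show ?thesis using linear_conv_bounded_linear by blast
qed


lemma exp_neg_le_inv: "0 < (y::real) \<Longrightarrow> exp (- y) \<le> 1 / y"
proof -
  assume y: "0 < y"
  have "y \<le> exp y" using exp_ge_add_one_self[of y] by linarith
  then have "1 / exp y \<le> 1 / y" using y by (simp add: frac_le)
  then show ?thesis by (simp add: exp_minus inverse_eq_divide)
qed

lemma fast_cu: assumes u: "u \<in> Pset c"
  shows "\<exists>K1 K2. 0 \<le> K1 \<and> 0 \<le> K2 \<and> (\<forall>\<epsilon> \<mu> t. 0 < \<epsilon> \<longrightarrow> is_solution Sset Pset m Act phi pol rho F kappa \<epsilon> \<mu> \<longrightarrow> 0 < t \<longrightarrow>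
      l1 (ev (\<mu> t) c u) \<le> \<epsilon> * (K1 / t + K2))"
proof -
  interpret fc: fastchain "Amat c u" by (rule fastchain_Amat[OF u])
  obtain C lam where C: "0 < C" and lam: "0 < lam" and vc: "\<forall>k T e w W. 0 < k \<longrightarrow> 0 \<le> T \<longrightarrow>
   (\<forall>t\<in>{0..T}. (e has_vector_derivative (k *\<^sub>R (mrep (Amat c u - 1) *v e t) + w t)) (at t within {0..T})) \<longrightarrow>
   (\<forall>t\<in>{0..T}. vsum (w t) = 0 \<and> l1 (w t) \<le> W) \<longrightarrow> vsum (e 0) = 0 \<longrightarrow>
   l1 (e T) \<le> C * exp (- lam * (k * T)) * l1 (e 0) + C * W / (lam * k)"
    using fc.vc by blast
  obtain RV where RV: "0 \<le> RV" "\<forall>\<mu>\<in>X. \<forall>c s u. u \<in> Pset c \<longrightarrow> \<bar>rv \<mu> c s u\<bar> \<le> RV" using rv_bdd by blast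
  define W where "W = 2 * real CARD('s) * RV"
  have W0: "0 \<le> W" unfolding W_def using RV by simp
  have "l1 (ev (\<mu> t) c u) \<le> \<epsilon> * ((2 * C * mmax / lam) / t + C * W / lam)"
    if eps: "0 < \<epsilon>" and sol: "is_solution Sset Pset m Act phi pol rho F kappa \<epsilon> \<mu>" and t: "0 < t" for \<epsilon> \<mu> t
  proof -
    define k where "k = kappa c / \<epsilon>"
    have k: "0 < k" "1 / k \<le> \<epsilon>" unfolding k_def using eps kappa_ge[of c] by (auto simp: field_simps)
    have de: "((\<lambda>\<tau>. ev (\<mu> \<tau>) c u) has_vector_derivative (k *\<^sub>R (mrep (Amat c u - 1) *v ev (\<mu> \<tau>) c u) + wv (\<mu> \<tau>) c u)) (at \<tau> within {0..t})"
      if tau: "\<tau> \<in> {0..t}" for \<tau>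
    proof -
      have "((\<lambda>\<tau>. ev (\<mu> \<tau>) c u) has_vector_derivative ev (Ef \<epsilon> (\<mu> \<tau>)) c u) (at \<tau> within {0..})"
        using bounded_linear.has_vector_derivative[OF bl_ev sol_deriv[OF sol]] tau by auto
      then have "((\<lambda>\<tau>. ev (\<mu> \<tau>) c u) has_vector_derivative ev (Ef \<epsilon> (\<mu> \<tau>)) c u) (at \<tau> within {0..t})"
        by (rule has_vector_derivative_within_subset) auto
      then show ?thesis using ev_Ef[OF sol_X[OF sol] u, of \<tau> \<epsilon>] tau unfolding k_def by auto
    qed
    have wprops: "\<forall>\<tau>\<in>{0..t}. vsum (wv (\<mu> \<tau>) c u) = 0 \<and> l1 (wv (\<mu> \<tau>) c u) \<le> W"
    proof
      fix \<tau> :: real assume "\<tau> \<in> {0..t}"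
      then have Xt: "\<mu> \<tau> \<in> X" using sol_X[OF sol] by auto
      have "\<forall>s. \<bar>rv (\<mu> \<tau>) c s u\<bar> \<le> RV" using RV Xt u by blast
      from wv_props[OF Xt u this] show "vsum (wv (\<mu> \<tau>) c u) = 0 \<and> l1 (wv (\<mu> \<tau>) c u) \<le> W"
        unfolding W_def by simp
    qed
    have e0: "vsum (ev (\<mu> 0) c u) = 0" "l1 (ev (\<mu> 0) c u) \<le> 2 * mmax"
      using ev_props[OF sol_X[OF sol] u] by auto
    have "l1 (ev (\<mu> t) c u) \<le> C * exp (- lam * (k * t)) * l1 (ev (\<mu> 0) c u) + C * W / (lam * k)"
      using vc[rule_format, of k t "\<lambda>\<tau>. ev (\<mu> \<tau>) c u" "\<lambda>\<tau>. wv (\<mu> \<tau>) c u" W] k t de wprops e0 by auto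
    also have "\<dots> \<le> C * (1 / (lam * k * t)) * (2 * mmax) + C * W / (lam * k)"
    proof -
      have "exp (- lam * (k * t)) \<le> 1 / (lam * k * t)"
        using exp_neg_le_inv[of "lam * k * t"] lam k t by (simp add: mult.assoc)
      moreover have "0 \<le> l1 (ev (\<mu> 0) c u)" unfolding l1_def by (simp add: sum_nonneg)
      ultimately show ?thesis using C e0 lam k t
        by (intro add_mono mult_mono) (auto intro: mult_nonneg_nonneg)
    qed
    also have "\<dots> = (1 / k) * ((2 * C * mmax / lam) / t + C * W / lam)"
      using lam k t by (simp add: field_simps)
    also have "\<dots> \<le> \<epsilon> * ((2 * C * mmax / lam) / t + C * W / lam)"
      using k C lam t W0 mmax_pos by (intro mult_right_mono) auto
    finally show ?thesis .
  qed
  moreover have "0 \<le> 2 * C * mmax / lam" "0 \<le> C * W / lam" using C lam mmax_pos W0 by auto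
  ultimately show ?thesis by blast
qed

lemma fast_all: "\<exists>K1 K2. 0 \<le> K1 \<and> 0 \<le> K2 \<and> (\<forall>\<epsilon> \<mu> t. 0 < \<epsilon> \<longrightarrow> is_solution Sset Pset m Act phi pol rho F kappa \<epsilon> \<mu> \<longrightarrow> 0 < t \<longrightarrow>
      norm (\<mu> t - Bm (agg (\<mu> t))) \<le> \<epsilon> * (K1 / t + K2))"
proof -
  have "\<forall>c u. \<exists>K1 K2. u \<in> Pset c \<longrightarrow> 0 \<le> K1 \<and> 0 \<le> K2 \<and> (\<forall>\<epsilon> \<mu> t. 0 < \<epsilon> \<longrightarrow> is_solution Sset Pset m Act phi pol rho F kappa \<epsilon> \<mu> \<longrightarrow> 0 < t \<longrightarrow>
      l1 (ev (\<mu> t) c u) \<le> \<epsilon> * (K1 / t + K2))"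
    using fast_cu by blast
  then obtain k1 k2 where kk: "\<And>c u. u \<in> Pset c \<Longrightarrow> 0 \<le> k1 c u \<and> 0 \<le> k2 c u \<and> (\<forall>\<epsilon> \<mu> t. 0 < \<epsilon> \<longrightarrow> is_solution Sset Pset m Act phi pol rho F kappa \<epsilon> \<mu> \<longrightarrow> 0 < t \<longrightarrow>
      l1 (ev (\<mu> t) c u) \<le> \<epsilon> * (k1 c u / t + k2 c u))"
    by metis
  define K1 where "K1 = (\<Sum>c\<in>UNIV. \<Sum>u\<in>Pset c. k1 c u)"
  define K2 where "K2 = (\<Sum>c\<in>UNIV. \<Sum>u\<in>Pset c. k2 c u)"
  have "norm (\<mu> t - Bm (agg (\<mu> t))) \<le> \<epsilon> * (K1 / t + K2)"
    if "0 < \<epsilon>" "is_solution Sset Pset m Act phi pol rho F kappa \<epsilon> \<mu>" "0 < t" for \<epsilon> \<mu> t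
  proof -
    have "norm (\<mu> t - Bm (agg (\<mu> t))) \<le> (\<Sum>c\<in>UNIV. \<Sum>u\<in>Pset c. l1 (ev (\<mu> t) c u))"
      using norm_dev sol_X that by simp
    also have "\<dots> \<le> (\<Sum>c\<in>UNIV. \<Sum>u\<in>Pset c. \<epsilon> * (k1 c u / t + k2 c u))"
      using kk that by (intro sum_mono) auto
    also have "\<dots> = \<epsilon> * (K1 / t + K2)"
      unfolding K1_def K2_def by (simp add: sum_distrib_left sum_divide_distrib sum.distrib algebra_simps)
    finally show ?thesis .
  qed
  moreover have "0 \<le> K1" "0 \<le> K2" unfolding K1_def K2_def using kk by (auto intro!: sum_nonneg)
  ultimately show ?thesis by blast
qed

end

locale lyap = model Sset Pset Act phi pol m kappa F rho
  for Sset :: "'c::finite \<Rightarrow> 's::finite set"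
    and Pset :: "'c \<Rightarrow> 'u::finite set"
    and Act :: "'c \<Rightarrow> 's \<Rightarrow> 'a set"
    and phi pol m kappa F rho +
  fixes MF :: "(real^'u^'c) set"
    and Dbar :: "(real^'u^'c) set"
    and V :: "real^'u^'c \<Rightarrow> real"
    and V' :: "real^'u^'c \<Rightarrow> real^'u^'c"
  assumes MF_ne: "MF \<noteq> {}"
    and MF_closed: "closed MF"
    and MF_NE: "MF \<subseteq> NEset Pset m (\<lambda>x. F (BSK Sset Pset (eta Sset Act phi pol) x))"
    and Dbar_sub: "Dbar \<subseteq> Dx Pset m"
    and Dbar_nbhd: "\<exists>W. open W \<and> MF \<subseteq> W \<and> W \<inter> Dx Pset m \<subseteq> Dbar"
    and V_deriv: "\<And>x. x \<in> Dbar \<Longrightarrow> (V has_derivative (\<lambda>h. V' x \<bullet> h)) (at x within Dbar)"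
    and V'_cont: "continuous_on Dbar V'"
    and V'_bdd: "bounded (V' ` Dbar)"
    and V_nonneg: "\<And>x. x \<in> Dbar \<Longrightarrow> V x \<ge> 0"
    and V_pos: "\<And>x. x \<in> Dbar - MF \<Longrightarrow> V x > 0"
    and V_zero: "\<And>x. x \<in> MF \<Longrightarrow> V x = 0"
    and V_dec: "\<And>x. x \<in> Dbar - MF \<Longrightarrow> V' x \<bullet> gred Pset rho (\<lambda>x. F (BSK Sset Pset (eta Sset Act phi pol) x)) x < 0"
begin

abbreviation "gg \<equiv> gred Pset rho FF"
abbreviation "M \<equiv> Bm ` MF"

lemma MF_D: "MF \<subseteq> D" using MF_NE unfolding NEset_def by auto
lemma compact_MF: "compact MF"
proof -
  have "compact (D \<inter> MF)" using compact_D MF_closed by (rule compact_Int_closed)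
  moreover have "D \<inter> MF = MF" using MF_D by blast
  ultimately show ?thesis by simp
qed

lemma lin_bound: assumes "bounded_linear f" shows "\<exists>C>0. \<forall>x z. norm (f x - f z) \<le> C * norm (x - z)"
proof -
  obtain K where K: "K > 0" "\<forall>x. norm (f x) \<le> norm x * K" using bounded_linear.pos_bounded[OF assms] by blast
  have "norm (f x - f z) \<le> K * norm (x - z)" for x z
    using K(2)[rule_format, of "x - z"] linear_diff[OF bounded_linear.linear[OF assms]] by (simp add: mult.commute)
  then show ?thesis using K by blast
qed

lemma V_cont: "continuous_on Dbar V"
  unfolding continuous_on_eq_continuous_within
  using V_deriv has_derivative_continuous by blast

lemma gg_lip: "\<exists>Lg. 0 \<le> Lg \<and> (\<forall>x\<in>D. \<forall>z\<in>D. norm (gg x - gg z) \<le> Lg * norm (x - z))"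
proof -
  obtain Fb where Fb: "0 \<le> Fb" "\<forall>\<mu>\<in>X. norm (F \<mu>) \<le> Fb" using F_bdd by blast
  obtain LF where LF: "0 \<le> LF" "\<forall>\<mu>\<in>X. \<forall>\<nu>\<in>X. norm (F \<mu> - F \<nu>) \<le> LF * norm (\<mu> - \<nu>)" using F_lip by blast
  obtain LH where LH: "0 \<le> LH" "\<forall>x\<in>D. \<forall>z\<in>D. \<forall>p q. norm p \<le> Fb \<longrightarrow> norm q \<le> Fb \<longrightarrow> norm (H p x - H q z) \<le> LH * (norm (p - q) + norm (x - z))"
    using H_lip[OF Fb(1)] by blast
  obtain CB where CB: "CB > 0" "\<forall>x z. norm (Bm x - Bm z) \<le> CB * norm (x - z)" using lin_bound[OF bl_Bm] by blast
  have "norm (gg x - gg z) \<le> (LH * (LF * CB + 1)) * norm (x - z)" if x: "x \<in> D" and z: "z \<in> D" for x z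
  proof -
    have "norm (gg x - gg z) \<le> LH * (norm (FF x - FF z) + norm (x - z))"
      unfolding gred_H using LH(2) x z Fb Bm_in_X by blast
    also have "\<dots> \<le> LH * (LF * (CB * norm (x - z)) + norm (x - z))"
    proof -
      have "norm (FF x - FF z) \<le> LF * norm (Bm x - Bm z)" using LF Bm_in_X x z by blast
      also have "\<dots> \<le> LF * (CB * norm (x - z))" using CB LF by (simp add: mult_left_mono)
      finally show ?thesis using LH by (simp add: mult_left_mono)
    qed
    finally show ?thesis by (simp add: algebra_simps)
  qed
  moreover have "0 \<le> LH * (LF * CB + 1)" using LH LF CB by simp
  ultimately show ?thesis by blast
qed

lemma gg_cont: "continuous_on D gg"
proof -
  obtain Lg where Lg: "0 \<le> Lg" "\<forall>x\<in>D. \<forall>z\<in>D. norm (gg x - gg z) \<le> Lg * norm (x - z)" using gg_lip by blast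
  show ?thesis
    unfolding continuous_on_iff
  proof (intro ballI allI impI)
    fix x e assume x: "x \<in> D" and e: "(0::real) < e"
    show "\<exists>d>0. \<forall>x'\<in>D. dist x' x < d \<longrightarrow> dist (gg x') (gg x) < e"
    proof (intro exI[of _ "e / (Lg + 1)"] conjI ballI impI)
      show "0 < e / (Lg + 1)" using e Lg by simp
      fix x' assume x': "x' \<in> D" and d: "dist x' x < e / (Lg + 1)"
      have "dist (gg x') (gg x) \<le> Lg * dist x' x" using Lg x x' by (simp add: dist_norm)
      also have "\<dots> \<le> (Lg + 1) * dist x' x" by (simp add: mult_right_mono)
      also have "\<dots> < (Lg + 1) * (e / (Lg + 1))" using d Lg by (intro mult_strict_left_mono) auto
      finally show "dist (gg x') (gg x) < e" using Lg by simp
    qed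
  qed
qed

lemma Vg_cont: "continuous_on Dbar (\<lambda>z. V' z \<bullet> gg z)"
  using V'_cont continuous_on_subset[OF gg_cont Dbar_sub] by (intro continuous_on_inner) auto

lemma pos_min: assumes "compact K" "K \<subseteq> Dbar" "K \<inter> MF = {}" shows "\<exists>v>0. \<forall>z\<in>K. v \<le> V z"
proof (cases "K = {}")
  case True then show ?thesis by (intro exI[of _ 1]) auto
next
  case False
  obtain z0 where z0: "z0 \<in> K" "\<forall>z\<in>K. V z0 \<le> V z"
    using continuous_attains_inf[OF assms(1) False continuous_on_subset[OF V_cont assms(2)]] by blast
  have "0 < V z0" using V_pos z0(1) assms(2,3) by blast
  then show ?thesis using z0 by blast
qed

lemma neg_max: assumes "compact K" "K \<subseteq> Dbar" "K \<inter> MF = {}" shows "\<exists>\<kappa>>0. \<forall>z\<in>K. V' z \<bullet> gg z \<le> - \<kappa>"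
proof (cases "K = {}")
  case True then show ?thesis by (intro exI[of _ 1]) auto
next
  case False
  obtain z0 where z0: "z0 \<in> K" "\<forall>z\<in>K. V' z \<bullet> gg z \<le> V' z0 \<bullet> gg z0"
    using continuous_attains_sup[OF assms(1) False continuous_on_subset[OF Vg_cont assms(2)]] by blast
  have "V' z0 \<bullet> gg z0 < 0" using V_dec z0(1) assms(2,3) by blast
  then show ?thesis using z0 by (intro exI[of _ "- (V' z0 \<bullet> gg z0)"]) auto
qed


lemma closed_Dle: "closed {z\<in>D. infdist z MF \<le> r}"
proof -
  have "closed (D \<inter> {z. infdist z MF \<le> r})"
    by (intro closed_Int closed_D closed_Collect_le continuous_intros)
  then show ?thesis by (simp add: Int_def)
qed

lemma closed_Dge: "closed {z\<in>D. r \<le> infdist z MF}"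
proof -
  have "closed (D \<inter> {z. r \<le> infdist z MF})"
    by (intro closed_Int closed_D closed_Collect_le continuous_intros)
  then show ?thesis by (simp add: Int_def)
qed

lemma compact_Dsub: "closed S \<Longrightarrow> S \<subseteq> D \<Longrightarrow> compact S"
  using compact_D by (metis compact_Int_closed inf.absorb_iff2)

lemma r0_ex: "\<exists>r0>0. \<forall>z\<in>D. infdist z MF \<le> r0 \<longrightarrow> z \<in> Dbar"
proof -
  obtain W where W: "open W" "MF \<subseteq> W" "W \<inter> D \<subseteq> Dbar" using Dbar_nbhd by blast
  show ?thesis
  proof (cases "- W = {}")
    case True
    then show ?thesis using W by (intro exI[of _ 1]) auto
  next
    case False
    obtain a b where ab: "a \<in> MF" "b \<in> - W" "dist a b = setdist MF (- W)"
      using setdist_compact_closed[OF compact_MF _ MF_ne False] W(1) by blast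
    have sd: "0 < setdist MF (- W)" using ab W(2) by (metis ComplD dist_pos_lt subsetD)
    have "z \<in> Dbar" if z: "z \<in> D" "infdist z MF \<le> setdist MF (- W) / 2" for z
    proof -
      obtain z0 where z0: "z0 \<in> MF" "infdist z MF = dist z z0" using infdist_attains_inf[OF MF_closed MF_ne] by blast
      have "z \<in> W"
      proof (rule ccontr)
        assume "z \<notin> W"
        then have "setdist MF (- W) \<le> dist z0 z" by (intro setdist_le_dist) (auto simp: z0)
        then show False using z(2) z0(2) sd by (simp add: dist_commute)
      qed
      then show ?thesis using W z by blast
    qed
    then show ?thesis using sd by (intro exI[of _ "setdist MF (- W) / 2"]) auto
  qed
qed

lemma V_small_near: assumes r0: "0 < r0" "\<forall>z\<in>D. infdist z MF \<le> r0 \<longrightarrow> z \<in> Dbar" and e: "0 < e"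
  shows "\<exists>r>0. r \<le> r0 \<and> (\<forall>z\<in>D. infdist z MF \<le> r \<longrightarrow> V z < e)"
proof -
  define K0 where "K0 = {z\<in>D. infdist z MF \<le> r0}"
  have cK0: "compact K0" unfolding K0_def by (intro compact_Dsub closed_Dle) auto
  have K0D: "K0 \<subseteq> Dbar" using r0 unfolding K0_def by auto
  have "uniformly_continuous_on K0 V" by (rule compact_uniformly_continuous[OF continuous_on_subset[OF V_cont K0D] cK0])
  then obtain d where d: "d > 0" "\<forall>x\<in>K0. \<forall>x'\<in>K0. dist x' x < d \<longrightarrow> dist (V x') (V x) < e"
    unfolding uniformly_continuous_on_def using e by blast
  have "V z < e" if z: "z \<in> D" "infdist z MF \<le> min r0 (d/2)" for z
  proof -
    obtain z0 where z0: "z0 \<in> MF" "infdist z MF = dist z z0" using infdist_attains_inf[OF MF_closed MF_ne] by blast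
    have "z \<in> K0" using z unfolding K0_def by auto
    moreover have "z0 \<in> K0" using z0 MF_D r0 unfolding K0_def by auto
    moreover have "dist z z0 < d" using z z0 d by simp
    ultimately have "dist (V z) (V z0) < e" using d by blast
    then show ?thesis using V_zero[OF z0(1)] by (simp add: dist_real_def)
  qed
  then show ?thesis using r0 d by (intro exI[of _ "min r0 (d/2)"]) auto
qed

lemma init_bound: "\<exists>CA>0. \<forall>\<mu>. infdist (agg \<mu>) MF \<le> CA * infdist \<mu> M"
proof -
  obtain CA where CA: "CA > 0" "\<forall>x z. norm (agg x - agg z) \<le> CA * norm (x - z)" using lin_bound[OF bl_agg] by blast
  have cM: "closed M" using compact_MF by (intro compact_imp_closed compact_continuous_image bounded_linear.continuous_on[OF bl_Bm] continuous_on_id)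
  have "infdist (agg \<mu>) MF \<le> CA * infdist \<mu> M" for \<mu>
  proof -
    obtain \<nu> where \<nu>: "\<nu> \<in> M" "infdist \<mu> M = dist \<mu> \<nu>" using infdist_attains_inf[OF cM] MF_ne by blast
    then obtain z where z: "z \<in> MF" "\<nu> = Bm z" by blast
    have "infdist (agg \<mu>) MF \<le> dist (agg \<mu>) z" by (rule infdist_le[OF z(1)])
    also have "\<dots> = norm (agg \<mu> - agg (Bm z))" using agg_Bm z(1) MF_D by (auto simp: dist_norm)
    also have "\<dots> \<le> CA * norm (\<mu> - Bm z)" using CA by blast
    finally show ?thesis using \<nu> z by (simp add: dist_norm)
  qed
  then show ?thesis using CA by blast
qed

lemma final_bound: "\<exists>CB>0. \<forall>\<mu> x. infdist \<mu> M \<le> norm (\<mu> - Bm x) + CB * infdist x MF"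
proof -
  obtain CB where CB: "CB > 0" "\<forall>x z. norm (Bm x - Bm z) \<le> CB * norm (x - z)" using lin_bound[OF bl_Bm] by blast
  have "infdist \<mu> M \<le> norm (\<mu> - Bm x) + CB * infdist x MF" for \<mu> x
  proof -
    obtain z0 where z0: "z0 \<in> MF" "infdist x MF = dist x z0" using infdist_attains_inf[OF MF_closed MF_ne] by blast
    have "infdist \<mu> M \<le> dist \<mu> (Bm z0)" using z0 by (intro infdist_le) auto
    also have "\<dots> \<le> norm (\<mu> - Bm x) + norm (Bm x - Bm z0)" unfolding dist_norm using norm_triangle_ineq[of "\<mu> - Bm x" "Bm x - Bm z0"] by simp
    also have "\<dots> \<le> norm (\<mu> - Bm x) + CB * infdist x MF" using CB z0 by (simp add: dist_norm)
    finally show ?thesis .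
  qed
  then show ?thesis using CB by blast
qed

end

lemma level_lemma:
  fixes f f' :: "real \<Rightarrow> real"
  assumes ab: "a \<le> b" and d: "\<And>t. t \<in> {a..b} \<Longrightarrow> (f has_real_derivative f' t) (at t within {a..b})"
    and fa: "f a \<le> l" and neg: "\<And>t. t \<in> {a..b} \<Longrightarrow> f t > l \<Longrightarrow> f' t \<le> 0"
  shows "f b \<le> l"
proof (rule ccontr)
  assume fb: "\<not> f b \<le> l"
  have cont: "continuous_on {a..b} f" by (rule DERIV_continuous_on[OF d])
  define S where "S = {a..b} \<inter> f -` {..l}"
  have cS: "closed S" unfolding S_def by (rule continuous_closed_preimage[OF cont]) auto
  have aS: "a \<in> S" unfolding S_def using ab fa by auto
  have bdd: "bdd_above S" unfolding S_def by (rule bdd_aboveI[of _ b]) auto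
  define s0 where "s0 = Sup S"
  have s0S: "s0 \<in> S" unfolding s0_def using closed_contains_Sup[OF _ bdd cS] aS by blast
  have s0b: "s0 < b" using s0S fb unfolding S_def by (cases "s0 = b") auto
  have "\<exists>x\<in>{s0<..<b}. f b - f s0 = (\<lambda>h. f' x * h) (b - s0)"
  proof (rule mvt_simple[OF s0b])
    fix x assume "s0 \<le> x" "x \<le> b"
    moreover have "a \<le> s0" using s0S unfolding S_def by auto
    ultimately have "(f has_real_derivative f' x) (at x within {s0..b})"
      using d[of x] by (auto intro: DERIV_subset)
    then show "(f has_derivative (\<lambda>h. f' x * h)) (at x within {s0..b})"
      by (simp add: has_field_derivative_def)
  qed
  then obtain x where x: "s0 < x" "x < b" "f b - f s0 = f' x * (b - s0)" by auto
  have "a \<le> s0" using s0S unfolding S_def by auto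
  have "x \<notin> S"
  proof
    assume "x \<in> S"
    then have "x \<le> s0" unfolding s0_def using bdd by (rule cSup_upper)
    then show False using x by simp
  qed
  then have "f x > l" using x \<open>a \<le> s0\<close> unfolding S_def by auto
  then have "f' x \<le> 0" using neg[of x] x \<open>a \<le> s0\<close> by auto
  moreover have "f' x * (b - s0) \<le> 0" using \<open>f' x \<le> 0\<close> s0b by (simp add: mult_nonpos_nonneg)
  ultimately have "f b \<le> f s0" using x(3) by simp
  moreover have "f s0 \<le> l" using s0S unfolding S_def by auto
  ultimately show False using fb by simp
qed

lemma decr_lemma:
  fixes f f' :: "real \<Rightarrow> real"
  assumes ab: "a \<le> b" and d: "\<And>t. t \<in> {a..b} \<Longrightarrow> (f has_real_derivative f' t) (at t within {a..b})"
    and neg: "\<And>t. t \<in> {a..b} \<Longrightarrow> f' t \<le> - k"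
  shows "f b \<le> f a - k * (b - a)"
proof -
  have "\<exists>x\<in>{a..b}. f b - f a = (\<lambda>h. f' x * h) (b - a)"
    by (rule mvt_very_simple[OF ab]) (use d in \<open>auto simp: has_field_derivative_def\<close>)
  then obtain x where x: "x \<in> {a..b}" "f b - f a = f' x * (b - a)" by auto
  have "f' x * (b - a) \<le> - k * (b - a)" using neg[OF x(1)] ab by (intro mult_right_mono) auto
  then show ?thesis using x by simp
qed

context lyap begin

lemma speed_bdd: "\<exists>GH. 0 \<le> GH \<and> (\<forall>\<mu>\<in>X. norm (H (F \<mu>) (agg \<mu>)) \<le> GH)"
proof -
  obtain Fb where Fb: "0 \<le> Fb" "\<forall>\<mu>\<in>X. norm (F \<mu>) \<le> Fb" using F_bdd by blast
  obtain DB where DB: "0 \<le> DB" "\<forall>x\<in>D. norm x \<le> DB" using D_bdd by blast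
  obtain LH where LH: "0 \<le> LH" "\<forall>x\<in>D. \<forall>z\<in>D. \<forall>p q. norm p \<le> Fb \<longrightarrow> norm q \<le> Fb \<longrightarrow> norm (H p x - H q z) \<le> LH * (norm (p - q) + norm (x - z))"
    using H_lip[OF Fb(1)] by blast
  obtain x0 where x0: "x0 \<in> D" using MF_ne MF_D by blast
  have "norm (H (F \<mu>) (agg \<mu>)) \<le> LH * (Fb + 2 * DB) + norm (H 0 x0)" if mu: "\<mu> \<in> X" for \<mu>
  proof -
    have aD: "agg \<mu> \<in> D" by (rule agg_in_D[OF mu])
    have "norm (H (F \<mu>) (agg \<mu>) - H 0 x0) \<le> LH * (norm (F \<mu> - 0) + norm (agg \<mu> - x0))"
      using LH(2)[rule_format, OF aD x0, of "F \<mu>" 0] Fb mu by simp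
    also have "\<dots> \<le> LH * (Fb + 2 * DB)"
    proof -
      have "norm (agg \<mu> - x0) \<le> norm (agg \<mu>) + norm x0" by (rule norm_triangle_ineq4)
      also have "\<dots> \<le> 2 * DB" using DB(2)[rule_format, OF aD] DB(2)[rule_format, OF x0] by linarith
      finally show ?thesis using Fb mu LH by (intro mult_left_mono) auto
    qed
    finally show ?thesis using norm_triangle_ineq2[of "H (F \<mu>) (agg \<mu>)" "H 0 x0"] by linarith
  qed
  moreover have "0 \<le> LH * (Fb + 2 * DB) + norm (H 0 x0)" using LH Fb DB by simp
  ultimately show ?thesis by blast
qed

lemma x_lip_time:
  assumes sol: "is_solution Sset Pset m Act phi pol rho F kappa \<epsilon> \<mu>" and GH: "\<forall>\<mu>\<in>X. norm (H (F \<mu>) (agg \<mu>)) \<le> GH"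
    and st: "0 \<le> s" "s \<le> t"
  shows "norm (agg (\<mu> t) - agg (\<mu> s)) \<le> GH * (t - s)"
proof -
  have "norm (agg (\<mu> t) - agg (\<mu> s)) \<le> GH * norm (t - s)"
  proof (rule differentiable_bound[of "{s..t}" "\<lambda>t. agg (\<mu> t)" "\<lambda>\<tau> h. h *\<^sub>R H (F (\<mu> \<tau>)) (agg (\<mu> \<tau>))"])
    show "convex {s..t}" by simp
    show "((\<lambda>t. agg (\<mu> t)) has_derivative (\<lambda>h. h *\<^sub>R H (F (\<mu> \<tau>)) (agg (\<mu> \<tau>)))) (at \<tau> within {s..t})"
      if "\<tau> \<in> {s..t}" for \<tau>
    proof -
      have "((\<lambda>t. agg (\<mu> t)) has_vector_derivative H (F (\<mu> \<tau>)) (agg (\<mu> \<tau>))) (at \<tau> within {0..})"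
        using agg_deriv[OF sol] that st by auto
      then have "((\<lambda>t. agg (\<mu> t)) has_vector_derivative H (F (\<mu> \<tau>)) (agg (\<mu> \<tau>))) (at \<tau> within {s..t})"
        by (rule has_vector_derivative_within_subset) (use st in auto)
      then show ?thesis by (simp add: has_vector_derivative_def)
    qed
    show "onorm (\<lambda>h. h *\<^sub>R H (F (\<mu> \<tau>)) (agg (\<mu> \<tau>))) \<le> GH" if "\<tau> \<in> {s..t}" for \<tau>
    proof (rule onorm_bound)
      have "norm (H (F (\<mu> \<tau>)) (agg (\<mu> \<tau>))) \<le> GH" using GH sol_X[OF sol] that st by auto
      then show "0 \<le> GH" by (meson norm_ge_zero order_trans)
      fix h :: real
      show "norm (h *\<^sub>R H (F (\<mu> \<tau>)) (agg (\<mu> \<tau>))) \<le> GH * norm h"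
        using mult_left_mono[OF \<open>norm (H (F (\<mu> \<tau>)) (agg (\<mu> \<tau>))) \<le> GH\<close> abs_ge_zero[of h]] by (simp add: mult.commute)
    qed
  qed (use st in auto)
  then show ?thesis using st by simp
qed

lemma Vx_deriv:
  assumes sol: "is_solution Sset Pset m Act phi pol rho F kappa \<epsilon> \<mu>" and a: "0 \<le> a"
    and inD: "\<forall>t\<in>{a..b}. agg (\<mu> t) \<in> Dbar" and t: "t \<in> {a..b}"
  shows "((\<lambda>t. V (agg (\<mu> t))) has_real_derivative (V' (agg (\<mu> t)) \<bullet> H (F (\<mu> t)) (agg (\<mu> t)))) (at t within {a..b})"
proof -
  have "((\<lambda>t. agg (\<mu> t)) has_vector_derivative H (F (\<mu> t)) (agg (\<mu> t))) (at t within {0..})"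
    using agg_deriv[OF sol] t a by auto
  then have "((\<lambda>t. agg (\<mu> t)) has_vector_derivative H (F (\<mu> t)) (agg (\<mu> t))) (at t within {a..b})"
    by (rule has_vector_derivative_within_subset) (use a in auto)
  then have xd: "((\<lambda>t. agg (\<mu> t)) has_derivative (\<lambda>h. h *\<^sub>R H (F (\<mu> t)) (agg (\<mu> t)))) (at t within {a..b})"
    by (simp add: has_vector_derivative_def)
  have "((\<lambda>t. V (agg (\<mu> t))) has_derivative (\<lambda>h. V' (agg (\<mu> t)) \<bullet> (h *\<^sub>R H (F (\<mu> t)) (agg (\<mu> t))))) (at t within {a..b})"
    by (rule has_derivative_in_compose2[OF V_deriv _ t xd]) (use inD in auto)
  moreover have "(\<lambda>h. V' (agg (\<mu> t)) \<bullet> (h *\<^sub>R H (F (\<mu> t)) (agg (\<mu> t)))) = (*) (V' (agg (\<mu> t)) \<bullet> H (F (\<mu> t)) (agg (\<mu> t)))"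
    by (auto simp: mult.commute)
  ultimately show ?thesis by (simp add: has_field_derivative_def)
qed

lemma Vx_bound: "\<exists>Kv. 0 \<le> Kv \<and> (\<forall>\<mu>\<in>X. agg \<mu> \<in> Dbar \<longrightarrow>
   V' (agg \<mu>) \<bullet> H (F \<mu>) (agg \<mu>) \<le> V' (agg \<mu>) \<bullet> gg (agg \<mu>) + Kv * norm (\<mu> - Bm (agg \<mu>)))"
proof -
  obtain Fb where Fb: "0 \<le> Fb" "\<forall>\<mu>\<in>X. norm (F \<mu>) \<le> Fb" using F_bdd by blast
  obtain LF where LF: "0 \<le> LF" "\<forall>\<mu>\<in>X. \<forall>\<nu>\<in>X. norm (F \<mu> - F \<nu>) \<le> LF * norm (\<mu> - \<nu>)" using F_lip by blast
  obtain LH where LH: "0 \<le> LH" "\<forall>x\<in>D. \<forall>z\<in>D. \<forall>p q. norm p \<le> Fb \<longrightarrow> norm q \<le> Fb \<longrightarrow> norm (H p x - H q z) \<le> LH * (norm (p - q) + norm (x - z))"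
    using H_lip[OF Fb(1)] by blast
  obtain Vb where Vb: "\<forall>z\<in>Dbar. norm (V' z) \<le> Vb" using V'_bdd unfolding bounded_iff by auto
  have "V' (agg \<mu>) \<bullet> H (F \<mu>) (agg \<mu>) \<le> V' (agg \<mu>) \<bullet> gg (agg \<mu>) + (max 0 Vb * LH * LF) * norm (\<mu> - Bm (agg \<mu>))"
    if mu: "\<mu> \<in> X" and aD: "agg \<mu> \<in> Dbar" for \<mu>
  proof -
    let ?x = "agg \<mu>"
    have xD: "?x \<in> D" by (rule agg_in_D[OF mu])
    have BX: "Bm ?x \<in> X" by (rule Bm_in_X[OF xD])
    have "V' ?x \<bullet> H (F \<mu>) ?x - V' ?x \<bullet> gg ?x = V' ?x \<bullet> (H (F \<mu>) ?x - H (F (Bm ?x)) ?x)"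
      by (simp add: gred_H inner_diff_right)
    also have "\<dots> \<le> norm (V' ?x) * norm (H (F \<mu>) ?x - H (F (Bm ?x)) ?x)" by (rule norm_cauchy_schwarz)
    also have "\<dots> \<le> max 0 Vb * (LH * (LF * norm (\<mu> - Bm ?x)))"
    proof (rule mult_mono)
      show "norm (V' ?x) \<le> max 0 Vb" using Vb aD by fastforce
      have "norm (H (F \<mu>) ?x - H (F (Bm ?x)) ?x) \<le> LH * (norm (F \<mu> - F (Bm ?x)) + norm (?x - ?x))"
        using LH(2) xD Fb mu BX by blast
      also have "\<dots> \<le> LH * (LF * norm (\<mu> - Bm ?x))" using LF mu BX LH by (simp add: mult_left_mono)
      finally show "norm (H (F \<mu>) ?x - H (F (Bm ?x)) ?x) \<le> LH * (LF * norm (\<mu> - Bm ?x))" .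
    qed auto
    finally show ?thesis by (simp add: algebra_simps)
  qed
  moreover have "0 \<le> max 0 Vb * LH * LF" using LH LF by simp
  ultimately show ?thesis by blast
qed

end

context lyap begin

lemma x_cont: "is_solution Sset Pset m Act phi pol rho F kappa \<epsilon> \<mu> \<Longrightarrow> continuous_on {0..} (\<lambda>t. agg (\<mu> t))"
  unfolding continuous_on_eq_continuous_within
  using agg_deriv has_vector_derivative_continuous by fastforce

lemma part1: "\<forall>B>0. \<exists>\<epsilon>s>0. \<exists>B0>0. \<exists>T>0. \<forall>\<epsilon>. 0 < \<epsilon> \<and> \<epsilon> < \<epsilon>s \<longrightarrow>
            (\<forall>\<mu>. is_solution Sset Pset m Act phi pol rho F kappa \<epsilon> \<mu> \<longrightarrow>
               infdist (\<mu> 0) M \<le> B0 \<longrightarrow> (\<forall>t\<ge>T. infdist (\<mu> t) M \<le> B))"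
proof (intro allI impI)
  fix B :: real assume B: "0 < B"
  obtain r0 where r0: "0 < r0" "\<forall>z\<in>D. infdist z MF \<le> r0 \<longrightarrow> z \<in> Dbar" using r0_ex by blast
  obtain CB where CB: "CB > 0" "\<forall>\<mu> x. infdist \<mu> M \<le> norm (\<mu> - Bm x) + CB * infdist x MF" using final_bound by blast
  obtain CA where CA: "CA > 0" "\<forall>\<mu>. infdist (agg \<mu>) MF \<le> CA * infdist \<mu> M" using init_bound by blast
  obtain GH where GH: "0 \<le> GH" "\<forall>\<mu>\<in>X. norm (H (F \<mu>) (agg \<mu>)) \<le> GH" using speed_bdd by blast
  obtain Kv where Kv: "0 \<le> Kv" "\<forall>\<mu>\<in>X. agg \<mu> \<in> Dbar \<longrightarrow>
   V' (agg \<mu>) \<bullet> H (F \<mu>) (agg \<mu>) \<le> V' (agg \<mu>) \<bullet> gg (agg \<mu>) + Kv * norm (\<mu> - Bm (agg \<mu>))" using Vx_bound by blast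
  obtain K1 K2 where K: "0 \<le> K1" "0 \<le> K2" "\<forall>\<epsilon> \<mu> t. 0 < \<epsilon> \<longrightarrow> is_solution Sset Pset m Act phi pol rho F kappa \<epsilon> \<mu> \<longrightarrow> 0 < t \<longrightarrow>
      norm (\<mu> t - Bm (agg (\<mu> t))) \<le> \<epsilon> * (K1 / t + K2)" using fast_all by blast
  define r1 where "r1 = min (r0 / 2) (B / (2 * CB))"
  have r1: "0 < r1" "r1 < r0" "CB * r1 \<le> B / 2"
  proof -
    show "0 < r1" "r1 < r0" unfolding r1_def using r0 B CB by auto
    have "CB * r1 \<le> CB * (B / (2 * CB))" unfolding r1_def using CB by (intro mult_left_mono) auto
    then show "CB * r1 \<le> B / 2" using CB by simp
  qed
  define Ann1 where "Ann1 = {z\<in>D. r1 \<le> infdist z MF \<and> infdist z MF \<le> r0}"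
  have Ann1_eq: "Ann1 = {z\<in>D. r1 \<le> infdist z MF} \<inter> {z\<in>D. infdist z MF \<le> r0}" unfolding Ann1_def by auto
  have cA1: "compact Ann1" unfolding Ann1_eq by (intro compact_Dsub closed_Int closed_Dge closed_Dle) auto
  have A1D: "Ann1 \<subseteq> Dbar" using r0 unfolding Ann1_def by auto
  have A1M: "Ann1 \<inter> MF = {}" using r1 unfolding Ann1_def by (auto simp: infdist_zero)
  obtain v1 where v1: "0 < v1" "\<forall>z\<in>Ann1. v1 \<le> V z" using pos_min[OF cA1 A1D A1M] by blast
  obtain r2' where r2': "0 < r2'" "r2' \<le> r0" "\<forall>z\<in>D. infdist z MF \<le> r2' \<longrightarrow> V z < v1 / 2"
    using V_small_near[OF r0, of "v1/2"] v1 by auto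
  define r2 where "r2 = min r2' (r1 / 2)"
  have r2: "0 < r2" "r2 < r1" "\<forall>z\<in>D. infdist z MF \<le> r2 \<longrightarrow> V z < v1 / 2"
    unfolding r2_def using r2' r1 by auto
  define Ann2 where "Ann2 = {z\<in>D. r2 \<le> infdist z MF \<and> infdist z MF \<le> r0}"
  have Ann2_eq: "Ann2 = {z\<in>D. r2 \<le> infdist z MF} \<inter> {z\<in>D. infdist z MF \<le> r0}" unfolding Ann2_def by auto
  have cA2: "compact Ann2" unfolding Ann2_eq by (intro compact_Dsub closed_Int closed_Dge closed_Dle) auto
  have A2D: "Ann2 \<subseteq> Dbar" using r0 unfolding Ann2_def by auto
  have A2M: "Ann2 \<inter> MF = {}" using r2 unfolding Ann2_def by (auto simp: infdist_zero)
  obtain \<kappa> where \<kappa>: "0 < \<kappa>" "\<forall>z\<in>Ann2. V' z \<bullet> gg z \<le> - \<kappa>" using neg_max[OF cA2 A2D A2M] by blast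
  define T0 where "T0 = r2 / (2 * (GH + 1))"
  have T0: "0 < T0" "GH * T0 \<le> r2 / 2" unfolding T0_def using r2 GH by (auto simp: field_simps)
  define B0 where "B0 = r2 / (2 * (CA + 1))"
  have B0: "0 < B0" "CA * B0 \<le> r2 / 2" unfolding B0_def using r2 CA by (auto simp: field_simps)
  define \<eta> where "\<eta> = min (B / 2) (\<kappa> / (2 * (Kv + 1)))"
  have \<eta>: "0 < \<eta>" "\<eta> \<le> B / 2" "Kv * \<eta> \<le> \<kappa> / 2"
  proof -
    show "0 < \<eta>" unfolding \<eta>_def using B \<kappa> Kv by auto
    show "\<eta> \<le> B / 2" unfolding \<eta>_def by (rule min.cobounded1)
    have "Kv * \<eta> \<le> Kv * (\<kappa> / (2 * (Kv + 1)))" unfolding \<eta>_def using Kv by (intro mult_left_mono) auto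
    also have "\<dots> \<le> \<kappa> / 2" using Kv \<kappa> by (simp add: field_simps)
    finally show "Kv * \<eta> \<le> \<kappa> / 2" .
  qed
  define \<epsilon>s where "\<epsilon>s = \<eta> / (K1 / T0 + K2 + 1)"
  have KT: "0 \<le> K1 / T0" using K T0 by simp
  have \<epsilon>s: "0 < \<epsilon>s" unfolding \<epsilon>s_def using \<eta> K KT by (intro divide_pos_pos) auto
  have main: "\<forall>t\<ge>T0. infdist (\<mu> t) M \<le> B"
    if eps: "0 < \<epsilon>" "\<epsilon> < \<epsilon>s" and sol: "is_solution Sset Pset m Act phi pol rho F kappa \<epsilon> \<mu>"
      and init: "infdist (\<mu> 0) M \<le> B0" for \<epsilon> \<mu>
  proof -
    define x where "x t = agg (\<mu> t)" for t
    have xD: "t \<ge> 0 \<Longrightarrow> x t \<in> D" for t unfolding x_def using agg_in_D sol_X[OF sol] by blast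
    have fastb: "norm (\<mu> t - Bm (x t)) \<le> \<eta>" if t: "T0 \<le> t" for t
    proof -
      have "norm (\<mu> t - Bm (x t)) \<le> \<epsilon> * (K1 / t + K2)" unfolding x_def using K(3) eps sol t T0 by auto
      also have "\<dots> \<le> \<epsilon> * (K1 / T0 + K2)"
        using eps t T0 K by (intro mult_left_mono add_mono divide_left_mono) auto
      also have "\<dots> \<le> \<epsilon>s * (K1 / T0 + K2 + 1)" using eps K T0 by (intro mult_mono) auto
      also have "\<dots> = \<eta>"
      proof -
        have pos: "0 < K1 / T0 + K2 + 1" using KT K by linarith
        then show ?thesis unfolding \<epsilon>s_def by simp
      qed
      finally show ?thesis .
    qed
    have hc: "continuous_on {0..} (\<lambda>t. infdist (x t) MF)"
      unfolding x_def by (intro continuous_on_infdist x_cont[OF sol])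
    have d0: "infdist (x 0) MF \<le> r2 / 2"
    proof -
      have "infdist (x 0) MF \<le> CA * infdist (\<mu> 0) M" unfolding x_def using CA by blast
      also have "\<dots> \<le> CA * B0" using init CA by (intro mult_left_mono) auto
      finally show ?thesis using B0 by simp
    qed
    have dT0: "infdist (x T0) MF \<le> r2"
    proof -
      have "infdist (x T0) MF \<le> infdist (x 0) MF + dist (x T0) (x 0)" by (rule infdist_triangle)
      also have "dist (x T0) (x 0) \<le> GH * (T0 - 0)"
        unfolding x_def dist_norm by (rule x_lip_time[OF sol GH(2)]) (use T0 in auto)
      finally show ?thesis using d0 T0 by simp
    qed
    have VT0: "V (x T0) \<le> v1 / 2" using r2(3) dT0 xD[of T0] T0 by fastforce
    have stay: "infdist (x t) MF < r1" if t1: "T0 \<le> t" for t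
    proof (rule ccontr)
      assume "\<not> infdist (x t) MF < r1"
      then have ht: "r1 \<le> infdist (x t) MF" by simp
      define S where "S = {T0..t} \<inter> (\<lambda>t. infdist (x t) MF) -` {r1..}"
      have cS: "closed S" unfolding S_def
        by (rule continuous_closed_preimage[OF continuous_on_subset[OF hc]]) (use T0 in auto)
      have tS: "t \<in> S" unfolding S_def using ht t1 by auto
      have bS: "bdd_below S" unfolding S_def by (rule bdd_belowI[of _ T0]) auto
      define \<tau> where "\<tau> = Inf S"
      have \<tau>S: "\<tau> \<in> S" unfolding \<tau>_def using closed_contains_Inf[OF _ bS cS] tS by blast
      have \<tau>1: "T0 \<le> \<tau>" "r1 \<le> infdist (x \<tau>) MF" using \<tau>S unfolding S_def by auto
      have \<tau>2: "T0 < \<tau>"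
      proof (rule ccontr)
        assume "\<not> T0 < \<tau>" then have "\<tau> = T0" using \<tau>1 by simp
        then show False using \<tau>1(2) dT0 r2 by simp
      qed
      have below: "infdist (x s) MF < r1" if "s \<in> {T0..<\<tau>}" for s
      proof (rule ccontr)
        assume "\<not> infdist (x s) MF < r1"
        then have "s \<in> S" using that \<tau>S unfolding S_def by auto
        then have "\<tau> \<le> s" unfolding \<tau>_def using bS by (rule cInf_lower)
        then show False using that by simp
      qed
      have le_r1: "infdist (x s) MF \<le> r1" if "s \<in> {T0..\<tau>}" for s
      proof -
        define S' where "S' = {T0..\<tau>} \<inter> (\<lambda>t. infdist (x t) MF) -` {..r1}"
        have cS': "closed S'" unfolding S'_def
          by (rule continuous_closed_preimage[OF continuous_on_subset[OF hc]]) (use T0 in auto)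
        have "{T0..<\<tau>} \<subseteq> S'" unfolding S'_def using below by fastforce
        then have "closure {T0..<\<tau>} \<subseteq> S'" using cS' by (rule closure_minimal)
        then have "{T0..\<tau>} \<subseteq> S'" using \<tau>2 by simp
        then show ?thesis using that unfolding S'_def by auto
      qed
      have inDbar: "\<forall>s\<in>{T0..\<tau>}. x s \<in> Dbar"
        using le_r1 r1 r0 xD T0 by (meson atLeastAtMost_iff less_imp_le order_trans less_le_trans)
      have "V (x \<tau>) \<le> v1 / 2"
      proof (rule level_lemma[of T0 \<tau> "\<lambda>s. V (x s)" "\<lambda>s. V' (x s) \<bullet> H (F (\<mu> s)) (x s)"])
        show "T0 \<le> \<tau>" using \<tau>1 by simp
        show "((\<lambda>s. V (x s)) has_real_derivative V' (x s) \<bullet> H (F (\<mu> s)) (x s)) (at s within {T0..\<tau>})"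
          if "s \<in> {T0..\<tau>}" for s
          unfolding x_def by (rule Vx_deriv[OF sol _ _ that]) (use T0 inDbar x_def in auto)
        show "V (x T0) \<le> v1 / 2" by (rule VT0)
        show "V' (x s) \<bullet> H (F (\<mu> s)) (x s) \<le> 0" if s: "s \<in> {T0..\<tau>}" and Vs: "v1 / 2 < V (x s)" for s
        proof -
          have s0: "0 \<le> s" using s T0 by auto
          have "\<not> infdist (x s) MF \<le> r2" using r2(3) xD[OF s0] Vs by fastforce
          moreover have "infdist (x s) MF \<le> r0" using le_r1[OF s] r1 by simp
          ultimately have "x s \<in> Ann2" unfolding Ann2_def using xD[OF s0] by auto
          then have g: "V' (x s) \<bullet> gg (x s) \<le> - \<kappa>" using \<kappa> by blast
          have "V' (x s) \<bullet> H (F (\<mu> s)) (x s) \<le> V' (x s) \<bullet> gg (x s) + Kv * norm (\<mu> s - Bm (x s))"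
            using Kv(2) sol_X[OF sol s0] inDbar s unfolding x_def by blast
          also have "\<dots> \<le> - \<kappa> + Kv * \<eta>" using g fastb[of s] s Kv by (intro add_mono mult_left_mono) auto
          also have "\<dots> \<le> 0" using \<eta> \<kappa> by simp
          finally show ?thesis .
        qed
      qed
      moreover have "x \<tau> \<in> Ann1" unfolding Ann1_def using \<tau>1 le_r1[of \<tau>] \<tau>2 r1 xD[of \<tau>] T0 by auto
      ultimately show False using v1 by fastforce
    qed
    show ?thesis
    proof (intro allI impI)
      fix t assume t: "T0 \<le> t"
      have "infdist (\<mu> t) M \<le> norm (\<mu> t - Bm (x t)) + CB * infdist (x t) MF" using CB by blast
      also have "\<dots> \<le> \<eta> + CB * r1" using fastb[OF t] stay[OF t] CB by (intro add_mono mult_left_mono) auto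
      also have "\<dots> \<le> B" using \<eta> r1 by simp
      finally show "infdist (\<mu> t) M \<le> B" .
    qed
  qed
  show "\<exists>\<epsilon>s>0. \<exists>B0>0. \<exists>T>0. \<forall>\<epsilon>. 0 < \<epsilon> \<and> \<epsilon> < \<epsilon>s \<longrightarrow>
            (\<forall>\<mu>. is_solution Sset Pset m Act phi pol rho F kappa \<epsilon> \<mu> \<longrightarrow>
               infdist (\<mu> 0) M \<le> B0 \<longrightarrow> (\<forall>t\<ge>T. infdist (\<mu> t) M \<le> B))"
    using main \<epsilon>s B0 T0 by blast
qed


lemma part2: assumes DD: "Dbar = D"
  shows "\<forall>B>0. \<forall>\<mu>0\<in>X. \<exists>\<epsilon>s>0. \<exists>T>0. \<forall>\<epsilon>. 0 < \<epsilon> \<and> \<epsilon> < \<epsilon>s \<longrightarrow>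
            (\<forall>\<mu>. is_solution Sset Pset m Act phi pol rho F kappa \<epsilon> \<mu> \<longrightarrow> \<mu> 0 = \<mu>0 \<longrightarrow>
               (\<forall>t\<ge>T. infdist (\<mu> t) M \<le> B))"
proof (intro allI impI ballI)
  fix B :: real and \<mu>0 assume B: "0 < B"
  obtain CB where CB: "CB > 0" "\<forall>\<mu> x. infdist \<mu> M \<le> norm (\<mu> - Bm x) + CB * infdist x MF" using final_bound by blast
  obtain Kv where Kv: "0 \<le> Kv" "\<forall>\<mu>\<in>X. agg \<mu> \<in> Dbar \<longrightarrow>
   V' (agg \<mu>) \<bullet> H (F \<mu>) (agg \<mu>) \<le> V' (agg \<mu>) \<bullet> gg (agg \<mu>) + Kv * norm (\<mu> - Bm (agg \<mu>))" using Vx_bound by blast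
  obtain K1 K2 where K: "0 \<le> K1" "0 \<le> K2" "\<forall>\<epsilon> \<mu> t. 0 < \<epsilon> \<longrightarrow> is_solution Sset Pset m Act phi pol rho F kappa \<epsilon> \<mu> \<longrightarrow> 0 < t \<longrightarrow>
      norm (\<mu> t - Bm (agg (\<mu> t))) \<le> \<epsilon> * (K1 / t + K2)" using fast_all by blast
  have r0: "(0::real) < 1" "\<forall>z\<in>D. infdist z MF \<le> 1 \<longrightarrow> z \<in> Dbar" using DD by auto
  define r1 where "r1 = B / (2 * CB)"
  have r1: "0 < r1" "CB * r1 \<le> B / 2" unfolding r1_def using B CB by auto
  define Ann1 where "Ann1 = {z\<in>D. r1 \<le> infdist z MF}"
  have cA1: "compact Ann1" unfolding Ann1_def by (intro compact_Dsub closed_Dge) auto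
  have A1D: "Ann1 \<subseteq> Dbar" using DD unfolding Ann1_def by auto
  have A1M: "Ann1 \<inter> MF = {}" using r1 unfolding Ann1_def by (auto simp: infdist_zero)
  obtain v1 where v1: "0 < v1" "\<forall>z\<in>Ann1. v1 \<le> V z" using pos_min[OF cA1 A1D A1M] by blast
  obtain r2' where r2': "0 < r2'" "\<forall>z\<in>D. infdist z MF \<le> r2' \<longrightarrow> V z < v1 / 2"
    using V_small_near[OF r0, of "v1/2"] v1 by auto
  define r2 where "r2 = min r2' (r1 / 2)"
  have r2: "0 < r2" "r2 < r1" "\<forall>z\<in>D. infdist z MF \<le> r2 \<longrightarrow> V z < v1 / 2"
    unfolding r2_def using r2' r1 by auto
  define Ann2 where "Ann2 = {z\<in>D. r2 \<le> infdist z MF}"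
  have cA2: "compact Ann2" unfolding Ann2_def by (intro compact_Dsub closed_Dge) auto
  have A2D: "Ann2 \<subseteq> Dbar" using DD unfolding Ann2_def by auto
  have A2M: "Ann2 \<inter> MF = {}" using r2 unfolding Ann2_def by (auto simp: infdist_zero)
  obtain \<kappa> where \<kappa>: "0 < \<kappa>" "\<forall>z\<in>Ann2. V' z \<bullet> gg z \<le> - \<kappa>" using neg_max[OF cA2 A2D A2M] by blast
  obtain Vm where Vm: "\<forall>z\<in>D. V z \<le> Vm"
  proof -
    have "compact (V ` D)" using compact_D V_cont DD by (intro compact_continuous_image) auto
    then have "bounded (V ` D)" by (rule compact_imp_bounded)
    then obtain b where "\<forall>z\<in>D. norm (V z) \<le> b" unfolding bounded_iff by auto
    then have "\<forall>z\<in>D. V z \<le> b" by (metis abs_le_D1 real_norm_def)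
    then show ?thesis by (rule that)
  qed
  define T0 :: real where "T0 = 1"
  define T1 where "T1 = T0 + 2 * (max 0 Vm + 1) / \<kappa>"
  have T01: "0 < T0" "T0 \<le> T1" "\<kappa> / 2 * (T1 - T0) = max 0 Vm + 1" unfolding T1_def T0_def using \<kappa> by auto
  define \<eta> where "\<eta> = min (B / 2) (\<kappa> / (2 * (Kv + 1)))"
  have \<eta>: "0 < \<eta>" "\<eta> \<le> B / 2" "Kv * \<eta> \<le> \<kappa> / 2"
  proof -
    show "0 < \<eta>" unfolding \<eta>_def using B \<kappa> Kv by auto
    show "\<eta> \<le> B / 2" unfolding \<eta>_def by (rule min.cobounded1)
    have "Kv * \<eta> \<le> Kv * (\<kappa> / (2 * (Kv + 1)))" unfolding \<eta>_def using Kv by (intro mult_left_mono) auto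
    also have "\<dots> \<le> \<kappa> / 2" using Kv \<kappa> by (simp add: field_simps)
    finally show "Kv * \<eta> \<le> \<kappa> / 2" .
  qed
  define \<epsilon>s where "\<epsilon>s = \<eta> / (K1 / T0 + K2 + 1)"
  have KT: "0 \<le> K1 / T0" using K T01 by simp
  have \<epsilon>s: "0 < \<epsilon>s" unfolding \<epsilon>s_def using \<eta> K KT by (intro divide_pos_pos) auto
  have main: "\<forall>t\<ge>T1. infdist (\<mu> t) M \<le> B"
    if eps: "0 < \<epsilon>" "\<epsilon> < \<epsilon>s" and sol: "is_solution Sset Pset m Act phi pol rho F kappa \<epsilon> \<mu>" for \<epsilon> \<mu>
  proof -
    define x where "x t = agg (\<mu> t)" for t
    have xD: "t \<ge> 0 \<Longrightarrow> x t \<in> D" for t unfolding x_def using agg_in_D sol_X[OF sol] by blast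
    have fastb: "norm (\<mu> t - Bm (x t)) \<le> \<eta>" if t: "T0 \<le> t" for t
    proof -
      have "norm (\<mu> t - Bm (x t)) \<le> \<epsilon> * (K1 / t + K2)" unfolding x_def using K(3) eps sol t T01 by auto
      also have "\<dots> \<le> \<epsilon> * (K1 / T0 + K2)"
        using eps t T01 K by (intro mult_left_mono add_mono divide_left_mono) auto
      also have "\<dots> \<le> \<epsilon>s * (K1 / T0 + K2 + 1)" using eps K T01 by (intro mult_mono) auto
      also have "\<dots> = \<eta>"
      proof -
        have pos: "0 < K1 / T0 + K2 + 1" using KT K by linarith
        then show ?thesis unfolding \<epsilon>s_def by simp
      qed
      finally show ?thesis .
    qed
    have deriv: "((\<lambda>s. V (x s)) has_real_derivative V' (x s) \<bullet> H (F (\<mu> s)) (x s)) (at s within {a..b})"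
      if "0 \<le> a" "s \<in> {a..b}" for a b s
      unfolding x_def by (rule Vx_deriv[OF sol that(1) _ that(2)]) (use xD DD that(1) x_def in auto)
    have dbound: "V' (x s) \<bullet> H (F (\<mu> s)) (x s) \<le> - \<kappa> / 2" if s: "T0 \<le> s" and ds: "r2 \<le> infdist (x s) MF" for s
    proof -
      have s0: "0 \<le> s" using s T01 by auto
      have "x s \<in> Ann2" unfolding Ann2_def using xD[OF s0] ds by auto
      then have g: "V' (x s) \<bullet> gg (x s) \<le> - \<kappa>" using \<kappa> by blast
      have "V' (x s) \<bullet> H (F (\<mu> s)) (x s) \<le> V' (x s) \<bullet> gg (x s) + Kv * norm (\<mu> s - Bm (x s))"
        using Kv(2) sol_X[OF sol s0] xD[OF s0] DD unfolding x_def by blast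
      also have "\<dots> \<le> - \<kappa> + Kv * \<eta>" using g fastb[OF s] Kv by (intro add_mono mult_left_mono) auto
      also have "\<dots> \<le> - \<kappa> / 2" using \<eta> \<kappa> by simp
      finally show ?thesis .
    qed
    obtain t' where t': "t' \<in> {T0..T1}" "infdist (x t') MF < r2"
    proof (rule ccontr)
      assume "\<not> thesis"
      then have far: "\<forall>s\<in>{T0..T1}. r2 \<le> infdist (x s) MF" using that by force
      have "V (x T1) \<le> V (x T0) - \<kappa> / 2 * (T1 - T0)"
        by (rule decr_lemma[where f="\<lambda>s. V (x s)" and f'="\<lambda>s. V' (x s) \<bullet> H (F (\<mu> s)) (x s)", OF T01(2)])
           (use deriv T01 far dbound in auto)
      also have "\<dots> = V (x T0) - (max 0 Vm + 1)" using T01(3) by (simp only:)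
      also have "\<dots> < 0" using Vm xD[of T0] T01 by fastforce
      finally show False using V_nonneg[of "x T1"] xD[of T1] T01 DD by fastforce
    qed
    show ?thesis
    proof (intro allI impI)
      fix t assume t: "T1 \<le> t"
      have "V (x t) \<le> v1 / 2"
      proof (rule level_lemma[of t' t "\<lambda>s. V (x s)" "\<lambda>s. V' (x s) \<bullet> H (F (\<mu> s)) (x s)"])
        show "t' \<le> t" using t' t by simp
        show "((\<lambda>s. V (x s)) has_real_derivative V' (x s) \<bullet> H (F (\<mu> s)) (x s)) (at s within {t'..t})"
          if "s \<in> {t'..t}" for s using deriv[of t' s t] that t' T01 by auto
        show "V (x t') \<le> v1 / 2" using r2(3) xD[of t'] t' T01 by fastforce
        show "V' (x s) \<bullet> H (F (\<mu> s)) (x s) \<le> 0" if s: "s \<in> {t'..t}" and Vs: "v1 / 2 < V (x s)" for s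
        proof -
          have s0: "T0 \<le> s" using s t' by auto
          then have "0 \<le> s" using T01 by simp
          then have "\<not> infdist (x s) MF \<le> r2" using r2(3) xD Vs by fastforce
          then show ?thesis using dbound[OF s0] \<kappa> by simp
        qed
      qed
      then have "x t \<notin> Ann1" using v1 by fastforce
      then have dt: "infdist (x t) MF < r1" unfolding Ann1_def using xD[of t] t T01 by fastforce
      have "infdist (\<mu> t) M \<le> norm (\<mu> t - Bm (x t)) + CB * infdist (x t) MF" using CB by blast
      also have "\<dots> \<le> \<eta> + CB * r1" using fastb[of t] t T01 dt CB by (intro add_mono mult_left_mono) auto
      also have "\<dots> \<le> B" using \<eta> r1 by simp
      finally show "infdist (\<mu> t) M \<le> B" .
    qed
  qed
  have "0 < T1" using T01 by simp
  then show "\<exists>\<epsilon>s>0. \<exists>T>0. \<forall>\<epsilon>. 0 < \<epsilon> \<and> \<epsilon> < \<epsilon>s \<longrightarrow>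
            (\<forall>\<mu>. is_solution Sset Pset m Act phi pol rho F kappa \<epsilon> \<mu> \<longrightarrow> \<mu> 0 = \<mu>0 \<longrightarrow>
               (\<forall>t\<ge>T. infdist (\<mu> t) M \<le> B))"
    using main \<epsilon>s by blast
qed

end

theorem theorem4:
  fixes Sset :: "'c::finite \<Rightarrow> 's::finite set"
    and Pset :: "'c \<Rightarrow> 'u::finite set"
    and Act :: "'c \<Rightarrow> 's \<Rightarrow> 'a set"
    and phi :: "'c \<Rightarrow> 's \<Rightarrow> 'a \<Rightarrow> 's \<Rightarrow> real"
    and pol :: "'c \<Rightarrow> 'u \<Rightarrow> 's \<Rightarrow> 'a"
    and m :: "'c \<Rightarrow> real"
    and kappa :: "'c \<Rightarrow> real"
    and F :: "('c,'s,'u) pstate \<Rightarrow> real^'u^'c"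
    and rho :: "'c \<Rightarrow> real^'u \<Rightarrow> real^'u \<Rightarrow> 'u \<Rightarrow> 'u \<Rightarrow> real"
    and MF :: "(real^'u^'c) set"
    and Dbar :: "(real^'u^'c) set"
    and V :: "real^'u^'c \<Rightarrow> real"
    and V' :: "real^'u^'c \<Rightarrow> real^'u^'c"
  defines "et \<equiv> eta Sset Act phi pol"
  defines "X \<equiv> Xset Sset Pset m"
  defines "D \<equiv> Dx Pset m"
  defines "FF \<equiv> (\<lambda>x. F (BSK Sset Pset et x))"
  defines "M \<equiv> BSK Sset Pset et ` MF"
  (* model primitives *)
  assumes S_ne: "\<And>c. Sset c \<noteq> {}"
    and P_ne: "\<And>c. Pset c \<noteq> {}"
    and Act_fin: "\<And>c s. s \<in> Sset c \<Longrightarrow> finite (Act c s) \<and> Act c s \<noteq> {}"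
    and phi_nonneg: "\<And>c s a s'. s \<in> Sset c \<Longrightarrow> a \<in> Act c s \<Longrightarrow> s' \<in> Sset c \<Longrightarrow> phi c s a s' \<ge> 0"
    and phi_sum: "\<And>c s a. s \<in> Sset c \<Longrightarrow> a \<in> Act c s \<Longrightarrow> (\<Sum>s'\<in>Sset c. phi c s a s') = 1"
    and pol_act: "\<And>c u s. u \<in> Pset c \<Longrightarrow> s \<in> Sset c \<Longrightarrow> pol c u s \<in> Act c s"
    and m_pos: "\<And>c. m c > 0"
    and kappa_ge: "\<And>c. kappa c \<ge> 1"
    and kappa_min: "\<exists>c. kappa c = 1"
    (* standing assumption: unique recurrent communicating class, hence unique stationary distribution *)
    and unique_rec: "\<And>c u. u \<in> Pset c \<Longrightarrow> \<exists>!K. recurrent_class Sset Act phi pol c u K"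
    and unique_stat: "\<And>c u. u \<in> Pset c \<Longrightarrow> \<exists>!\<eta>. stationary Sset Act phi pol c u \<eta>"
    (* payoff: C^1 on an open neighbourhood of X *)
    and F_C1: "\<exists>U F'. open U \<and> X \<subseteq> U \<and> (\<forall>\<mu>\<in>U. (F has_derivative blinfun_apply (F' \<mu>)) (at \<mu>))
                 \<and> continuous_on U F'"
    (* revision protocols: nonnegative and Lipschitz on R^{n^c} x R^{n^c}_{>=0} *)
    and rho_nonneg: "\<And>c p y u v. (\<forall>w. w \<notin> Pset c \<longrightarrow> p$w = 0 \<and> y$w = 0) \<Longrightarrow> (\<forall>w. y$w \<ge> 0)
                 \<Longrightarrow> u \<in> Pset c \<Longrightarrow> v \<in> Pset c \<Longrightarrow> rho c p y u v \<ge> 0"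
    and rho_lip: "\<exists>L. \<forall>c p y q z u v. (\<forall>w. w \<notin> Pset c \<longrightarrow> p$w = 0 \<and> y$w = 0 \<and> q$w = 0 \<and> z$w = 0)
                 \<longrightarrow> (\<forall>w. y$w \<ge> 0 \<and> z$w \<ge> 0) \<longrightarrow> u \<in> Pset c \<longrightarrow> v \<in> Pset c
                 \<longrightarrow> \<bar>rho c p y u v - rho c q z u v\<bar> \<le> L * (norm (p - q) + norm (y - z))"
    (* the target set *)
    and MF_ne: "MF \<noteq> {}"
    and MF_closed: "closed MF"
    and MF_NE: "MF \<subseteq> NEset Pset m FF"
    (* Lyapunov function *)
    and Dbar_sub: "Dbar \<subseteq> D"
    and Dbar_nbhd: "\<exists>W. open W \<and> MF \<subseteq> W \<and> W \<inter> D \<subseteq> Dbar"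
    and V_deriv: "\<And>x. x \<in> Dbar \<Longrightarrow> (V has_derivative (\<lambda>h. V' x \<bullet> h)) (at x within Dbar)"
    and V'_cont: "continuous_on Dbar V'"
    and V'_bdd: "bounded (V' ` Dbar)"
    and V_nonneg: "\<And>x. x \<in> Dbar \<Longrightarrow> V x \<ge> 0"
    and V_pos: "\<And>x. x \<in> Dbar - MF \<Longrightarrow> V x > 0"
    and V_zero: "\<And>x. x \<in> MF \<Longrightarrow> V x = 0"
    and V_dec: "\<And>x. x \<in> Dbar - MF \<Longrightarrow> V' x \<bullet> gred Pset rho FF x < 0"
    and V_dec0: "\<And>x. x \<in> MF \<Longrightarrow> V' x \<bullet> gred Pset rho FF x = 0"
  shows "(\<forall>B>0. \<exists>\<epsilon>s>0. \<exists>B0>0. \<exists>T>0. \<forall>\<epsilon>. 0 < \<epsilon> \<and> \<epsilon> < \<epsilon>s \<longrightarrow>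
            (\<forall>\<mu>. is_solution Sset Pset m Act phi pol rho F kappa \<epsilon> \<mu> \<longrightarrow>
               infdist (\<mu> 0) M \<le> B0 \<longrightarrow> (\<forall>t\<ge>T. infdist (\<mu> t) M \<le> B)))
       \<and> (Dbar = D \<longrightarrow>
           (\<forall>B>0. \<forall>\<mu>0\<in>X. \<exists>\<epsilon>s>0. \<exists>T>0. \<forall>\<epsilon>. 0 < \<epsilon> \<and> \<epsilon> < \<epsilon>s \<longrightarrow>
            (\<forall>\<mu>. is_solution Sset Pset m Act phi pol rho F kappa \<epsilon> \<mu> \<longrightarrow> \<mu> 0 = \<mu>0 \<longrightarrow>
               (\<forall>t\<ge>T. infdist (\<mu> t) M \<le> B))))"
proof -
  have d1: "et = eta Sset Act phi pol" and d2: "X = Xset Sset Pset m" and d3: "D = Dx Pset m"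
    and d4: "FF = (\<lambda>x. F (BSK Sset Pset et x))" and d5: "M = BSK Sset Pset et ` MF"
    using assms(1-5) by simp_all
  have F_C1': "\<exists>U F'. open U \<and> Xset Sset Pset m \<subseteq> U \<and> (\<forall>\<mu>\<in>U. (F has_derivative blinfun_apply (F' \<mu>)) (at \<mu>))
                 \<and> continuous_on U F'" using F_C1 unfolding d2 .
  have MF_NE': "MF \<subseteq> NEset Pset m (\<lambda>x. F (BSK Sset Pset (eta Sset Act phi pol) x))" using MF_NE unfolding d4 d1 .
  have Dbar_sub': "Dbar \<subseteq> Dx Pset m" using Dbar_sub unfolding d3 .
  have Dbar_nbhd': "\<exists>W. open W \<and> MF \<subseteq> W \<and> W \<inter> Dx Pset m \<subseteq> Dbar" using Dbar_nbhd unfolding d3 .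
  have V_dec': "\<And>x. x \<in> Dbar - MF \<Longrightarrow> V' x \<bullet> gred Pset rho (\<lambda>x. F (BSK Sset Pset (eta Sset Act phi pol) x)) x < 0"
    using V_dec unfolding d4 d1 .
  interpret L: lyap Sset Pset Act phi pol m kappa F rho MF Dbar V V'
    by unfold_locales (rule S_ne P_ne Act_fin phi_nonneg phi_sum pol_act m_pos kappa_ge unique_rec unique_stat
        F_C1' rho_nonneg rho_lip MF_ne MF_closed MF_NE' Dbar_sub' Dbar_nbhd' V_deriv V'_cont V'_bdd V_nonneg V_pos
        V_zero V_dec'; assumption?)+
  show ?thesis unfolding d1 d2 d3 d5 using L.part1 L.part2 by blast
qed


end
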